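(* Let $(\mathcal C_t)_{t\in\mathbb N}$ be a family of Clifford circuits, each with linear outcome code, whose qubits are placed (injectively) on the $D$-dimensional grid $\mathbb Z^D$. Suppose the family is bounded, i.e. there is a constant $c$ such that for every $t$ the dual code $\mathcal O(\mathcal C_t)^\perp$ is spanned by vectors each of Hamming weight at most $c$ and depth at most $c$, and suppose every operation of every $\mathcal C_t$ acts on qubits pairwise separated by distance at most $c$ in the grid. Then the spacetime codes of the circuits are $(D+1)$-dimensional local: there is a constant $c'$ such that for every $t$ the qubits of the spacetime code of $\mathcal C_t$ can be mapped injectively to $\mathbb Z^{D+1}$ so that its stabilizer group $\{\overleftarrow{F(u)}:u\in\mathcal O(\mathcal C_t)^\perp\}$ has a generating set whose elements are each supported in a ball of radius $c'$.
   Context: A Clifford circuit on $n$ qubits is a finite sequence of operations, each a unitary Clifford gate or the measurement of a Hermitian $n$-qubit Pauli, each with a level in $\{1,2,\dots\}$; operations of equal level have disjoint supports and levels are nondecreasing; depth $\Delta$ = maximal level. In circuit order the $j$-th measurement measures $S_j$ at level $\ell_j$ ($j=1,\dots,m$); outcome $o_j=0$ for eigenvalue $+1$, $1$ for $-1$. The outcome code $\mathcal O(\mathcal C)\subseteq\mathbb Z_2^m$ is the set of outcome bit-strings occurring with nonzero probability for some input state; $\perp$ refers to $(u|v)=\sum u_iv_i\bmod2$. The depth of $u\in\mathbb Z_2^m$ is $\max\{\ell_j:u_j=1\}-\min\{\ell_j:u_j=1\}+1$. $\overline{\mathcal P}_N$ is the $N$-qubit Pauli group modulo phases; $U_\ell$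 is the product of unitary gates of level $\ell$. Fault operators $F\in\overline{\mathcal P}_{n(\Delta+1)}$ act on qubits $(\ell+0.5,q)$, $0\le\ell\le\Delta$, $1\le q\le n$, with level components $F_{\ell+0.5}$; $\eta_{\ell+0.5}(P)$ is $P$ at level $\ell+0.5$ and $I$ elsewhere. Back-cumulant $\overleftarrow F$: start with $F$; for $\ell=\Delta,\dots,1$ replace $\overleftarrow F_{\ell-0.5}$ by $\overleftarrow F_{\ell-0.5}\cdot U_\ell^{-1}\overleftarrow F_{\ell+0.5}U_\ell$. $F(u)=\prod_j\eta_{\ell_j-0.5}(S_j^{u_j})$. The spacetime code of $\mathcal C$ is the stabilizer code on the $n(\Delta+1)$ qubits with stabilizer group $\{\overleftarrow{F(u)}:u\in\mathcal O(\mathcal C)^\perp\}$. *)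

theory Defs
  imports "Jordan_Normal_Form.Matrix"
begin

text \<open>An n-qubit Pauli modulo phases X^x Z^z is represented by the pair (X, Z) of
  qubit sets (subsets of {..<n}) on which x resp. z is 1.  Multiplication modulo
  phases is componentwise symmetric difference.\<close>

type_synonym pauli = "nat set \<times> nat set"

definition pmul :: "pauli \<Rightarrow> pauli \<Rightarrow> pauli" where
  "pmul P Q = (fst P - fst Q \<union> (fst Q - fst P), snd P - snd Q \<union> (snd Q - snd P))"

definition psupp :: "pauli \<Rightarrow> nat set" where
  "psupp P = fst P \<union> snd P"

definition is_pauli :: "nat \<Rightarrow> pauli \<Rightarrow> bool" where
  "is_pauli n P \<longleftrightarrow> fst P \<subseteq> {..<n} \<and> snd P \<subseteq> {..<n}"

text \<open>Computational basis states of n qubits are indexed by b < 2^n, qubit q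
  being bit q of b.  The matrix X^x Z^z maps |b> to (-1)^(z.b) |b xor x>.\<close>

definition pauli_mat :: "nat \<Rightarrow> pauli \<Rightarrow> complex mat" where
  "pauli_mat n P = mat (2^n) (2^n) (\<lambda>(a, b).
     if (\<forall>q<n. bit a q \<longleftrightarrow> (bit b q \<noteq> (q \<in> fst P)))
     then (-1) ^ card {q \<in> snd P. q < n \<and> bit b q} else 0)"

text \<open>A Hermitian n-qubit Pauli: a sign bit s and P = (X,Z); its matrix is
  (-1)^s i^|X \<inter> Z| X^x Z^z.\<close>

type_synonym herm_pauli = "bool \<times> pauli"

definition herm_pauli_mat :: "nat \<Rightarrow> herm_pauli \<Rightarrow> complex mat" where
  "herm_pauli_mat n S = ((if fst S then -1 else 1) * \<i> ^ card (fst (snd S) \<inter> snd (snd S)))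
      \<cdot>\<^sub>m pauli_mat n (snd S)"

definition adj :: "complex mat \<Rightarrow> complex mat" where
  "adj A = mat (dim_col A) (dim_row A) (\<lambda>(i, j). cnj (A $$ (j, i)))"

definition unitary_mat :: "nat \<Rightarrow> complex mat \<Rightarrow> bool" where
  "unitary_mat N U \<longleftrightarrow> U \<in> carrier_mat N N \<and> U * adj U = 1\<^sub>m N \<and> adj U * U = 1\<^sub>m N"

definition clifford :: "nat \<Rightarrow> complex mat \<Rightarrow> bool" where
  "clifford n U \<longleftrightarrow> unitary_mat (2^n) U \<and>
     (\<forall>P. is_pauli n P \<longrightarrow>
        (\<exists>a Q. is_pauli n Q \<and> U * pauli_mat n P * adj U = a \<cdot>\<^sub>m pauli_mat n Q))"

definition conj_mod_phase :: "nat \<Rightarrow> complex mat \<Rightarrow> pauli \<Rightarrow> pauli" where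
  "conj_mod_phase n U P = (THE Q. is_pauli n Q \<and>
      (\<exists>a. adj U * pauli_mat n P * U = a \<cdot>\<^sub>m pauli_mat n Q))"

definition mat_supp :: "nat \<Rightarrow> complex mat \<Rightarrow> nat set" where
  "mat_supp n U = {q. q < n \<and>
     \<not> (U * pauli_mat n ({q}, {}) = pauli_mat n ({q}, {}) * U \<and>
        U * pauli_mat n ({}, {q}) = pauli_mat n ({}, {q}) * U)}"

datatype operation =
    Gate nat "complex mat"
  | Meas nat herm_pauli

fun op_level :: "operation \<Rightarrow> nat" where
  "op_level (Gate l U) = l"
| "op_level (Meas l S) = l"

fun op_supp :: "nat \<Rightarrow> operation \<Rightarrow> nat set" where
  "op_supp n (Gate l U) = mat_supp n U"
| "op_supp n (Meas l S) = psupp (snd S)"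

type_synonym circuit = "nat \<times> operation list"

definition nqubits :: "circuit \<Rightarrow> nat" where "nqubits C = fst C"
definition ops :: "circuit \<Rightarrow> operation list" where "ops C = snd C"

fun op_ok :: "nat \<Rightarrow> operation \<Rightarrow> bool" where
  "op_ok n (Gate l U) \<longleftrightarrow> clifford n U"
| "op_ok n (Meas l S) \<longleftrightarrow> is_pauli n (snd S)"

definition clifford_circuit :: "circuit \<Rightarrow> bool" where
  "clifford_circuit C \<longleftrightarrow>
     (\<forall>w \<in> set (ops C). op_ok (nqubits C) w \<and> op_level w \<ge> 1) \<and>
     sorted (map op_level (ops C)) \<and>
     (\<forall>i j. i < length (ops C) \<and> j < length (ops C) \<and> i \<noteq> j \<and>
        op_level (ops C ! i) = op_level (ops C ! j) \<longrightarrow>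
        op_supp (nqubits C) (ops C ! i) \<inter> op_supp (nqubits C) (ops C ! j) = {})"

definition depth :: "circuit \<Rightarrow> nat" where
  "depth C = foldr max (map op_level (ops C)) 0"

fun is_meas :: "operation \<Rightarrow> bool" where
  "is_meas (Gate l U) = False"
| "is_meas (Meas l S) = True"

text \<open>The measurements in circuit order: j-th measurement (j < m, 0-based).\<close>

definition meas_ops :: "circuit \<Rightarrow> operation list" where
  "meas_ops C = filter is_meas (ops C)"

definition nmeas :: "circuit \<Rightarrow> nat" where
  "nmeas C = length (meas_ops C)"

definition meas_level :: "circuit \<Rightarrow> nat \<Rightarrow> nat" where
  "meas_level C j = op_level (meas_ops C ! j)"

fun meas_pauli :: "operation \<Rightarrow> herm_pauli" where
  "meas_pauli (Meas l S) = S"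
| "meas_pauli (Gate l U) = (False, ({}, {}))"

definition meas_S :: "circuit \<Rightarrow> nat \<Rightarrow> herm_pauli" where
  "meas_S C j = meas_pauli (meas_ops C ! j)"

text \<open>Vectors in Z_2^m are represented by their supports, subsets of {..<m}.
  An outcome string w: w_j = 1 iff j \<in> w.\<close>

text \<open>Run the circuit on an (unnormalised) state vector, projecting each
  measurement onto the eigenspace of the prescribed outcome.  The argument j
  counts the measurements already performed.\<close>

fun run :: "nat \<Rightarrow> nat set \<Rightarrow> nat \<Rightarrow> operation list \<Rightarrow> complex vec \<Rightarrow> complex vec" where
  "run n w j [] \<psi> = \<psi>"
| "run n w j (Gate l U # rest) \<psi> = run n w j rest (U *\<^sub>v \<psi>)"
| "run n w j (Meas l S # rest) \<psi> =
     run n w (Suc j) rest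
       (((1/2::complex) \<cdot>\<^sub>m (1\<^sub>m (2^n) + (if j \<in> w then -1 else 1) \<cdot>\<^sub>m herm_pauli_mat n S)) *\<^sub>v \<psi>)"

text \<open>For a (nonzero) pure input, the probability of w is the squared norm of
  the (renormalised) projected vector, hence nonzero iff that vector is nonzero.\<close>

definition outcome_code :: "circuit \<Rightarrow> nat set set" where
  "outcome_code C = {w. w \<subseteq> {..<nmeas C} \<and>
     (\<exists>\<psi> \<in> carrier_vec (2 ^ nqubits C). \<psi> \<noteq> 0\<^sub>v (2 ^ nqubits C) \<and>
        run (nqubits C) w 0 (ops C) \<psi> \<noteq> 0\<^sub>v (2 ^ nqubits C))}"

definition symdiff :: "nat set \<Rightarrow> nat set \<Rightarrow> nat set" where
  "symdiff A B = (A - B) \<union> (B - A)"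

definition linear_code :: "nat \<Rightarrow> nat set set \<Rightarrow> bool" where
  "linear_code m Oc \<longleftrightarrow> Oc \<subseteq> Pow {..<m} \<and> {} \<in> Oc \<and> (\<forall>u\<in>Oc. \<forall>v\<in>Oc. symdiff u v \<in> Oc)"

definition dual_code :: "nat \<Rightarrow> nat set set \<Rightarrow> nat set set" where
  "dual_code m Oc = {u. u \<subseteq> {..<m} \<and> (\<forall>v\<in>Oc. even (card (u \<inter> v)))}"

inductive_set z2span :: "nat set set \<Rightarrow> nat set set" for B where
  zero: "{} \<in> z2span B"
| add: "u \<in> z2span B \<Longrightarrow> b \<in> B \<Longrightarrow> symdiff u b \<in> z2span B"

definition vec_depth :: "circuit \<Rightarrow> nat set \<Rightarrow> nat" where
  "vec_depth C u = (if u = {} then 0 else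
     Max (meas_level C ` u) - Min (meas_level C ` u) + 1)"

text \<open>Fault operators: slot k (0 \<le> k \<le> depth) stands for level k + 0.5; the value
  at slot k is the level component F_{k+0.5}, an n-qubit Pauli modulo phases.\<close>

type_synonym fault = "nat \<Rightarrow> pauli"

definition fmul :: "fault \<Rightarrow> fault \<Rightarrow> fault" where
  "fmul F G = (\<lambda>k. pmul (F k) (G k))"

definition fone :: fault where "fone = (\<lambda>k. ({}, {}))"

definition level_unitary :: "circuit \<Rightarrow> nat \<Rightarrow> complex mat" where
  "level_unitary C l = foldr (\<lambda>w M. case w of Gate l' U \<Rightarrow> (if l' = l then M * U else M) | Meas _ _ \<Rightarrow> M)
      (ops C) (1\<^sub>m (2 ^ nqubits C))"

text \<open>Back-cumulant: bc C F i is the final value at slot (depth - i).\<close>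

fun bc :: "circuit \<Rightarrow> fault \<Rightarrow> nat \<Rightarrow> pauli" where
  "bc C F 0 = F (depth C)"
| "bc C F (Suc i) = pmul (F (depth C - Suc i))
      (conj_mod_phase (nqubits C) (level_unitary C (depth C - i)) (bc C F i))"

definition back_cumulant :: "circuit \<Rightarrow> fault \<Rightarrow> fault" where
  "back_cumulant C F = (\<lambda>k. if k \<le> depth C then bc C F (depth C - k) else ({}, {}))"

text \<open>F(u) = prod_j eta_{l_j - 0.5}(S_j^{u_j}); level l_j - 0.5 is slot l_j - 1.\<close>

definition F_of :: "circuit \<Rightarrow> nat set \<Rightarrow> fault" where
  "F_of C u = (\<lambda>k. foldr pmul
      (map (\<lambda>j. if j \<in> u \<and> meas_level C j - 1 = k then snd (meas_S C j) else ({}, {}))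
           [0..<nmeas C]) ({}, {}))"

definition spacetime_stabilizers :: "circuit \<Rightarrow> fault set" where
  "spacetime_stabilizers C =
     {back_cumulant C (F_of C u) | u. u \<in> dual_code (nmeas C) (outcome_code C)}"

inductive_set fspan :: "fault set \<Rightarrow> fault set" for G where
  one: "fone \<in> fspan G"
| mul: "F \<in> fspan G \<Longrightarrow> g \<in> G \<Longrightarrow> fmul F g \<in> fspan G"

definition spacetime_qubits :: "circuit \<Rightarrow> (nat \<times> nat) set" where
  "spacetime_qubits C = {..depth C} \<times> {..<nqubits C}"

definition fsupp :: "circuit \<Rightarrow> fault \<Rightarrow> (nat \<times> nat) set" where
  "fsupp C F = {(k, q). k \<le> depth C \<and> q \<in> psupp (F k)}"

text \<open>Points of Z^D: functions nat \<Rightarrow> int vanishing at coordinates \<ge> D.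
  Distance: the sup (l-infinity) metric.\<close>

definition grid :: "nat \<Rightarrow> (nat \<Rightarrow> int) set" where
  "grid D = {p. \<forall>i\<ge>D. p i = 0}"

definition grid_dist_le :: "nat \<Rightarrow> (nat \<Rightarrow> int) \<Rightarrow> (nat \<Rightarrow> int) \<Rightarrow> int \<Rightarrow> bool" where
  "grid_dist_le D p p' r \<longleftrightarrow> (\<forall>i<D. \<bar>p i - p' i\<bar> \<le> r)"

end

theory Submission
  imports Defs
begin

definition bnum :: "nat \<Rightarrow> (nat \<Rightarrow> bool) \<Rightarrow> nat" where
  "bnum n f = horner_sum of_bool 2 (map f [0..<n])"

lemma bit_bnum: "bit (bnum n f) q \<longleftrightarrow> q < n \<and> f q"
  unfolding bnum_def bit_horner_sum_bit_iff by (cases "q < n") simp_all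

lemma bnum_less: "bnum n f < 2 ^ n"
proof -
  have "take_bit n (bnum n f) = bnum n f"
    unfolding bnum_def take_bit_horner_sum_bit_eq by simp
  then show ?thesis by (simp add: take_bit_nat_eq_self_iff)
qed

lemma bits_eq_nat:
  fixes a b :: nat
  assumes "a < 2^n" "b < 2^n" "\<And>q. q < n \<Longrightarrow> bit a q = bit b q"
  shows "a = b"
proof -
  have "take_bit n a = a" "take_bit n b = b" using assms(1,2) by (simp_all add: take_bit_nat_eq_self_iff)
  moreover have "take_bit n a = take_bit n b"
    by (rule bit_eqI) (use assms(3) in \<open>auto simp: bit_take_bit_iff\<close>)
  ultimately show ?thesis by metis
qed


lemma neg1_pow_symdiff:
  assumes "finite A" "finite B"
  shows "(-1::complex) ^ card (A - B \<union> (B - A)) = (-1) ^ card A * (-1) ^ card B"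
proof -
  have d: "(A - B) \<inter> (B - A) = {}" by blast
  have 1: "card (A - B \<union> (B - A)) = card (A - B) + card (B - A)"
    using assms d by (simp add: card_Un_disjoint)
  have 2: "card A = card (A - B) + card (A \<inter> B)"
    using card_Int_Diff[OF assms(1), of B] by linarith
  have 3: "card B = card (B - A) + card (A \<inter> B)"
    using card_Int_Diff[OF assms(2), of A] by (simp add: Int_commute)
  have 4: "(-1::complex) ^ (2 * card (A \<inter> B)) = 1" by (simp add: power_mult)
  have "(-1::complex) ^ card A * (-1) ^ card B = (-1) ^ (card (A - B) + card (B - A) + 2 * card (A \<inter> B))"
    unfolding power_add[symmetric] 2 3 by (simp add: algebra_simps mult_2)
  also have "\<dots> = (-1) ^ (card (A - B) + card (B - A))" unfolding power_add 4 by simp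
  finally show ?thesis unfolding 1 by simp
qed


lemma finite_is_pauli: "is_pauli n P \<Longrightarrow> finite (fst P) \<and> finite (snd P)"
  unfolding is_pauli_def using finite_subset by blast

lemma pm_carrier[simp]: "pauli_mat n P \<in> carrier_mat (2^n) (2^n)"
  by (simp add: pauli_mat_def)

lemma pm_dim[simp]: "dim_row (pauli_mat n P) = 2^n" "dim_col (pauli_mat n P) = 2^n"
  by (simp_all add: pauli_mat_def)

lemma pm_index: "a < 2^n \<Longrightarrow> b < 2^n \<Longrightarrow> pauli_mat n P $$ (a, b) =
   (if (\<forall>q<n. bit a q \<longleftrightarrow> (bit b q \<noteq> (q \<in> fst P)))
     then (-1) ^ card {q \<in> snd P. q < n \<and> bit b q} else 0)"
  by (simp add: pauli_mat_def)

lemma sum_single_nz: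
  assumes "finite A" "x \<in> A" "\<And>y. y \<in> A \<Longrightarrow> y \<noteq> x \<Longrightarrow> f y = (0::'a::comm_monoid_add)"
  shows "sum f A = f x"
proof -
  have "sum f A = f x + sum f (A - {x})" using assms(1,2) by (simp add: sum.remove)
  also have "sum f (A - {x}) = 0" using assms(3) by (intro sum.neutral) auto
  finally show ?thesis by simp
qed

lemma pm_mult:
  assumes P: "is_pauli n P" and Q: "is_pauli n Q"
  shows "pauli_mat n P * pauli_mat n Q = ((-1) ^ card (snd P \<inter> fst Q)) \<cdot>\<^sub>m pauli_mat n (pmul P Q)"
proof (rule eq_matI)
  fix a b assume a: "a < dim_row (((-1) ^ card (snd P \<inter> fst Q)) \<cdot>\<^sub>m pauli_mat n (pmul P Q))"
    and b: "b < dim_col (((-1) ^ card (snd P \<inter> fst Q)) \<cdot>\<^sub>m pauli_mat n (pmul P Q))"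
  then have a: "a < 2^n" and b: "b < 2^n" by simp_all
  define c0 where "c0 = bnum n (\<lambda>q. bit b q \<noteq> (q \<in> fst Q))"
  have c0: "c0 < 2^n" unfolding c0_def by (rule bnum_less)
  have bc0: "\<And>q. q < n \<Longrightarrow> bit c0 q = (bit b q \<noteq> (q \<in> fst Q))"
    unfolding c0_def bit_bnum by simp
  have fin: "finite (fst P)" "finite (snd P)" "finite (fst Q)" "finite (snd Q)"
    using finite_is_pauli[OF P] finite_is_pauli[OF Q] by auto
  have "(pauli_mat n P * pauli_mat n Q) $$ (a, b) = (\<Sum>c\<in>{0..<2^n}. pauli_mat n P $$ (a, c) * pauli_mat n Q $$ (c, b))"
    using a b by (simp add: scalar_prod_def row_def col_def)
  also have "\<dots> = pauli_mat n P $$ (a, c0) * pauli_mat n Q $$ (c0, b)"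
  proof (rule sum_single_nz)
    show "c0 \<in> {0..<2^n}" using c0 by simp
    fix c assume c: "c \<in> {0..<2^n}" "c \<noteq> c0"
    have "pauli_mat n Q $$ (c, b) = 0"
    proof (rule ccontr)
      assume "pauli_mat n Q $$ (c, b) \<noteq> 0"
      then have "\<forall>q<n. bit c q \<longleftrightarrow> (bit b q \<noteq> (q \<in> fst Q))" using c b by (simp add: pm_index split: if_splits)
      then have "c = c0" using c c0 bc0 by (intro bits_eq_nat[of c n c0]) auto
      then show False using c by simp
    qed
    then show "pauli_mat n P $$ (a, c) * pauli_mat n Q $$ (c, b) = 0" by simp
  qed simp
  also have "\<dots> = ((-1) ^ card (snd P \<inter> fst Q)) * pauli_mat n (pmul P Q) $$ (a, b)"
  proof -
    have cond: "(\<forall>q<n. bit a q \<longleftrightarrow> (bit c0 q \<noteq> (q \<in> fst P))) \<longleftrightarrow>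
                (\<forall>q<n. bit a q \<longleftrightarrow> (bit b q \<noteq> (q \<in> fst (pmul P Q))))"
      using bc0 by (auto simp: pmul_def)
    have s1: "{q \<in> snd P. q < n \<and> bit c0 q} =
        {q \<in> snd P. q < n \<and> bit b q} - (snd P \<inter> fst Q) \<union> ((snd P \<inter> fst Q) - {q \<in> snd P. q < n \<and> bit b q})"
      using bc0 P Q unfolding is_pauli_def by auto
    have s2: "{q \<in> snd (pmul P Q). q < n \<and> bit b q} =
        {q \<in> snd P. q < n \<and> bit b q} - {q \<in> snd Q. q < n \<and> bit b q} \<union> ({q \<in> snd Q. q < n \<and> bit b q} - {q \<in> snd P. q < n \<and> bit b q})"
      by (auto simp: pmul_def)
    have e1: "(-1::complex) ^ card {q \<in> snd P. q < n \<and> bit c0 q} = (-1) ^ card {q \<in> snd P. q < n \<and> bit b q} * (-1) ^ card (snd P \<inter> fst Q)"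
      unfolding s1 by (rule neg1_pow_symdiff) (use fin in auto)
    have e2: "(-1::complex) ^ card {q \<in> snd (pmul P Q). q < n \<and> bit b q} = (-1) ^ card {q \<in> snd P. q < n \<and> bit b q} * (-1) ^ card {q \<in> snd Q. q < n \<and> bit b q}"
      unfolding s2 by (rule neg1_pow_symdiff) (use fin in auto)
    have qc0: "pauli_mat n Q $$ (c0, b) = (-1) ^ card {q \<in> snd Q. q < n \<and> bit b q}"
      using c0 b bc0 by (simp add: pm_index)
    show ?thesis
      using a b c0 unfolding qc0 pm_index[OF a c0] pm_index[OF a b] cond e1 e2 by simp
  qed
  also have "\<dots> = (((-1) ^ card (snd P \<inter> fst Q)) \<cdot>\<^sub>m pauli_mat n (pmul P Q)) $$ (a, b)"
    using a b by simp
  finally show "(pauli_mat n P * pauli_mat n Q) $$ (a, b) = (((-1) ^ card (snd P \<inter> fst Q)) \<cdot>\<^sub>m pauli_mat n (pmul P Q)) $$ (a, b)" .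
qed simp_all


lemma pmul_comm: "pmul P Q = pmul Q P"
  by (auto simp: pmul_def)
lemma pmul_assoc: "pmul (pmul P Q) R = pmul P (pmul Q R)"
  by (auto simp: pmul_def)
lemma pmul_self[simp]: "pmul P P = ({}, {})"
  by (auto simp: pmul_def)
lemma pmul_zero[simp]: "pmul P ({}, {}) = P" "pmul ({}, {}) P = P"
  by (auto simp: pmul_def)
lemma is_pauli_pmul[simp]: "is_pauli n P \<Longrightarrow> is_pauli n Q \<Longrightarrow> is_pauli n (pmul P Q)"
  by (auto simp: is_pauli_def pmul_def)
lemma is_pauli_zero[simp]: "is_pauli n ({}, {})"
  by (simp add: is_pauli_def)

lemma pm_zero: "pauli_mat n ({}, {}) = 1\<^sub>m (2^n)"
proof (rule eq_matI)
  fix a b assume ab: "a < dim_row (1\<^sub>m (2 ^ n) :: complex mat)" "b < dim_col (1\<^sub>m (2 ^ n) :: complex mat)"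
  then have a: "a < 2^n" and b: "b < 2^n" by simp_all
  have "(\<forall>q<n. bit a q = bit b q) \<longleftrightarrow> a = b"
    using bits_eq_nat[OF a b] by auto
  then show "pauli_mat n ({}, {}) $$ (a, b) = (1\<^sub>m (2 ^ n) :: complex mat) $$ (a, b)"
    using a b by (simp add: pm_index)
qed simp_all

lemma pm_entry_diag:
  assumes b: "b < 2^n"
  shows "pauli_mat n P $$ (bnum n (\<lambda>q. bit b q \<noteq> (q \<in> fst P)), b) = (-1) ^ card {q \<in> snd P. q < n \<and> bit b q}"
  using b bnum_less[of n] by (simp add: pm_index bit_bnum)

lemma pm_unique:
  assumes P: "is_pauli n P" and Q: "is_pauli n Q" and eq: "a \<cdot>\<^sub>m pauli_mat n P = b \<cdot>\<^sub>m pauli_mat n Q" and a: "a \<noteq> 0"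
  shows "P = Q \<and> a = b"
proof -
  have entry: "\<And>x y :: nat. x < 2^n \<Longrightarrow> y < 2^n \<Longrightarrow> a * pauli_mat n P $$ (x, y) = b * pauli_mat n Q $$ (x, y)"
  proof -
    fix x y :: nat assume "x < 2^n" "y < 2^n"
    then show "a * pauli_mat n P $$ (x, y) = b * pauli_mat n Q $$ (x, y)"
      using arg_cong[OF eq, of "\<lambda>M. M $$ (x, y)"] by simp
  qed
  define x where "x = bnum n (\<lambda>q. bit (0::nat) q \<noteq> (q \<in> fst P))"
  have x: "x < 2^n" unfolding x_def by (rule bnum_less)
  have px: "pauli_mat n P $$ (x, 0) = 1"
    unfolding x_def by (subst pm_entry_diag) simp_all
  then have e0: "a = b * pauli_mat n Q $$ (x, 0)" using entry[OF x, of 0] by simp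
  then have "pauli_mat n Q $$ (x, 0) \<noteq> 0" using a by auto
  then have "\<forall>q<n. bit x q \<longleftrightarrow> (q \<in> fst Q)" using x by (simp add: pm_index split: if_splits)
  then have "\<forall>q<n. q \<in> fst P \<longleftrightarrow> q \<in> fst Q" unfolding x_def bit_bnum by simp
  then have X: "fst P = fst Q" using P Q unfolding is_pauli_def by blast
  have qx: "pauli_mat n Q $$ (x, 0) = 1"
    unfolding x_def X by (subst pm_entry_diag) simp_all
  have ab: "a = b" using e0 qx by simp
  have "\<forall>q<n. q \<in> snd P \<longleftrightarrow> q \<in> snd Q"
  proof (intro allI impI)
    fix q assume q: "q < n"
    define e where "e = bnum n (\<lambda>r. r = q)"
    have e: "e < 2^n" unfolding e_def by (rule bnum_less)
    have be: "\<And>r. bit e r \<longleftrightarrow> r = q" unfolding e_def bit_bnum using q by auto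
    define r0 where "r0 = bnum n (\<lambda>r. bit e r \<noteq> (r \<in> fst P))"
    have r0: "r0 < 2^n" unfolding r0_def by (rule bnum_less)
    have sP: "{r \<in> snd P. r < n \<and> bit e r} = snd P \<inter> {q}" using be q by auto
    have sQ: "{r \<in> snd Q. r < n \<and> bit e r} = snd Q \<inter> {q}" using be q by auto
    have "pauli_mat n P $$ (r0, e) = (-1) ^ card (snd P \<inter> {q})"
      unfolding r0_def using pm_entry_diag[OF e, of P] sP by simp
    moreover have "pauli_mat n Q $$ (r0, e) = (-1) ^ card (snd Q \<inter> {q})"
      unfolding r0_def X using pm_entry_diag[OF e, of Q] sQ by simp
    ultimately have "(-1::complex) ^ card (snd P \<inter> {q}) = (-1) ^ card (snd Q \<inter> {q})"
      using entry[OF r0 e] ab a by simp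
    then show "q \<in> snd P \<longleftrightarrow> q \<in> snd Q"
      by (cases "q \<in> snd P"; cases "q \<in> snd Q") (auto simp: Int_insert_right)
  qed
  then have "snd P = snd Q" using P Q unfolding is_pauli_def by blast
  with X ab show ?thesis by (simp add: prod_eq_iff)
qed

lemma pm_smult_nz: "a \<cdot>\<^sub>m pauli_mat n P = 0\<^sub>m (2^n) (2^n) \<Longrightarrow> a = 0"
proof -
  assume h: "a \<cdot>\<^sub>m pauli_mat n P = 0\<^sub>m (2^n) (2^n)"
  have "(0::nat) < 2^n" by simp
  then have "a * pauli_mat n P $$ (bnum n (\<lambda>q. bit (0::nat) q \<noteq> (q \<in> fst P)), 0) = 0"
    using arg_cong[OF h, of "\<lambda>M. M $$ (bnum n (\<lambda>q. bit (0::nat) q \<noteq> (q \<in> fst P)), 0)"] bnum_less[of n]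
    by simp
  then show "a = 0" by (subst (asm) pm_entry_diag) simp_all
qed


lemma smult_smult_mat[simp]: "a \<cdot>\<^sub>m (b \<cdot>\<^sub>m A) = (a * b) \<cdot>\<^sub>m (A :: 'a :: comm_semiring_1 mat)"
  by (rule eq_matI) (auto simp: mult.assoc)

lemma one_smult_mat[simp]: "(1 :: 'a :: comm_semiring_1) \<cdot>\<^sub>m A = A"
  by (rule eq_matI) auto

lemma smult_mult_smult:
  assumes "A \<in> carrier_mat k l" "B \<in> carrier_mat l m"
  shows "(a \<cdot>\<^sub>m A) * (b \<cdot>\<^sub>m B) = (a * b) \<cdot>\<^sub>m (A * (B :: 'a :: comm_semiring_1 mat))"
  using assms by (simp add: mult_smult_assoc_mat[of _ k l] mult_smult_distrib[of _ k l] mult.commute)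

definition pcomm :: "pauli \<Rightarrow> pauli \<Rightarrow> bool" where
  "pcomm P Q \<longleftrightarrow> even (card (snd P \<inter> fst Q) + card (snd Q \<inter> fst P))"

lemma pcomm_sym: "pcomm P Q = pcomm Q P"
  by (simp add: pcomm_def add.commute)

lemma neg1_pow_eq_iff: "((-1::complex) ^ k = (-1) ^ l) \<longleftrightarrow> even (k + l)"
  by (cases "even k"; cases "even l") (auto simp: neg_one_even_power neg_one_odd_power)

lemma pm_comm:
  assumes P: "is_pauli n P" and Q: "is_pauli n Q"
  shows "pauli_mat n P * pauli_mat n Q = (if pcomm P Q then 1 else -1) \<cdot>\<^sub>m (pauli_mat n Q * pauli_mat n P)"
proof -
  have "pauli_mat n P * pauli_mat n Q = ((-1) ^ card (snd P \<inter> fst Q)) \<cdot>\<^sub>m pauli_mat n (pmul P Q)"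
    by (rule pm_mult[OF P Q])
  moreover have "pauli_mat n Q * pauli_mat n P = ((-1) ^ card (snd Q \<inter> fst P)) \<cdot>\<^sub>m pauli_mat n (pmul P Q)"
    by (subst pm_mult[OF Q P]) (simp add: pmul_comm)
  moreover have "(-1::complex) ^ card (snd P \<inter> fst Q) = (if pcomm P Q then 1 else -1) * (-1) ^ card (snd Q \<inter> fst P)"
    unfolding pcomm_def
    by (cases "even (card (snd P \<inter> fst Q))"; cases "even (card (snd Q \<inter> fst P))")
       (auto simp: neg_one_even_power neg_one_odd_power)
  ultimately show ?thesis by simp
qed

lemma pm_sq:
  assumes P: "is_pauli n P"
  shows "pauli_mat n P * pauli_mat n P = ((-1) ^ card (snd P \<inter> fst P)) \<cdot>\<^sub>m 1\<^sub>m (2^n)"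
  using pm_mult[OF P P] by (simp add: pm_zero)

lemma hpm_def2: "herm_pauli_mat n S = ((if fst S then -1 else 1) * \<i> ^ card (fst (snd S) \<inter> snd (snd S))) \<cdot>\<^sub>m pauli_mat n (snd S)"
  by (simp add: herm_pauli_mat_def)

lemma hpm_carrier[simp]: "herm_pauli_mat n S \<in> carrier_mat (2^n) (2^n)"
  by (simp add: herm_pauli_mat_def)

lemma hpm_sq:
  assumes P: "is_pauli n (snd S)"
  shows "herm_pauli_mat n S * herm_pauli_mat n S = 1\<^sub>m (2^n)"
proof -
  define c where "c = ((if fst S then -1 else 1) * \<i> ^ card (fst (snd S) \<inter> snd (snd S)))"
  define k where "k = card (fst (snd S) \<inter> snd (snd S))"
  have "herm_pauli_mat n S * herm_pauli_mat n S = (c * c) \<cdot>\<^sub>m (pauli_mat n (snd S) * pauli_mat n (snd S))"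
    unfolding herm_pauli_mat_def c_def by (rule smult_mult_smult) auto
  also have "\<dots> = (c * c * (-1) ^ k) \<cdot>\<^sub>m 1\<^sub>m (2^n)"
    unfolding pm_sq[OF P] k_def by (simp add: Int_commute)
  also have "c * c * (-1) ^ k = 1"
  proof -
    have "c * c = (\<i> * \<i>) ^ k" unfolding c_def k_def by (simp add: power_mult_distrib[symmetric])
    then have "c * c = (-1) ^ k" by simp
    then show ?thesis by (simp flip: power_add add: power_mult[symmetric] mult_2[symmetric])
  qed
  finally show ?thesis by simp
qed

lemma adj_carrier[simp]: assumes "A \<in> carrier_mat a b" shows "adj A \<in> carrier_mat b a"
  using carrier_matD[OF assms] unfolding adj_def by (intro carrier_matI) simp_all

lemma adj_dim[simp]: "dim_row (adj A) = dim_col A" "dim_col (adj A) = dim_row A"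
  by (simp_all add: adj_def)

lemma adj_index[simp]: "i < dim_col A \<Longrightarrow> j < dim_row A \<Longrightarrow> adj A $$ (i, j) = cnj (A $$ (j, i))"
  by (simp add: adj_def)

lemma adj_mult:
  assumes "A \<in> carrier_mat a b" "B \<in> carrier_mat b c"
  shows "adj (A * B) = adj B * adj A"
proof (rule eq_matI)
  fix i j assume "i < dim_row (adj B * adj A)" "j < dim_col (adj B * adj A)"
  with assms have i: "i < c" and j: "j < a" by auto
  have "adj (A * B) $$ (i, j) = cnj (\<Sum>k<b. A $$ (j, k) * B $$ (k, i))"
    using assms i j by (simp add: scalar_prod_def row_def col_def atLeast0LessThan)
  also have "\<dots> = (\<Sum>k<b. cnj (B $$ (k, i)) * cnj (A $$ (j, k)))"
    by (simp add: cnj_sum mult.commute)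
  also have "\<dots> = (adj B * adj A) $$ (i, j)"
    using assms i j by (simp add: scalar_prod_def row_def col_def atLeast0LessThan)
  finally show "adj (A * B) $$ (i, j) = (adj B * adj A) $$ (i, j)" .
qed (use assms in auto)

lemma adj_one[simp]: "adj (1\<^sub>m N) = (1\<^sub>m N :: complex mat)"
  by (rule eq_matI) auto

lemma mult_carrier_sq[simp]: "A \<in> carrier_mat N N \<Longrightarrow> B \<in> carrier_mat N N \<Longrightarrow> A * B \<in> carrier_mat N N"
  by (rule mult_carrier_mat)

lemma assoc_sq: "A \<in> carrier_mat N N \<Longrightarrow> B \<in> carrier_mat N N \<Longrightarrow> C \<in> carrier_mat N N \<Longrightarrow> A * B * C = A * (B * C)"
  by (rule assoc_mult_mat)

lemma unitary_mult:
  assumes U: "unitary_mat N U" and V: "unitary_mat N V"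
  shows "unitary_mat N (U * V)"
proof -
  have c: "U \<in> carrier_mat N N" "V \<in> carrier_mat N N" "adj U \<in> carrier_mat N N" "adj V \<in> carrier_mat N N"
    using U V by (auto simp: unitary_mat_def)
  have a: "adj (U * V) = adj V * adj U" using c by (intro adj_mult) auto
  have 1: "U * V * adj (U * V) = 1\<^sub>m N"
  proof -
    have "U * V * adj (U * V) = U * (V * adj V) * adj U" unfolding a using c by (simp add: assoc_sq[of _ N])
    also have "\<dots> = 1\<^sub>m N" using U V c by (simp add: unitary_mat_def)
    finally show ?thesis .
  qed
  have 2: "adj (U * V) * (U * V) = 1\<^sub>m N"
  proof -
    have "adj (U * V) * (U * V) = adj V * ((adj U * U) * V)" unfolding a using c by (simp add: assoc_sq[of _ N])
    also have "\<dots> = 1\<^sub>m N" using U V c by (simp add: unitary_mat_def)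
    finally show ?thesis .
  qed
  show ?thesis using 1 2 c by (simp add: unitary_mat_def)
qed

lemma unitary_one: "unitary_mat N (1\<^sub>m N)"
  by (simp add: unitary_mat_def)

lemma unitary_carrier: "unitary_mat N U \<Longrightarrow> U \<in> carrier_mat N N"
  by (simp add: unitary_mat_def)
lemma unitary_adj_carrier: "unitary_mat N U \<Longrightarrow> adj U \<in> carrier_mat N N"
  by (simp add: unitary_mat_def)
lemma unitary_rinv: "unitary_mat N U \<Longrightarrow> U * adj U = 1\<^sub>m N"
  by (simp add: unitary_mat_def)
lemma unitary_linv: "unitary_mat N U \<Longrightarrow> adj U * U = 1\<^sub>m N"
  by (simp add: unitary_mat_def)

lemma sandwich1:
  assumes U: "unitary_mat N U" and M: "M \<in> carrier_mat N N"
  shows "adj U * (U * M * adj U) * U = M"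
proof -
  note c = unitary_carrier[OF U] unitary_adj_carrier[OF U]
  have "adj U * (U * M * adj U) * U = (adj U * U) * M * (adj U * U)"
    using c M by (simp add: assoc_sq[of _ N])
  then show ?thesis using M by (simp add: unitary_linv[OF U])
qed

lemma sandwich2:
  assumes U: "unitary_mat N U" and M: "M \<in> carrier_mat N N"
  shows "U * (adj U * M * U) * adj U = M"
proof -
  note c = unitary_carrier[OF U] unitary_adj_carrier[OF U]
  have "U * (adj U * M * U) * adj U = (U * adj U) * M * (U * adj U)"
    using c M by (simp add: assoc_sq[of _ N])
  then show ?thesis using M by (simp add: unitary_rinv[OF U])
qed

lemma conj_split:
  assumes U: "unitary_mat N U" and A: "A \<in> carrier_mat N N" and B: "B \<in> carrier_mat N N"
  shows "adj U * (A * B) * U = (adj U * A * U) * (adj U * B * U)"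
proof -
  note c = unitary_carrier[OF U] unitary_adj_carrier[OF U]
  have "(adj U * A * U) * (adj U * B * U) = adj U * A * (U * adj U) * B * U"
    using c A B by (simp add: assoc_sq[of _ N])
  then show ?thesis using A B c by (simp add: unitary_rinv[OF U] assoc_sq[of _ N])
qed

lemma conj_smult:
  assumes U: "unitary_mat N U" and A: "A \<in> carrier_mat N N"
  shows "adj U * (a \<cdot>\<^sub>m A) * U = a \<cdot>\<^sub>m (adj U * A * U)"
  using unitary_carrier[OF U] unitary_adj_carrier[OF U] A
  by (simp add: mult_smult_distrib[of _ N N] mult_smult_assoc_mat[of _ N N])

lemma smult_cancel_pm:
  assumes "c1 \<cdot>\<^sub>m pauli_mat n R = c2 \<cdot>\<^sub>m pauli_mat n R" "is_pauli n R"
  shows "c1 = c2"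
proof (cases "c1 = 0")
  case True
  have "c1 \<cdot>\<^sub>m pauli_mat n R = 0\<^sub>m (2^n) (2^n)" using True by (intro eq_matI) auto
  then have "c2 \<cdot>\<^sub>m pauli_mat n R = 0\<^sub>m (2^n) (2^n)" using assms(1) by simp
  then show ?thesis using True pm_smult_nz by metis
next
  case False
  then show ?thesis using pm_unique[OF assms(2) assms(2) assms(1)] by simp
qed

lemma unitary_nz_conj:
  assumes U: "unitary_mat (2^n) U"
  shows "adj U * pauli_mat n P * U \<noteq> 0\<^sub>m (2^n) (2^n)"
proof
  assume h: "adj U * pauli_mat n P * U = 0\<^sub>m (2^n) (2^n)"
  have "pauli_mat n P = U * (adj U * pauli_mat n P * U) * adj U"
    using sandwich2[OF U, of "pauli_mat n P"] by simp
  also have "\<dots> = 0\<^sub>m (2^n) (2^n)" unfolding h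
    using unitary_carrier[OF U] unitary_adj_carrier[OF U] by simp
  finally have "1 \<cdot>\<^sub>m pauli_mat n P = 0\<^sub>m (2^n) (2^n)" by simp
  then show False using pm_smult_nz by fastforce
qed


definition paulis :: "nat \<Rightarrow> pauli set" where
  "paulis n = Pow {..<n} \<times> Pow {..<n}"

lemma paulis_iff: "P \<in> paulis n \<longleftrightarrow> is_pauli n P"
  by (cases P) (auto simp: paulis_def is_pauli_def)

lemma finite_paulis: "finite (paulis n)"
  by (simp add: paulis_def)

lemma clifford_unitary: "clifford n U \<Longrightarrow> unitary_mat (2^n) U"
  by (simp add: clifford_def)

lemma clifford_fwd_nz:
  assumes U: "unitary_mat (2^n) U" and h: "U * pauli_mat n R * adj U = a \<cdot>\<^sub>m pauli_mat n Q"
  shows "a \<noteq> 0"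
proof
  assume a: "a = 0"
  have "pauli_mat n R = adj U * (U * pauli_mat n R * adj U) * U"
    using sandwich1[OF U, of "pauli_mat n R"] by simp
  also have "\<dots> = adj U * (a \<cdot>\<^sub>m pauli_mat n Q) * U" unfolding h ..
  also have "\<dots> = a \<cdot>\<^sub>m (adj U * pauli_mat n Q * U)" by (rule conj_smult[OF U]) simp
  also have "\<dots> = 0\<^sub>m (2^n) (2^n)" using a unitary_carrier[OF U] unitary_adj_carrier[OF U]
    by (intro eq_matI) auto
  finally have "1 \<cdot>\<^sub>m pauli_mat n R = 0\<^sub>m (2^n) (2^n)" by simp
  then show False using pm_smult_nz by fastforce
qed

lemma clifford_conj_exists:
  assumes U: "clifford n U" and P: "is_pauli n P"
  shows "\<exists>a Q. is_pauli n Q \<and> a \<noteq> 0 \<and> adj U * pauli_mat n P * U = a \<cdot>\<^sub>m pauli_mat n Q"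
proof -
  have Uu: "unitary_mat (2^n) U" using U by (simp add: clifford_def)
  have fw: "\<And>R. is_pauli n R \<Longrightarrow> \<exists>Q. is_pauli n Q \<and> (\<exists>a. U * pauli_mat n R * adj U = a \<cdot>\<^sub>m pauli_mat n Q)"
    using U unfolding clifford_def by blast
  define f where "f R = (SOME Q. is_pauli n Q \<and> (\<exists>a. U * pauli_mat n R * adj U = a \<cdot>\<^sub>m pauli_mat n Q))" for R
  have f: "\<And>R. is_pauli n R \<Longrightarrow> is_pauli n (f R) \<and> (\<exists>a. U * pauli_mat n R * adj U = a \<cdot>\<^sub>m pauli_mat n (f R))"
    unfolding f_def by (rule someI_ex) (rule fw)
  have inj: "inj_on f (paulis n)"
  proof (rule inj_onI)
    fix R1 R2 assume R1: "R1 \<in> paulis n" and R2: "R2 \<in> paulis n" and e: "f R1 = f R2"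
    then have R1': "is_pauli n R1" and R2': "is_pauli n R2" by (auto simp: paulis_iff)
    obtain a1 where a1: "U * pauli_mat n R1 * adj U = a1 \<cdot>\<^sub>m pauli_mat n (f R1)" using f[OF R1'] by blast
    obtain a2 where a2: "U * pauli_mat n R2 * adj U = a2 \<cdot>\<^sub>m pauli_mat n (f R1)" using f[OF R2'] e by auto
    have nz1: "a1 \<noteq> 0" by (rule clifford_fwd_nz[OF Uu a1])
    have nz2: "a2 \<noteq> 0" by (rule clifford_fwd_nz[OF Uu a2])
    define M where "M = adj U * pauli_mat n (f R1) * U"
    have M: "M \<in> carrier_mat (2^n) (2^n)" unfolding M_def
      using unitary_carrier[OF Uu] unitary_adj_carrier[OF Uu] by simp
    have e1: "pauli_mat n R1 = a1 \<cdot>\<^sub>m M"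
      using sandwich1[OF Uu, of "pauli_mat n R1"] unfolding a1 M_def conj_smult[OF Uu pm_carrier] by simp
    have e2: "pauli_mat n R2 = a2 \<cdot>\<^sub>m M"
      using sandwich1[OF Uu, of "pauli_mat n R2"] unfolding a2 M_def conj_smult[OF Uu pm_carrier] by simp
    have "a2 \<cdot>\<^sub>m pauli_mat n R1 = a1 \<cdot>\<^sub>m pauli_mat n R2"
      unfolding e1 e2 by (simp add: mult.commute)
    then show "R1 = R2" using pm_unique[OF R1' R2'] nz2 by blast
  qed
  have sub: "f ` paulis n \<subseteq> paulis n" using f by (auto simp: paulis_iff)
  have "f ` paulis n = paulis n" by (rule endo_inj_surj[OF finite_paulis sub inj])
  then obtain R where R: "R \<in> paulis n" "f R = P" using P by (metis imageE paulis_iff)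
  then have R': "is_pauli n R" by (simp add: paulis_iff)
  obtain a where a: "U * pauli_mat n R * adj U = a \<cdot>\<^sub>m pauli_mat n P" using f[OF R'] R by auto
  have nz: "a \<noteq> 0" by (rule clifford_fwd_nz[OF Uu a])
  have "pauli_mat n R = a \<cdot>\<^sub>m (adj U * pauli_mat n P * U)"
    using sandwich1[OF Uu, of "pauli_mat n R"] unfolding a conj_smult[OF Uu pm_carrier] by simp
  then have "adj U * pauli_mat n P * U = (1 / a) \<cdot>\<^sub>m pauli_mat n R"
    using nz by simp
  then show ?thesis using R' nz by (intro exI[of _ "1/a"] exI[of _ R]) simp
qed

lemma conj_eqI:
  assumes U: "clifford n U" and Q: "is_pauli n Q" and h: "adj U * pauli_mat n P * U = a \<cdot>\<^sub>m pauli_mat n Q"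
  shows "conj_mod_phase n U P = Q"
proof -
  have Uu: "unitary_mat (2^n) U" using U by (simp add: clifford_def)
  have nz: "a \<noteq> 0"
  proof
    assume "a = 0"
    then have "adj U * pauli_mat n P * U = 0\<^sub>m (2^n) (2^n)" unfolding h by (intro eq_matI) auto
    then show False using unitary_nz_conj[OF Uu] by blast
  qed
  show ?thesis unfolding conj_mod_phase_def
  proof (rule the_equality)
    show "is_pauli n Q \<and> (\<exists>a. adj U * pauli_mat n P * U = a \<cdot>\<^sub>m pauli_mat n Q)" using Q h by blast
  next
    fix Q' assume "is_pauli n Q' \<and> (\<exists>a. adj U * pauli_mat n P * U = a \<cdot>\<^sub>m pauli_mat n Q')"
    then obtain a' where Q': "is_pauli n Q'" and h': "adj U * pauli_mat n P * U = a' \<cdot>\<^sub>m pauli_mat n Q'" by blast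
    have "a \<cdot>\<^sub>m pauli_mat n Q = a' \<cdot>\<^sub>m pauli_mat n Q'" using h h' by simp
    then show "Q' = Q" using pm_unique[OF Q Q'] nz by metis
  qed
qed

lemma conj_spec:
  assumes U: "clifford n U" and P: "is_pauli n P"
  shows "is_pauli n (conj_mod_phase n U P) \<and>
         (\<exists>a. a \<noteq> 0 \<and> adj U * pauli_mat n P * U = a \<cdot>\<^sub>m pauli_mat n (conj_mod_phase n U P))"
proof -
  obtain a Q where Q: "is_pauli n Q" "a \<noteq> 0" "adj U * pauli_mat n P * U = a \<cdot>\<^sub>m pauli_mat n Q"
    using clifford_conj_exists[OF U P] by blast
  then have "conj_mod_phase n U P = Q" using conj_eqI[OF U] by blast
  then show ?thesis using Q by blast
qed

lemma is_pauli_conj[simp]: "clifford n U \<Longrightarrow> is_pauli n P \<Longrightarrow> is_pauli n (conj_mod_phase n U P)"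
  using conj_spec by blast


lemma pm_mult_inv:
  assumes P: "is_pauli n P" and Q: "is_pauli n Q"
  shows "pauli_mat n (pmul P Q) = ((-1) ^ card (snd P \<inter> fst Q)) \<cdot>\<^sub>m (pauli_mat n P * pauli_mat n Q)"
proof -
  have "((-1::complex) ^ card (snd P \<inter> fst Q)) * ((-1) ^ card (snd P \<inter> fst Q)) = 1"
    by (simp flip: power_add add: mult_2[symmetric] power_mult)
  then show ?thesis unfolding pm_mult[OF P Q] by simp
qed

lemma conj_pmul:
  assumes U: "clifford n U" and P: "is_pauli n P" and Q: "is_pauli n Q"
  shows "conj_mod_phase n U (pmul P Q) = pmul (conj_mod_phase n U P) (conj_mod_phase n U Q)"
proof -
  have Uu: "unitary_mat (2^n) U" using U by (simp add: clifford_def)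
  obtain a where a: "adj U * pauli_mat n P * U = a \<cdot>\<^sub>m pauli_mat n (conj_mod_phase n U P)"
    using conj_spec[OF U P] by blast
  obtain b where b: "adj U * pauli_mat n Q * U = b \<cdot>\<^sub>m pauli_mat n (conj_mod_phase n U Q)"
    using conj_spec[OF U Q] by blast
  have P': "is_pauli n (conj_mod_phase n U P)" and Q': "is_pauli n (conj_mod_phase n U Q)"
    using U P Q by simp_all
  define s where "s = ((-1::complex) ^ card (snd P \<inter> fst Q))"
  define s' where "s' = ((-1::complex) ^ card (snd (conj_mod_phase n U P) \<inter> fst (conj_mod_phase n U Q)))"
  have "adj U * pauli_mat n (pmul P Q) * U = s \<cdot>\<^sub>m (adj U * (pauli_mat n P * pauli_mat n Q) * U)"
    unfolding pm_mult_inv[OF P Q] s_def by (rule conj_smult[OF Uu]) simp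
  also have "adj U * (pauli_mat n P * pauli_mat n Q) * U = (adj U * pauli_mat n P * U) * (adj U * pauli_mat n Q * U)"
    by (rule conj_split[OF Uu]) simp_all
  also have "\<dots> = (a * b) \<cdot>\<^sub>m (pauli_mat n (conj_mod_phase n U P) * pauli_mat n (conj_mod_phase n U Q))"
    unfolding a b by (rule smult_mult_smult[OF pm_carrier pm_carrier])
  also have "\<dots> = (a * b * s') \<cdot>\<^sub>m pauli_mat n (pmul (conj_mod_phase n U P) (conj_mod_phase n U Q))"
    unfolding pm_mult[OF P' Q'] s'_def by simp
  finally have "adj U * pauli_mat n (pmul P Q) * U = (s * (a * b * s')) \<cdot>\<^sub>m pauli_mat n (pmul (conj_mod_phase n U P) (conj_mod_phase n U Q))"
    by simp
  then show ?thesis by (rule conj_eqI[OF U, rotated]) (simp add: P' Q')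
qed

lemma pm_commute_iff:
  assumes P: "is_pauli n P" and Q: "is_pauli n Q"
  shows "pauli_mat n P * pauli_mat n Q = pauli_mat n Q * pauli_mat n P \<longleftrightarrow> pcomm P Q"
proof
  assume "pcomm P Q" then show "pauli_mat n P * pauli_mat n Q = pauli_mat n Q * pauli_mat n P"
    using pm_comm[OF P Q] by simp
next
  assume e: "pauli_mat n P * pauli_mat n Q = pauli_mat n Q * pauli_mat n P"
  show "pcomm P Q"
  proof (rule ccontr)
    assume nc: "\<not> pcomm P Q"
    define t where "t = ((-1::complex) ^ card (snd Q \<inter> fst P))"
    have X: "pauli_mat n Q * pauli_mat n P = t \<cdot>\<^sub>m pauli_mat n (pmul Q P)"
      unfolding t_def by (rule pm_mult[OF Q P])
    have h1: "pauli_mat n P * pauli_mat n Q = (-1) \<cdot>\<^sub>m (pauli_mat n Q * pauli_mat n P)"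
      using pm_comm[OF P Q] nc by simp
    have h2: "pauli_mat n Q * pauli_mat n P = (-1) \<cdot>\<^sub>m (pauli_mat n Q * pauli_mat n P)"
      using h1 unfolding e .
    have h3: "t \<cdot>\<^sub>m pauli_mat n (pmul Q P) = (-1) \<cdot>\<^sub>m (t \<cdot>\<^sub>m pauli_mat n (pmul Q P))"
      using h2 unfolding X .
    have h4: "(-1) \<cdot>\<^sub>m (t \<cdot>\<^sub>m pauli_mat n (pmul Q P)) = (- t) \<cdot>\<^sub>m pauli_mat n (pmul Q P)"
      by simp
    have "t \<cdot>\<^sub>m pauli_mat n (pmul Q P) = (- t) \<cdot>\<^sub>m pauli_mat n (pmul Q P)"
      using h3 h4 by (rule trans)
    then have "t = - t" by (rule smult_cancel_pm) (use Q P in simp)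
    moreover have "t \<noteq> 0" unfolding t_def by simp
    ultimately show False by simp
  qed
qed

lemma conj_inj_mat:
  assumes U: "unitary_mat N U" and A: "A \<in> carrier_mat N N" and B: "B \<in> carrier_mat N N"
    and e: "adj U * A * U = adj U * B * U"
  shows "A = B"
proof -
  have "A = U * (adj U * A * U) * adj U" using sandwich2[OF U A] by simp
  also have "\<dots> = U * (adj U * B * U) * adj U" unfolding e ..
  also have "\<dots> = B" using sandwich2[OF U B] .
  finally show ?thesis .
qed

lemma conj_pcomm:
  assumes U: "clifford n U" and P: "is_pauli n P" and Q: "is_pauli n Q"
  shows "pcomm (conj_mod_phase n U P) (conj_mod_phase n U Q) \<longleftrightarrow> pcomm P Q"
proof -
  have Uu: "unitary_mat (2^n) U" using U by (simp add: clifford_def)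
  obtain a where a0: "a \<noteq> 0" and a: "adj U * pauli_mat n P * U = a \<cdot>\<^sub>m pauli_mat n (conj_mod_phase n U P)"
    using conj_spec[OF U P] by blast
  obtain b where b0: "b \<noteq> 0" and b: "adj U * pauli_mat n Q * U = b \<cdot>\<^sub>m pauli_mat n (conj_mod_phase n U Q)"
    using conj_spec[OF U Q] by blast
  have P': "is_pauli n (conj_mod_phase n U P)" and Q': "is_pauli n (conj_mod_phase n U Q)"
    using U P Q by simp_all
  let ?P = "pauli_mat n P" and ?Q = "pauli_mat n Q"
  let ?P' = "pauli_mat n (conj_mod_phase n U P)" and ?Q' = "pauli_mat n (conj_mod_phase n U Q)"
  have l: "adj U * (?P * ?Q) * U = (a * b) \<cdot>\<^sub>m (?P' * ?Q')"
    unfolding conj_split[OF Uu pm_carrier pm_carrier] a b by (rule smult_mult_smult[OF pm_carrier pm_carrier])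
  have r: "adj U * (?Q * ?P) * U = (a * b) \<cdot>\<^sub>m (?Q' * ?P')"
    unfolding conj_split[OF Uu pm_carrier pm_carrier] a b by (subst smult_mult_smult[OF pm_carrier pm_carrier]) (simp add: mult.commute)
  have "?P * ?Q = ?Q * ?P \<longleftrightarrow> adj U * (?P * ?Q) * U = adj U * (?Q * ?P) * U"
  proof
    assume "?P * ?Q = ?Q * ?P" then show "adj U * (?P * ?Q) * U = adj U * (?Q * ?P) * U" by simp
  next
    assume "adj U * (?P * ?Q) * U = adj U * (?Q * ?P) * U"
    then show "?P * ?Q = ?Q * ?P" by (rule conj_inj_mat[OF Uu, rotated 2]) simp_all
  qed
  also have "\<dots> \<longleftrightarrow> ?P' * ?Q' = ?Q' * ?P'"
  proof
    assume "adj U * (?P * ?Q) * U = adj U * (?Q * ?P) * U"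
    then have "(a * b) \<cdot>\<^sub>m (?P' * ?Q') = (a * b) \<cdot>\<^sub>m (?Q' * ?P')" unfolding l r .
    then have "(1 / (a * b)) \<cdot>\<^sub>m ((a * b) \<cdot>\<^sub>m (?P' * ?Q')) = (1 / (a * b)) \<cdot>\<^sub>m ((a * b) \<cdot>\<^sub>m (?Q' * ?P'))" by simp
    then show "?P' * ?Q' = ?Q' * ?P'" using a0 b0 by simp
  qed (simp add: l r)
  finally show ?thesis using pm_commute_iff P Q P' Q' by simp
qed

lemma commute_mult:
  assumes "M \<in> carrier_mat N N" "A \<in> carrier_mat N N" "B \<in> carrier_mat N N"
    and "M * A = A * M" "M * B = B * M"
  shows "M * (A * B) = (A * B) * M"
proof -
  have 1: "M * (A * B) = (M * A) * B" using assoc_sq[OF assms(1-3)] by (rule sym)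
  have 2: "(M * A) * B = (A * M) * B" using assms(4) by simp
  have 3: "(A * M) * B = A * (M * B)" by (rule assoc_sq[OF assms(2,1,3)])
  have 4: "A * (M * B) = A * (B * M)" using assms(5) by simp
  have 5: "A * (B * M) = (A * B) * M" by (rule assoc_sq[OF assms(2,3,1), symmetric])
  show ?thesis using 1 2 3 4 5 by simp
qed

lemma commute_pm_supp:
  assumes M: "M \<in> carrier_mat (2^n) (2^n)" and P: "is_pauli n P"
    and h: "\<And>q. q \<in> psupp P \<Longrightarrow> M * pauli_mat n ({q}, {}) = pauli_mat n ({q}, {}) * M \<and>
                                   M * pauli_mat n ({}, {q}) = pauli_mat n ({}, {q}) * M"
  shows "M * pauli_mat n P = pauli_mat n P * M"
proof -
  have fin: "finite (fst P)" "finite (snd P)" using finite_is_pauli[OF P] by auto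
  have X: "X \<subseteq> fst P \<Longrightarrow> M * pauli_mat n (X, {}) = pauli_mat n (X, {}) * M" for X
    using finite_subset[OF _ fin(1)]
  proof (induction X rule: infinite_finite_induct)
    case (infinite A) then show ?case using fin(1) finite_subset by blast
  next
    case empty then show ?case using M by (simp add: pm_zero)
  next
    case (insert q X)
    have q: "q < n" using insert P by (auto simp: is_pauli_def)
    have Xp: "is_pauli n (X, {})" using insert P by (auto simp: is_pauli_def)
    have qp: "is_pauli n ({q}, {})" using q by (simp add: is_pauli_def)
    have e: "pauli_mat n (insert q X, {}) = pauli_mat n ({q}, {}) * pauli_mat n (X, {})"
    proof -
      have "pmul ({q}, {}) (X, {}) = (insert q X, {})" using insert by (auto simp: pmul_def)
      then show ?thesis using pm_mult[OF qp Xp] by simp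
    qed
    have "q \<in> psupp P" using insert by (auto simp: psupp_def)
    then show ?case unfolding e using insert h[of q] M by (intro commute_mult) auto
  qed
  have Z: "Z \<subseteq> snd P \<Longrightarrow> M * pauli_mat n (fst P, Z) = pauli_mat n (fst P, Z) * M" for Z
    using finite_subset[OF _ fin(2)]
  proof (induction Z rule: infinite_finite_induct)
    case (infinite A) then show ?case using fin(2) finite_subset by blast
  next
    case empty then show ?case using X by simp
  next
    case (insert q Z)
    have q: "q < n" using insert P by (auto simp: is_pauli_def)
    have Zp: "is_pauli n (fst P, Z)" using insert P by (auto simp: is_pauli_def)
    have qp: "is_pauli n ({}, {q})" using q by (simp add: is_pauli_def)
    have e: "pauli_mat n (fst P, insert q Z) = pauli_mat n (fst P, Z) * pauli_mat n ({}, {q})"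
    proof -
      have "pmul (fst P, Z) ({}, {q}) = (fst P, insert q Z)" using insert by (auto simp: pmul_def)
      then show ?thesis using pm_mult[OF Zp qp] by simp
    qed
    have "q \<in> psupp P" using insert by (auto simp: psupp_def)
    then show ?case unfolding e using insert h[of q] M by (intro commute_mult) auto
  qed
  show ?thesis using Z[of "snd P"] by simp
qed

lemma disjoint_commute:
  assumes U: "U \<in> carrier_mat (2^n) (2^n)" and P: "is_pauli n P" and d: "psupp P \<inter> mat_supp n U = {}"
  shows "U * pauli_mat n P = pauli_mat n P * U"
proof (rule commute_pm_supp[OF U P])
  fix q assume q: "q \<in> psupp P"
  then have "q < n" using P by (auto simp: psupp_def is_pauli_def)
  moreover have "q \<notin> mat_supp n U" using d q by blast
  ultimately show "U * pauli_mat n ({q}, {}) = pauli_mat n ({q}, {}) * U \<and> U * pauli_mat n ({}, {q}) = pauli_mat n ({}, {q}) * U"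
    by (simp add: mat_supp_def)
qed

lemma conj_disjoint:
  assumes U: "clifford n U" and P: "is_pauli n P" and d: "psupp P \<inter> mat_supp n U = {}"
  shows "conj_mod_phase n U P = P"
proof (rule conj_eqI[OF U P])
  have Uu: "unitary_mat (2^n) U" using U by (simp add: clifford_def)
  note c = unitary_carrier[OF Uu] unitary_adj_carrier[OF Uu]
  have "adj U * pauli_mat n P * U = adj U * (U * pauli_mat n P)"
    using disjoint_commute[OF c(1) P d] c by (simp add: assoc_sq[of _ "2^n"])
  also have "\<dots> = pauli_mat n P" using c by (simp flip: assoc_sq[of _ "2^n"] add: unitary_linv[OF Uu])
  finally show "adj U * pauli_mat n P * U = 1 \<cdot>\<^sub>m pauli_mat n P" by simp
qed

lemma adj_commute:
  assumes U: "unitary_mat N U" and A: "A \<in> carrier_mat N N" and e: "U * A = A * U"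
  shows "adj U * A = A * adj U"
proof -
  note c = unitary_carrier[OF U] unitary_adj_carrier[OF U]
  have "adj U * A = adj U * A * (U * adj U)" using c A by (simp add: unitary_rinv[OF U])
  also have "\<dots> = adj U * (U * A) * adj U" using c A e by (simp add: assoc_sq[of _ N])
  also have "\<dots> = (adj U * U) * A * adj U" using c A by (simp add: assoc_sq[of _ N])
  also have "\<dots> = A * adj U" using c A by (simp add: unitary_linv[OF U])
  finally show ?thesis .
qed

lemma pm_single_pcomm:
  "pcomm P ({q}, {}) \<longleftrightarrow> q \<notin> snd P" "pcomm P ({}, {q}) \<longleftrightarrow> q \<notin> fst P"
  by (auto simp: pcomm_def Int_insert_right)

lemma conj_supp:
  assumes U: "clifford n U" and P: "is_pauli n P"
  shows "psupp (conj_mod_phase n U P) \<subseteq> psupp P \<union> mat_supp n U"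
proof
  fix q assume qin: "q \<in> psupp (conj_mod_phase n U P)"
  have Uu: "unitary_mat (2^n) U" using U by (simp add: clifford_def)
  note c = unitary_carrier[OF Uu] unitary_adj_carrier[OF Uu]
  have P': "is_pauli n (conj_mod_phase n U P)" using U P by simp
  then have qn: "q < n" using qin by (auto simp: psupp_def is_pauli_def)
  show "q \<in> psupp P \<union> mat_supp n U"
  proof (rule ccontr)
    assume "q \<notin> psupp P \<union> mat_supp n U"
    then have nP: "q \<notin> psupp P" and nU: "q \<notin> mat_supp n U" by auto
    obtain a where a0: "a \<noteq> 0" and a: "adj U * pauli_mat n P * U = a \<cdot>\<^sub>m pauli_mat n (conj_mod_phase n U P)"
      using conj_spec[OF U P] by blast
    have ok: "pcomm (conj_mod_phase n U P) S" if S: "S = ({q}, {}) \<or> S = ({}, {q})" for S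
    proof -
      have Sp: "is_pauli n S" using S qn by (auto simp: is_pauli_def)
      have uS: "U * pauli_mat n S = pauli_mat n S * U" using S nU qn by (auto simp: mat_supp_def)
      have aS: "adj U * pauli_mat n S = pauli_mat n S * adj U" by (rule adj_commute[OF Uu pm_carrier uS])
      have "pcomm P S" using S nP by (auto simp: pm_single_pcomm psupp_def)
      then have pS: "pauli_mat n P * pauli_mat n S = pauli_mat n S * pauli_mat n P" using pm_commute_iff[OF P Sp] by simp
      let ?M = "adj U * pauli_mat n P * U"
      have "?M * pauli_mat n S = adj U * pauli_mat n P * (U * pauli_mat n S)" using c by (simp add: assoc_sq[of _ "2^n"])
      also have "\<dots> = adj U * (pauli_mat n P * pauli_mat n S) * U" unfolding uS using c by (simp add: assoc_sq[of _ "2^n"])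
      also have "\<dots> = (adj U * pauli_mat n S) * pauli_mat n P * U" unfolding pS using c by (simp add: assoc_sq[of _ "2^n"])
      also have "\<dots> = pauli_mat n S * ?M" unfolding aS using c by (simp add: assoc_sq[of _ "2^n"])
      finally have "?M * pauli_mat n S = pauli_mat n S * ?M" .
      then have "a \<cdot>\<^sub>m (pauli_mat n (conj_mod_phase n U P) * pauli_mat n S) = a \<cdot>\<^sub>m (pauli_mat n S * pauli_mat n (conj_mod_phase n U P))"
        unfolding a mult_smult_assoc_mat[OF pm_carrier pm_carrier] mult_smult_distrib[OF pm_carrier pm_carrier] .
      then have "(1 / a) \<cdot>\<^sub>m (a \<cdot>\<^sub>m (pauli_mat n (conj_mod_phase n U P) * pauli_mat n S)) = (1 / a) \<cdot>\<^sub>m (a \<cdot>\<^sub>m (pauli_mat n S * pauli_mat n (conj_mod_phase n U P)))"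
        by simp
      then have "pauli_mat n (conj_mod_phase n U P) * pauli_mat n S = pauli_mat n S * pauli_mat n (conj_mod_phase n U P)"
        using a0 by simp
      then show ?thesis using pm_commute_iff[OF P' Sp] by simp
    qed
    have "q \<notin> snd (conj_mod_phase n U P)" using ok[of "({q}, {})"] by (simp add: pm_single_pcomm)
    moreover have "q \<notin> fst (conj_mod_phase n U P)" using ok[of "({}, {q})"] by (simp add: pm_single_pcomm)
    ultimately show False using qin by (simp add: psupp_def)
  qed
qed

lemma clifford_carrier: "clifford n U \<Longrightarrow> U \<in> carrier_mat (2^n) (2^n)"
  by (simp add: clifford_def unitary_mat_def)
lemma clifford_adj_carrier: "clifford n U \<Longrightarrow> adj U \<in> carrier_mat (2^n) (2^n)"
  by (simp add: clifford_def unitary_mat_def)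

lemma smult_mid:
  fixes A M B :: "complex mat"
  assumes A: "A \<in> carrier_mat N N" and M: "M \<in> carrier_mat N N" and B: "B \<in> carrier_mat N N"
  shows "A * (a \<cdot>\<^sub>m M) * B = a \<cdot>\<^sub>m (A * M * B)"
proof -
  have "A * (a \<cdot>\<^sub>m M) = a \<cdot>\<^sub>m (A * M)" by (rule mult_smult_distrib[OF A M])
  moreover have "(a \<cdot>\<^sub>m (A * M)) * B = a \<cdot>\<^sub>m (A * M * B)"
    by (rule mult_smult_assoc_mat[OF mult_carrier_mat[OF A M] B])
  ultimately show ?thesis by simp
qed

lemma clifford_mult:
  assumes U: "clifford n U" and V: "clifford n V"
  shows "clifford n (U * V)"
proof -
  have Uu: "unitary_mat (2^n) U" and Vu: "unitary_mat (2^n) V" using U V by (simp_all add: clifford_def)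
  note c = unitary_carrier[OF Uu] unitary_adj_carrier[OF Uu] unitary_carrier[OF Vu] unitary_adj_carrier[OF Vu]
  have "\<exists>a Q. is_pauli n Q \<and> U * V * pauli_mat n P * adj (U * V) = a \<cdot>\<^sub>m pauli_mat n Q" if P: "is_pauli n P" for P
  proof -
    obtain a Q where Q: "is_pauli n Q" and a: "V * pauli_mat n P * adj V = a \<cdot>\<^sub>m pauli_mat n Q"
      using V P unfolding clifford_def by blast
    obtain b R where R: "is_pauli n R" and b: "U * pauli_mat n Q * adj U = b \<cdot>\<^sub>m pauli_mat n R"
      using U Q unfolding clifford_def by blast
    have "U * V * pauli_mat n P * adj (U * V) = U * (V * pauli_mat n P * adj V) * adj U"
      using c by (simp add: adj_mult[of U "2^n" "2^n" V "2^n"] assoc_sq[of _ "2^n"])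
    also have "\<dots> = U * (a \<cdot>\<^sub>m pauli_mat n Q) * adj U" unfolding a ..
    also have "\<dots> = a \<cdot>\<^sub>m (U * pauli_mat n Q * adj U)"
      using c by (intro smult_mid) auto
    also have "\<dots> = (a * b) \<cdot>\<^sub>m pauli_mat n R" unfolding b by simp
    finally show ?thesis using R by blast
  qed
  then show ?thesis using unitary_mult[OF Uu Vu] by (simp add: clifford_def)
qed

lemma clifford_one: "clifford n (1\<^sub>m (2^n))"
proof -
  have "\<exists>a Q. is_pauli n Q \<and> 1\<^sub>m (2^n) * pauli_mat n P * adj (1\<^sub>m (2^n)) = a \<cdot>\<^sub>m pauli_mat n Q" if "is_pauli n P" for P
    using that by (intro exI[of _ 1] exI[of _ P]) simp
  then show ?thesis by (simp add: clifford_def unitary_one)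
qed

lemma conj_mult:
  assumes U: "clifford n U" and V: "clifford n V" and P: "is_pauli n P"
  shows "conj_mod_phase n (U * V) P = conj_mod_phase n V (conj_mod_phase n U P)"
proof -
  have Uu: "unitary_mat (2^n) U" and Vu: "unitary_mat (2^n) V" using U V by (simp_all add: clifford_def)
  note c = unitary_carrier[OF Uu] unitary_adj_carrier[OF Uu] unitary_carrier[OF Vu] unitary_adj_carrier[OF Vu]
  obtain a where a: "adj U * pauli_mat n P * U = a \<cdot>\<^sub>m pauli_mat n (conj_mod_phase n U P)"
    using conj_spec[OF U P] by blast
  have Q: "is_pauli n (conj_mod_phase n U P)" using U P by simp
  obtain b where b: "adj V * pauli_mat n (conj_mod_phase n U P) * V = b \<cdot>\<^sub>m pauli_mat n (conj_mod_phase n V (conj_mod_phase n U P))"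
    using conj_spec[OF V Q] by blast
  have "adj (U * V) * pauli_mat n P * (U * V) = adj V * (adj U * pauli_mat n P * U) * V"
    using c by (simp add: adj_mult[of U "2^n" "2^n" V "2^n"] assoc_sq[of _ "2^n"])
  also have "\<dots> = adj V * (a \<cdot>\<^sub>m pauli_mat n (conj_mod_phase n U P)) * V" unfolding a ..
  also have "\<dots> = a \<cdot>\<^sub>m (adj V * pauli_mat n (conj_mod_phase n U P) * V)"
    by (rule conj_smult[OF Vu]) simp
  also have "\<dots> = (a * b) \<cdot>\<^sub>m pauli_mat n (conj_mod_phase n V (conj_mod_phase n U P))" unfolding b by simp
  finally show ?thesis by (rule conj_eqI[OF clifford_mult[OF U V], rotated]) (simp add: V Q)
qed

lemma conj_zero[simp]:
  assumes U: "clifford n U"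
  shows "conj_mod_phase n U ({}, {}) = ({}, {})"
proof (rule conj_eqI[OF U])
  have Uu: "unitary_mat (2^n) U" using U by (simp add: clifford_def)
  show "adj U * pauli_mat n ({}, {}) * U = 1 \<cdot>\<^sub>m pauli_mat n ({}, {})"
    using unitary_carrier[OF Uu] unitary_adj_carrier[OF Uu] by (simp add: pm_zero unitary_linv[OF Uu])
qed simp

lemma conj_inj:
  assumes U: "clifford n U" and P: "is_pauli n P" and Q: "is_pauli n Q"
    and e: "conj_mod_phase n U P = conj_mod_phase n U Q"
  shows "P = Q"
proof -
  have z: "conj_mod_phase n U (pmul P Q) = ({}, {})" using conj_pmul[OF U P Q] e by simp
  have R: "is_pauli n (pmul P Q)" using P Q by simp
  obtain a where a: "adj U * pauli_mat n (pmul P Q) * U = a \<cdot>\<^sub>m pauli_mat n (conj_mod_phase n U (pmul P Q))"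
    using conj_spec[OF U R] by blast
  have Uu: "unitary_mat (2^n) U" using U by (simp add: clifford_def)
  note c = unitary_carrier[OF Uu] unitary_adj_carrier[OF Uu]
  have "pauli_mat n (pmul P Q) = U * (adj U * pauli_mat n (pmul P Q) * U) * adj U"
    using sandwich2[OF Uu, of "pauli_mat n (pmul P Q)"] by simp
  also have "\<dots> = U * (a \<cdot>\<^sub>m 1\<^sub>m (2^n)) * adj U" unfolding a z pm_zero ..
  also have "\<dots> = a \<cdot>\<^sub>m (U * 1\<^sub>m (2^n) * adj U)"
    using c by (intro smult_mid) auto
  also have "\<dots> = a \<cdot>\<^sub>m 1\<^sub>m (2^n)"
    using c by (simp add: unitary_rinv[OF Uu])
  finally have "1 \<cdot>\<^sub>m pauli_mat n (pmul P Q) = a \<cdot>\<^sub>m pauli_mat n ({}, {})" by (simp add: pm_zero)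
  then have "pmul P Q = ({}, {})" by (rule conjunct1[OF pm_unique[OF R is_pauli_zero]]) simp
  then show ?thesis by (auto simp: pmul_def prod_eq_iff)
qed

lemma smult_mv: "A \<in> carrier_mat k l \<Longrightarrow> v \<in> carrier_vec l \<Longrightarrow> (a \<cdot>\<^sub>m A) *\<^sub>v v = a \<cdot>\<^sub>v (A *\<^sub>v (v :: complex vec))"
  by (rule eq_vecI) (auto simp: scalar_prod_def sum_distrib_left mult.assoc)

lemma mv_smult: "A \<in> carrier_mat k l \<Longrightarrow> v \<in> carrier_vec l \<Longrightarrow> A *\<^sub>v (a \<cdot>\<^sub>v v) = a \<cdot>\<^sub>v (A *\<^sub>v (v :: complex vec))"
  by (rule mult_mat_vec) auto

lemma mv_zero: "A \<in> carrier_mat k l \<Longrightarrow> A *\<^sub>v 0\<^sub>v l = (0\<^sub>v k :: complex vec)"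
  by (rule eq_vecI) (auto simp: scalar_prod_def)

lemma smult_zero_vec': "a \<cdot>\<^sub>v 0\<^sub>v k = (0\<^sub>v k :: complex vec)"
  by (rule eq_vecI) auto

lemma smult_vec_zeroD:
  assumes v: "v \<in> carrier_vec k" and a: "a \<noteq> 0" and h: "a \<cdot>\<^sub>v v = (0\<^sub>v k :: complex vec)"
  shows "v = 0\<^sub>v k"
proof (rule eq_vecI)
  fix i assume i: "i < dim_vec (0\<^sub>v k :: complex vec)"
  have "(a \<cdot>\<^sub>v v) $ i = 0" using h i by simp
  then show "v $ i = 0\<^sub>v k $ i" using i v a by auto
next
  show "dim_vec v = dim_vec (0\<^sub>v k :: complex vec)" using v by simp
qed

definition nm :: "operation list \<Rightarrow> nat" where
  "nm os = length (filter is_meas os)"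

lemma nm_simps[simp]: "nm [] = 0" "nm (Gate l U # os) = nm os" "nm (Meas l S # os) = Suc (nm os)"
  by (simp_all add: nm_def)

lemma nm_append[simp]: "nm (xs @ ys) = nm xs + nm ys"
  by (simp add: nm_def)

definition ok_ops :: "nat \<Rightarrow> operation list \<Rightarrow> bool" where
  "ok_ops n os \<longleftrightarrow> (\<forall>w\<in>set os. op_ok n w)"

lemma ok_ops_simps[simp]: "ok_ops n []" "ok_ops n (Gate l U # os) \<longleftrightarrow> clifford n U \<and> ok_ops n os"
  "ok_ops n (Meas l S # os) \<longleftrightarrow> is_pauli n (snd S) \<and> ok_ops n os"
  "ok_ops n (xs @ ys) \<longleftrightarrow> ok_ops n xs \<and> ok_ops n ys"
  by (auto simp: ok_ops_def)

definition proj :: "nat \<Rightarrow> herm_pauli \<Rightarrow> complex \<Rightarrow> complex mat" where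
  "proj n S s = (1/2::complex) \<cdot>\<^sub>m (1\<^sub>m (2^n) + s \<cdot>\<^sub>m herm_pauli_mat n S)"

lemma hpm_dim[simp]: "dim_row (herm_pauli_mat n S) = 2^n" "dim_col (herm_pauli_mat n S) = 2^n"
  by (simp_all add: herm_pauli_mat_def)

lemma proj_carrier[simp]: "proj n S s \<in> carrier_mat (2^n) (2^n)"
  by (simp add: proj_def)

fun pt :: "nat \<Rightarrow> nat set \<Rightarrow> operation list \<Rightarrow> nat \<Rightarrow> pauli \<Rightarrow> pauli option" where
  "pt n u [] j P0 = Some P0"
| "pt n u (Gate l U # rest) j P0 = map_option (conj_mod_phase n U) (pt n u rest j P0)"
| "pt n u (Meas l S # rest) j P0 = (case pt n u rest (Suc j) P0 of None \<Rightarrow> None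
     | Some P \<Rightarrow> if pcomm (snd S) P then Some (if j \<in> u then pmul (snd S) P else P) else None)"

fun ha :: "nat \<Rightarrow> nat set \<Rightarrow> operation list \<Rightarrow> nat \<Rightarrow> complex mat" where
  "ha n u [] j = 1\<^sub>m (2^n)"
| "ha n u (Gate l U # rest) j = adj U * ha n u rest j * U"
| "ha n u (Meas l S # rest) j = (if j \<in> u then herm_pauli_mat n S * ha n u rest (Suc j) else ha n u rest (Suc j))"

context fixes n :: nat begin

lemma sq_assoc: "A \<in> carrier_mat (2^n) (2^n) \<Longrightarrow> B \<in> carrier_mat (2^n) (2^n) \<Longrightarrow> C \<in> carrier_mat (2^n) (2^n) \<Longrightarrow> A * B * C = A * (B * C)"
  by (rule assoc_mult_mat)
lemma sq_distl: "A \<in> carrier_mat (2^n) (2^n) \<Longrightarrow> B \<in> carrier_mat (2^n) (2^n) \<Longrightarrow> C \<in> carrier_mat (2^n) (2^n) \<Longrightarrow> A * (B + C) = A * B + A * (C :: complex mat)"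
  by (rule mult_add_distrib_mat)
lemma sq_distr: "A \<in> carrier_mat (2^n) (2^n) \<Longrightarrow> B \<in> carrier_mat (2^n) (2^n) \<Longrightarrow> C \<in> carrier_mat (2^n) (2^n) \<Longrightarrow> (A + B) * C = A * C + B * (C :: complex mat)"
  by (rule add_mult_distrib_mat)
lemma sq_smult_l: "A \<in> carrier_mat (2^n) (2^n) \<Longrightarrow> B \<in> carrier_mat (2^n) (2^n) \<Longrightarrow> (a \<cdot>\<^sub>m A) * B = a \<cdot>\<^sub>m (A * (B :: complex mat))"
  by (rule mult_smult_assoc_mat)
lemma sq_smult_r: "A \<in> carrier_mat (2^n) (2^n) \<Longrightarrow> B \<in> carrier_mat (2^n) (2^n) \<Longrightarrow> A * (a \<cdot>\<^sub>m B) = a \<cdot>\<^sub>m (A * (B :: complex mat))"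
  by (rule mult_smult_distrib)
lemma sq_mv_assoc: "A \<in> carrier_mat (2^n) (2^n) \<Longrightarrow> B \<in> carrier_mat (2^n) (2^n) \<Longrightarrow> v \<in> carrier_vec (2^n) \<Longrightarrow> (A * B) *\<^sub>v v = A *\<^sub>v (B *\<^sub>v (v :: complex vec))"
  by (rule assoc_mult_mat_vec)
lemma sq_mv_smult: "A \<in> carrier_mat (2^n) (2^n) \<Longrightarrow> v \<in> carrier_vec (2^n) \<Longrightarrow> A *\<^sub>v (a \<cdot>\<^sub>v v) = a \<cdot>\<^sub>v (A *\<^sub>v (v :: complex vec))"
  by (rule mv_smult)
lemma sq_mv_add: "A \<in> carrier_mat (2^n) (2^n) \<Longrightarrow> v \<in> carrier_vec (2^n) \<Longrightarrow> w \<in> carrier_vec (2^n) \<Longrightarrow> A *\<^sub>v (v + w) = A *\<^sub>v v + A *\<^sub>v (w :: complex vec)"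
  by (rule mult_add_distrib_mat_vec)
lemma sq_add_mv: "A \<in> carrier_mat (2^n) (2^n) \<Longrightarrow> B \<in> carrier_mat (2^n) (2^n) \<Longrightarrow> v \<in> carrier_vec (2^n) \<Longrightarrow> (A + B) *\<^sub>v v = A *\<^sub>v v + B *\<^sub>v (v :: complex vec)"
  by (rule add_mult_distrib_mat_vec)
lemma sq_mult_carrier[simp]: "A \<in> carrier_mat (2^n) (2^n) \<Longrightarrow> B \<in> carrier_mat (2^n) (2^n) \<Longrightarrow> A * B \<in> carrier_mat (2^n) (2^n)"
  by (rule mult_carrier_mat)
lemma sq_mv_carrier[simp]: "A \<in> carrier_mat (2^n) (2^n) \<Longrightarrow> v \<in> carrier_vec (2^n) \<Longrightarrow> A *\<^sub>v v \<in> carrier_vec (2^n)"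
  by (rule mult_mat_vec_carrier)
lemma sq_smult_vec_add: "v \<in> carrier_vec (2^n) \<Longrightarrow> w \<in> carrier_vec (2^n) \<Longrightarrow> a \<cdot>\<^sub>v (v + w) = a \<cdot>\<^sub>v v + a \<cdot>\<^sub>v (w :: complex vec)"
  by (rule smult_add_distrib_vec)
lemma sq_smult_mv: "A \<in> carrier_mat (2^n) (2^n) \<Longrightarrow> v \<in> carrier_vec (2^n) \<Longrightarrow> (a \<cdot>\<^sub>m A) *\<^sub>v v = a \<cdot>\<^sub>v (A *\<^sub>v (v :: complex vec))"
  by (rule smult_mv)
lemma sq_mv_zero: "A \<in> carrier_mat (2^n) (2^n) \<Longrightarrow> A *\<^sub>v 0\<^sub>v (2^n) = (0\<^sub>v (2^n) :: complex vec)"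
  by (rule mv_zero)
lemma cliff_carrier[simp]: "clifford n U \<Longrightarrow> U \<in> carrier_mat (2^n) (2^n)"
  by (rule clifford_carrier)
lemma cliff_adj_carrier[simp]: "clifford n U \<Longrightarrow> adj U \<in> carrier_mat (2^n) (2^n)"
  by (rule clifford_adj_carrier)

lemmas sq_simps = sq_assoc sq_distl sq_distr sq_smult_l sq_smult_r sq_mv_assoc sq_mv_smult sq_mv_add sq_add_mv
  sq_smult_mv sq_smult_vec_add add_smult_distrib_vec smult_smult_assoc sq_mv_zero

lemma run_Meas: "run n w j (Meas l S # rest) \<psi> = run n w (Suc j) rest (proj n S (if j \<in> w then -1 else 1) *\<^sub>v \<psi>)"
  by (simp add: proj_def)

lemma run_carrier:
  "ok_ops n os \<Longrightarrow> \<psi> \<in> carrier_vec (2^n) \<Longrightarrow> run n w j os \<psi> \<in> carrier_vec (2^n)"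
proof (induction os arbitrary: j \<psi>)
  case Nil then show ?case by simp
next
  case (Cons x os)
  then show ?case
  proof (cases x)
    case (Gate l U) then show ?thesis using Cons by simp
  next
    case (Meas l S) then show ?thesis using Cons by (simp add: run_Meas)
  qed
qed

lemma run_local:
  assumes "\<And>i. j \<le> i \<Longrightarrow> i < j + nm os \<Longrightarrow> (i \<in> w \<longleftrightarrow> i \<in> w')"
  shows "run n w j os \<psi> = run n w' j os \<psi>"
  using assms
proof (induction os arbitrary: j \<psi>)
  case Nil then show ?case by simp
next
  case (Cons x os)
  then show ?case
  proof (cases x)
    case (Gate l U) then show ?thesis using Cons by simp
  next
    case (Meas l S)
    have jw: "j \<in> w \<longleftrightarrow> j \<in> w'" using Cons.prems[of j] Meas by simp
    have "run n w (Suc j) os \<phi> = run n w' (Suc j) os \<phi>" for \<phi>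
      by (rule Cons.IH) (use Cons.prems Meas in auto)
    then show ?thesis using Meas jw by (simp add: run_Meas)
  qed
qed

lemma run_add:
  "ok_ops n os \<Longrightarrow> \<psi> \<in> carrier_vec (2^n) \<Longrightarrow> \<phi> \<in> carrier_vec (2^n) \<Longrightarrow>
   run n w j os (\<psi> + \<phi>) = run n w j os \<psi> + run n w j os \<phi>"
proof (induction os arbitrary: j \<psi> \<phi>)
  case Nil then show ?case by simp
next
  case (Cons x os)
  then show ?case
  proof (cases x)
    case (Gate l U) then show ?thesis using Cons by (simp add: sq_mv_add)
  next
    case (Meas l S) then show ?thesis using Cons by (simp add: run_Meas sq_mv_add)
  qed
qed

lemma run_zero:
  "ok_ops n os \<Longrightarrow> run n w j os (0\<^sub>v (2^n)) = 0\<^sub>v (2^n)"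
proof (induction os arbitrary: j)
  case Nil then show ?case by simp
next
  case (Cons x os)
  then show ?case
  proof (cases x)
    case (Gate l U) then show ?thesis using Cons by (simp add: sq_mv_zero)
  next
    case (Meas l S) then show ?thesis using Cons by (simp add: run_Meas sq_mv_zero)
  qed
qed

lemma ha_carrier[simp]: "ok_ops n os \<Longrightarrow> ha n u os j \<in> carrier_mat (2^n) (2^n)"
proof (induction os arbitrary: j)
  case Nil then show ?case by simp
next
  case (Cons x os)
  then show ?case by (cases x) simp_all
qed

lemma ha_dim[simp]: "ok_ops n os \<Longrightarrow> dim_row (ha n u os j) = 2^n"  "ok_ops n os \<Longrightarrow> dim_col (ha n u os j) = 2^n"
  by (metis carrier_matD(1) ha_carrier) (metis carrier_matD(2) ha_carrier)

lemma smult_pm_commute: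
  assumes P: "is_pauli n P" and Q: "is_pauli n Q" and c: "pcomm P Q"
  shows "(a \<cdot>\<^sub>m pauli_mat n P) * (b \<cdot>\<^sub>m pauli_mat n Q) = (b \<cdot>\<^sub>m pauli_mat n Q) * (a \<cdot>\<^sub>m pauli_mat n P)"
proof -
  have "pauli_mat n P * pauli_mat n Q = pauli_mat n Q * pauli_mat n P" using pm_commute_iff[OF P Q] c by simp
  then show ?thesis by (simp add: smult_mult_smult[OF pm_carrier pm_carrier] mult.commute)
qed

lemma smult_pm_anticommute:
  assumes P: "is_pauli n P" and Q: "is_pauli n Q" and c: "\<not> pcomm P Q"
  shows "(a \<cdot>\<^sub>m pauli_mat n P) * (b \<cdot>\<^sub>m pauli_mat n Q) = (-1) \<cdot>\<^sub>m ((b \<cdot>\<^sub>m pauli_mat n Q) * (a \<cdot>\<^sub>m pauli_mat n P))"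
proof -
  have "pauli_mat n P * pauli_mat n Q = (-1) \<cdot>\<^sub>m (pauli_mat n Q * pauli_mat n P)" using pm_comm[OF P Q] c by simp
  then show ?thesis by (simp add: smult_mult_smult[OF pm_carrier pm_carrier] mult.commute)
qed

lemma ha_pt:
  assumes "ok_ops n os" "pt n u os j ({}, {}) = Some P"
  shows "is_pauli n P \<and> (\<exists>c. ha n u os j = c \<cdot>\<^sub>m pauli_mat n P) \<and> ha n u os j * ha n u os j = 1\<^sub>m (2^n)"
  using assms
proof (induction os arbitrary: j P)
  case Nil then show ?case by (auto simp: pm_zero intro: exI[of _ 1])
next
  case (Cons x rest)
  show ?case
  proof (cases x)
    case (Gate l U)
    then have U: "clifford n U" and ok: "ok_ops n rest" using Cons.prems by auto
    have Uu: "unitary_mat (2^n) U" using U by (simp add: clifford_def)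
    obtain P' where P': "pt n u rest j ({}, {}) = Some P'" and PP: "P = conj_mod_phase n U P'"
      using Cons.prems Gate by auto
    obtain c where IH: "is_pauli n P'" "ha n u rest j = c \<cdot>\<^sub>m pauli_mat n P'" "ha n u rest j * ha n u rest j = 1\<^sub>m (2^n)"
      using Cons.IH[OF ok P'] by blast
    obtain a where a: "adj U * pauli_mat n P' * U = a \<cdot>\<^sub>m pauli_mat n (conj_mod_phase n U P')"
      using conj_spec[OF U IH(1)] by blast
    have h: "ha n u (x # rest) j = adj U * ha n u rest j * U" using Gate by simp
    have e1: "ha n u (x # rest) j = (c * a) \<cdot>\<^sub>m pauli_mat n P"
      unfolding h IH(2) PP using U by (simp add: smult_mid[of _ "2^n"] a)
    have "ha n u (x # rest) j * ha n u (x # rest) j = adj U * (ha n u rest j * (U * adj U) * ha n u rest j) * U"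
      unfolding h using U ok by (simp add: sq_assoc)
    also have "\<dots> = 1\<^sub>m (2^n)" using U ok IH(3)
      by (simp add: unitary_rinv[OF Uu] unitary_linv[OF Uu] right_mult_one_mat[OF ha_carrier[OF ok]] right_mult_one_mat[OF cliff_adj_carrier[OF U]])
    finally show ?thesis using e1 U IH(1) PP by auto
  next
    case (Meas l S)
    then have Sp: "is_pauli n (snd S)" and ok: "ok_ops n rest" using Cons.prems by auto
    obtain P' where P': "pt n u rest (Suc j) ({}, {}) = Some P'" and cm: "pcomm (snd S) P'"
      and PP: "P = (if j \<in> u then pmul (snd S) P' else P')"
      using Cons.prems Meas by (auto split: option.splits if_splits)
    obtain c where IH: "is_pauli n P'" "ha n u rest (Suc j) = c \<cdot>\<^sub>m pauli_mat n P'" "ha n u rest (Suc j) * ha n u rest (Suc j) = 1\<^sub>m (2^n)"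
      using Cons.IH[OF ok P'] by blast
    show ?thesis
    proof (cases "j \<in> u")
      case False then show ?thesis using IH PP Meas by auto
    next
      case True
      define h where "h = ((if fst S then -1 else 1) * \<i> ^ card (fst (snd S) \<inter> snd (snd S)))"
      have H: "herm_pauli_mat n S = h \<cdot>\<^sub>m pauli_mat n (snd S)" unfolding h_def hpm_def2 ..
      have e: "ha n u (x # rest) j = herm_pauli_mat n S * ha n u rest (Suc j)" using Meas True by simp
      have e1: "ha n u (x # rest) j = (h * c * (-1) ^ card (snd (snd S) \<inter> fst P')) \<cdot>\<^sub>m pauli_mat n P"
        unfolding e H IH(2) PP using True
        by (simp add: smult_mult_smult[OF pm_carrier pm_carrier] pm_mult[OF Sp IH(1)])
      have com: "herm_pauli_mat n S * ha n u rest (Suc j) = ha n u rest (Suc j) * herm_pauli_mat n S"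
        unfolding H IH(2) by (rule smult_pm_commute[OF Sp IH(1) cm])
      have "ha n u (x # rest) j * ha n u (x # rest) j =
          herm_pauli_mat n S * (ha n u rest (Suc j) * herm_pauli_mat n S) * ha n u rest (Suc j)"
        unfolding e using ok by (simp add: sq_assoc)
      also have "\<dots> = (herm_pauli_mat n S * herm_pauli_mat n S) * (ha n u rest (Suc j) * ha n u rest (Suc j))"
        unfolding com[symmetric] using ok by (simp add: sq_assoc)
      also have "\<dots> = 1\<^sub>m (2^n)" unfolding IH(3) hpm_sq[OF Sp] by simp
      finally show ?thesis using e1 IH(1) Sp PP True by auto
    qed
  qed
qed


lemma proj_eig:
  assumes Sp: "is_pauli n (snd S)" and s: "s * s = 1"
  shows "herm_pauli_mat n S * proj n S s = s \<cdot>\<^sub>m proj n S s"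
proof -
  let ?H = "herm_pauli_mat n S"
  have "?H * proj n S s = (1/2) \<cdot>\<^sub>m (?H * 1\<^sub>m (2^n) + ?H * (s \<cdot>\<^sub>m ?H))"
    unfolding proj_def by (simp add: sq_smult_r sq_distl)
  also have "\<dots> = (1/2) \<cdot>\<^sub>m (?H + s \<cdot>\<^sub>m 1\<^sub>m (2^n))"
    by (simp add: sq_smult_r hpm_sq[OF Sp] right_mult_one_mat[OF hpm_carrier])
  also have "\<dots> = s \<cdot>\<^sub>m proj n S s"
  proof (rule eq_matI)
    fix i k assume "i < dim_row (s \<cdot>\<^sub>m proj n S s)" "k < dim_col (s \<cdot>\<^sub>m proj n S s)"
    then have i: "i < 2^n" and k: "k < 2^n" by (simp_all add: proj_def)
    have "s * (s * ?H $$ (i, k)) = ?H $$ (i, k)" using s by (simp flip: mult.assoc)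
    then show "((1/2) \<cdot>\<^sub>m (?H + s \<cdot>\<^sub>m 1\<^sub>m (2^n))) $$ (i, k) = (s \<cdot>\<^sub>m proj n S s) $$ (i, k)"
      using i k unfolding proj_def by (auto simp: algebra_simps)
  qed (simp_all add: proj_def)
  finally show ?thesis .
qed

lemma proj_commute:
  assumes A: "A \<in> carrier_mat (2^n) (2^n)" and c: "A * herm_pauli_mat n S = herm_pauli_mat n S * A"
  shows "A * proj n S s = proj n S s * A"
proof -
  have "A * proj n S s = (1/2) \<cdot>\<^sub>m (A + s \<cdot>\<^sub>m (A * herm_pauli_mat n S))"
    unfolding proj_def using A by (simp add: sq_smult_r sq_distl right_mult_one_mat[OF A])
  also have "\<dots> = proj n S s * A"
    unfolding proj_def c using A by (simp add: sq_smult_l sq_distr left_mult_one_mat[OF A])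
  finally show ?thesis .
qed

lemma proj_sum: "proj n S 1 + proj n S (-1) = 1\<^sub>m (2^n)"
  by (rule eq_matI) (auto simp: proj_def algebra_simps)

lemma neg_vec_zero:
  assumes v: "v \<in> carrier_vec k" and h: "v = (-1::complex) \<cdot>\<^sub>v v"
  shows "v = 0\<^sub>v k"
proof (rule eq_vecI)
  fix i assume i: "i < dim_vec (0\<^sub>v k :: complex vec)"
  have "v $ i = - v $ i" using arg_cong[OF h, of "\<lambda>x. x $ i"] i v by simp
  then show "v $ i = 0\<^sub>v k $ i" using i by simp
qed (use v in simp)

definition par :: "nat set \<Rightarrow> nat set \<Rightarrow> nat \<Rightarrow> operation list \<Rightarrow> nat" where
  "par w u j os = card (w \<inter> u \<inter> {j..<j + nm os})"

lemma par_Nil[simp]: "par w u j [] = 0"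
  by (simp add: par_def)

lemma par_Gate[simp]: "par w u j (Gate l U # os) = par w u j os"
  by (simp add: par_def)

lemma par_Meas: "par w u j (Meas l S # os) = (if j \<in> w \<and> j \<in> u then 1 else 0) + par w u (Suc j) os"
proof -
  have e: "{j..<j + nm (Meas l S # os)} = insert j {Suc j..<Suc j + nm os}" by auto
  show ?thesis unfolding par_def e by (auto simp: Int_insert_right)
qed

definition ev :: "bool \<Rightarrow> complex" where "ev b = (if b then -1 else 1)"

lemma ev_sq[simp]: "ev b * ev b = 1"
  by (simp add: ev_def)

lemma ev_mult: "ev a * ev b = ev (a \<noteq> b)"
  by (simp add: ev_def)

lemma eigen_parity:
  assumes "ok_ops n os" "pt n u os j ({}, {}) = Some P" "\<psi> \<in> carrier_vec (2^n)"
    "ha n u os j *\<^sub>v \<psi> = ev b \<cdot>\<^sub>v \<psi>" "odd (par w u j os) \<noteq> b"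
  shows "run n w j os \<psi> = 0\<^sub>v (2^n)"
  using assms
proof (induction os arbitrary: j P \<psi> b)
  case Nil
  then have "b" by simp
  then have "\<psi> = (-1) \<cdot>\<^sub>v \<psi>" using Nil by (simp add: ev_def)
  then show ?case using neg_vec_zero Nil by simp
next
  case (Cons x rest)
  show ?case
  proof (cases x)
    case (Gate l U)
    then have U: "clifford n U" and ok: "ok_ops n rest" using Cons.prems by auto
    have Uu: "unitary_mat (2^n) U" using U by (simp add: clifford_def)
    obtain P' where P': "pt n u rest j ({}, {}) = Some P'"
      using Cons.prems Gate by auto
    have "ha n u rest j * U = U * ha n u (x # rest) j"
      using Gate U ok by (simp add: sq_assoc flip: sq_assoc[of U "adj U"] add: unitary_rinv[OF Uu] left_mult_one_mat[OF ha_carrier[OF ok]])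
    moreover have hc: "ha n u (x # rest) j \<in> carrier_mat (2^n) (2^n)" using Cons.prems(1) by simp
    ultimately have "ha n u rest j *\<^sub>v (U *\<^sub>v \<psi>) = ev b \<cdot>\<^sub>v (U *\<^sub>v \<psi>)"
      using Cons.prems(3,4) U ok by (simp flip: sq_mv_assoc add: sq_mv_assoc sq_mv_smult)
    then have "run n w j rest (U *\<^sub>v \<psi>) = 0\<^sub>v (2^n)"
      using Cons.IH[OF ok P'] Cons.prems U Gate by simp
    then show ?thesis using Gate by simp
  next
    case (Meas l S)
    then have Sp: "is_pauli n (snd S)" and ok: "ok_ops n rest" using Cons.prems by auto
    obtain P' where P': "pt n u rest (Suc j) ({}, {}) = Some P'" and cm: "pcomm (snd S) P'"
      using Cons.prems Meas by (auto split: option.splits if_splits)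
    obtain c where IH: "is_pauli n P'" "ha n u rest (Suc j) = c \<cdot>\<^sub>m pauli_mat n P'"
      using ha_pt[OF ok P'] by blast
    let ?H = "herm_pauli_mat n S" and ?A = "ha n u rest (Suc j)"
    define s where "s = ev (j \<in> w)"
    have s: "s * s = 1" unfolding s_def by simp
    define \<phi> where "\<phi> = proj n S s *\<^sub>v \<psi>"
    have phi: "\<phi> \<in> carrier_vec (2^n)" unfolding \<phi>_def using Cons.prems by simp
    have com: "?H * ?A = ?A * ?H"
      unfolding hpm_def2 IH(2) by (rule smult_pm_commute[OF Sp IH(1) cm])
    have Aproj: "?A * proj n S s = proj n S s * ?A" by (rule proj_commute) (use ok com in auto)
    have Hproj: "?H * proj n S s = proj n S s * ?H" by (rule proj_commute) simp_all
    have Hphi: "?H *\<^sub>v \<phi> = s \<cdot>\<^sub>v \<phi>"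
      unfolding \<phi>_def using Cons.prems proj_eig[OF Sp s] by (simp flip: sq_mv_assoc add: sq_smult_mv)
    have run: "run n w j (x # rest) \<psi> = run n w (Suc j) rest \<phi>"
      unfolding Meas run_Meas \<phi>_def s_def ev_def ..
    show ?thesis
    proof (cases "j \<in> u")
      case False
      then have hA: "ha n u (x # rest) j = ?A" using Meas by simp
      have "?A *\<^sub>v \<phi> = ev b \<cdot>\<^sub>v \<phi>"
        unfolding \<phi>_def using Cons.prems hA ok
        by (simp flip: sq_mv_assoc add: Aproj) (simp add: sq_mv_assoc sq_mv_smult)
      moreover have "odd (par w u (Suc j) rest) \<noteq> b" using Cons.prems False Meas by (simp add: par_Meas)
      ultimately have "run n w (Suc j) rest \<phi> = 0\<^sub>v (2^n)"
        using Cons.IH[OF ok P' phi] by simp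
      then show ?thesis using run by simp
    next
      case True
      then have hA: "ha n u (x # rest) j = ?H * ?A" using Meas by simp
      have A_eq: "?A = ?H * ha n u (x # rest) j"
        unfolding hA using ok by (simp flip: sq_assoc add: hpm_sq[OF Sp] left_mult_one_mat[OF ha_carrier[OF ok]])
      have hproj: "ha n u (x # rest) j * proj n S s = proj n S s * ha n u (x # rest) j"
        by (rule proj_commute) (use ok hA com in \<open>simp_all add: sq_assoc flip: sq_assoc\<close>)
      have hxc: "ha n u (x # rest) j \<in> carrier_mat (2^n) (2^n)" using Cons.prems(1) by simp
      have "?A *\<^sub>v \<phi> = ?H *\<^sub>v (ha n u (x # rest) j *\<^sub>v (proj n S s *\<^sub>v \<psi>))"
        unfolding A_eq \<phi>_def using Cons.prems hxc by (simp add: sq_mv_assoc)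
      also have "ha n u (x # rest) j *\<^sub>v (proj n S s *\<^sub>v \<psi>) = (ha n u (x # rest) j * proj n S s) *\<^sub>v \<psi>"
        using Cons.prems hxc by (simp add: sq_mv_assoc)
      also have "\<dots> = (proj n S s * ha n u (x # rest) j) *\<^sub>v \<psi>" unfolding hproj ..
      also have "\<dots> = proj n S s *\<^sub>v (ha n u (x # rest) j *\<^sub>v \<psi>)"
        using Cons.prems hxc by (simp add: sq_mv_assoc)
      also have "\<dots> = ev b \<cdot>\<^sub>v \<phi>"
        unfolding \<phi>_def using Cons.prems by (simp add: sq_mv_smult)
      also have "?H *\<^sub>v (ev b \<cdot>\<^sub>v \<phi>) = ev b \<cdot>\<^sub>v (?H *\<^sub>v \<phi>)"
        using phi by (simp add: sq_mv_smult)
      also have "\<dots> = ev (b \<noteq> (j \<in> w)) \<cdot>\<^sub>v \<phi>"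
        unfolding Hphi s_def by (simp add: smult_smult_assoc ev_mult)
      finally have e: "?A *\<^sub>v \<phi> = ev (b \<noteq> (j \<in> w)) \<cdot>\<^sub>v \<phi>" .
      moreover have "odd (par w u (Suc j) rest) \<noteq> (b \<noteq> (j \<in> w))"
        using Cons.prems True Meas by (cases "j \<in> w") (auto simp: par_Meas)
      ultimately have "run n w (Suc j) rest \<phi> = 0\<^sub>v (2^n)"
        using Cons.IH[OF ok P' phi] by simp
      then show ?thesis using run by simp
    qed
  qed
qed


definition prj :: "complex mat \<Rightarrow> complex \<Rightarrow> complex mat" where
  "prj A e = (1/2::complex) \<cdot>\<^sub>m (1\<^sub>m (2^n) + e \<cdot>\<^sub>m A)"

lemma prj_carrier[simp]: "A \<in> carrier_mat (2^n) (2^n) \<Longrightarrow> prj A e \<in> carrier_mat (2^n) (2^n)"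
  by (simp add: prj_def)

lemma prj_eig:
  assumes A: "A \<in> carrier_mat (2^n) (2^n)" and AA: "A * A = 1\<^sub>m (2^n)" and s: "s * s = 1"
  shows "A * prj A s = s \<cdot>\<^sub>m prj A s"
proof -
  have "A * prj A s = (1/2) \<cdot>\<^sub>m (A * 1\<^sub>m (2^n) + A * (s \<cdot>\<^sub>m A))"
    unfolding prj_def using A by (simp add: sq_smult_r sq_distl)
  also have "\<dots> = (1/2) \<cdot>\<^sub>m (A + s \<cdot>\<^sub>m 1\<^sub>m (2^n))"
    using A by (simp add: sq_smult_r AA right_mult_one_mat[OF A])
  also have "\<dots> = s \<cdot>\<^sub>m prj A s"
  proof (rule eq_matI)
    fix i k assume "i < dim_row (s \<cdot>\<^sub>m prj A s)" "k < dim_col (s \<cdot>\<^sub>m prj A s)"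
    then have i: "i < 2^n" and k: "k < 2^n" using A by (simp_all add: prj_def)
    have "s * (s * A $$ (i, k)) = A $$ (i, k)" using s by (simp flip: mult.assoc)
    then show "((1/2) \<cdot>\<^sub>m (A + s \<cdot>\<^sub>m 1\<^sub>m (2^n))) $$ (i, k) = (s \<cdot>\<^sub>m prj A s) $$ (i, k)"
      using i k A unfolding prj_def by (auto simp: algebra_simps)
  qed (use A in \<open>simp_all add: prj_def\<close>)
  finally show ?thesis .
qed

lemma prj_sum: "A \<in> carrier_mat (2^n) (2^n) \<Longrightarrow> prj A e + prj A (-e) = 1\<^sub>m (2^n)"
  by (rule eq_matI) (auto simp: prj_def algebra_simps)

lemma proj_prj: "proj n S s = prj (herm_pauli_mat n S) s"
  by (simp add: proj_def prj_def)

lemma run_Meas_ev: "run n w j (Meas l S # rest) \<psi> = run n w (Suc j) rest (proj n S (ev (j \<in> w)) *\<^sub>v \<psi>)"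
  unfolding run_Meas ev_def ..

lemma split_vec:
  assumes A: "A \<in> carrier_mat (2^n) (2^n)" and psi: "\<psi> \<in> carrier_vec (2^n)"
  shows "\<psi> = prj A e *\<^sub>v \<psi> + prj A (-e) *\<^sub>v \<psi>"
proof -
  have "prj A e *\<^sub>v \<psi> + prj A (-e) *\<^sub>v \<psi> = (prj A e + prj A (-e)) *\<^sub>v \<psi>"
    using A psi by (simp add: sq_add_mv)
  also have "\<dots> = \<psi>" using prj_sum[OF A] psi by simp
  finally show ?thesis by simp
qed

lemma nz_split:
  assumes A: "A \<in> carrier_mat (2^n) (2^n)" and psi: "\<psi> \<in> carrier_vec (2^n)" "\<psi> \<noteq> 0\<^sub>v (2^n)"
  shows "\<exists>ob. prj A (ev ob) *\<^sub>v \<psi> \<noteq> 0\<^sub>v (2^n)"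
proof (rule ccontr)
  assume "\<not> ?thesis"
  then have "prj A (ev False) *\<^sub>v \<psi> = 0\<^sub>v (2^n)" "prj A (ev True) *\<^sub>v \<psi> = 0\<^sub>v (2^n)"
    by blast+
  then have "prj A 1 *\<^sub>v \<psi> = 0\<^sub>v (2^n)" "prj A (-1) *\<^sub>v \<psi> = 0\<^sub>v (2^n)"
    unfolding ev_def by simp_all
  then have "\<psi> = 0\<^sub>v (2^n)" using split_vec[OF A psi(1), of 1] by simp
  then show False using psi by simp
qed

lemma unitary_mv_nz:
  assumes U: "clifford n U" and psi: "\<psi> \<in> carrier_vec (2^n)" "\<psi> \<noteq> 0\<^sub>v (2^n)"
  shows "U *\<^sub>v \<psi> \<noteq> 0\<^sub>v (2^n)"
proof
  assume h: "U *\<^sub>v \<psi> = 0\<^sub>v (2^n)"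
  have Uu: "unitary_mat (2^n) U" using U by (simp add: clifford_def)
  have "\<psi> = (adj U * U) *\<^sub>v \<psi>" using psi unitary_linv[OF Uu] by simp
  also have "\<dots> = adj U *\<^sub>v (U *\<^sub>v \<psi>)" using U psi by (simp add: sq_mv_assoc)
  also have "\<dots> = 0\<^sub>v (2^n)" unfolding h using U by (simp add: sq_mv_zero)
  finally show False using psi by simp
qed

lemma setj_local:
  "\<And>i. Suc j \<le> i \<Longrightarrow> i < Suc j + k \<Longrightarrow> (i \<in> (if ob then insert j w else w - {j}) \<longleftrightarrow> i \<in> w)"
  by auto

lemma setj_j: "j \<in> (if ob then insert j w else w - {j}) \<longleftrightarrow> ob"
  by auto

lemma par_local:
  assumes "\<And>i. j \<le> i \<Longrightarrow> i < j + nm os \<Longrightarrow> (i \<in> w \<longleftrightarrow> i \<in> w')"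
  shows "par w u j os = par w' u j os"
proof -
  have "w \<inter> u \<inter> {j..<j + nm os} = w' \<inter> u \<inter> {j..<j + nm os}" using assms by auto
  then show ?thesis by (simp add: par_def)
qed

lemma reach:
  assumes "ok_ops n os" "\<psi> \<in> carrier_vec (2^n)" "\<psi> \<noteq> 0\<^sub>v (2^n)"
  shows "\<exists>w. run n w j os \<psi> \<noteq> 0\<^sub>v (2^n)"
  using assms
proof (induction os arbitrary: j \<psi>)
  case Nil then show ?case by simp
next
  case (Cons x rest)
  show ?case
  proof (cases x)
    case (Gate l U)
    then have U: "clifford n U" and ok: "ok_ops n rest" using Cons.prems by auto
    have "U *\<^sub>v \<psi> \<noteq> 0\<^sub>v (2^n)" by (rule unitary_mv_nz[OF U Cons.prems(2,3)])
    then obtain w where "run n w j rest (U *\<^sub>v \<psi>) \<noteq> 0\<^sub>v (2^n)"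
      using Cons.IH[OF ok, of "U *\<^sub>v \<psi>"] Cons.prems U by auto
    then show ?thesis using Gate by auto
  next
    case (Meas l S)
    then have Sp: "is_pauli n (snd S)" and ok: "ok_ops n rest" using Cons.prems by auto
    obtain ob where ob: "proj n S (ev ob) *\<^sub>v \<psi> \<noteq> 0\<^sub>v (2^n)"
      using nz_split[OF hpm_carrier Cons.prems(2,3)] unfolding proj_prj by blast
    obtain w where w: "run n w (Suc j) rest (proj n S (ev ob) *\<^sub>v \<psi>) \<noteq> 0\<^sub>v (2^n)"
      using Cons.IH[OF ok _ ob] Cons.prems by auto
    define w' where "w' = (if ob then insert j w else w - {j})"
    have "run n w' (Suc j) rest (proj n S (ev ob) *\<^sub>v \<psi>) = run n w (Suc j) rest (proj n S (ev ob) *\<^sub>v \<psi>)"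
      unfolding w'_def by (rule run_local) auto
    then have "run n w' j (x # rest) \<psi> \<noteq> 0\<^sub>v (2^n)"
      using w unfolding Meas run_Meas_ev w'_def by (simp add: setj_j)
    then show ?thesis by blast
  qed
qed


lemma anti_eig_zero:
  fixes H A :: "complex mat" and \<phi> :: "complex vec"
  assumes H: "H \<in> carrier_mat (2^n) (2^n)" and A: "A \<in> carrier_mat (2^n) (2^n)"
    and anti: "H * A = (-1) \<cdot>\<^sub>m (A * H)" and phi: "\<phi> \<in> carrier_vec (2^n)"
    and eH: "H *\<^sub>v \<phi> = s \<cdot>\<^sub>v \<phi>" and eA: "A *\<^sub>v \<phi> = e \<cdot>\<^sub>v \<phi>" and s: "s \<noteq> 0" and e: "e \<noteq> 0"
  shows "\<phi> = 0\<^sub>v (2^n)"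
proof -
  have "(H * A) *\<^sub>v \<phi> = H *\<^sub>v (e \<cdot>\<^sub>v \<phi>)"
    using H A phi by (simp add: sq_mv_assoc eA)
  also have "\<dots> = e \<cdot>\<^sub>v (H *\<^sub>v \<phi>)" by (rule sq_mv_smult[OF H phi])
  also have "\<dots> = (e * s) \<cdot>\<^sub>v \<phi>" unfolding eH by (simp add: smult_smult_assoc)
  finally have l: "(H * A) *\<^sub>v \<phi> = (e * s) \<cdot>\<^sub>v \<phi>" .
  have r: "(H * A) *\<^sub>v \<phi> = (- (s * e)) \<cdot>\<^sub>v \<phi>"
    unfolding anti using H A phi by (simp add: sq_smult_mv sq_mv_assoc eH sq_mv_smult eA smult_smult_assoc)
  have "(2 * e * s) \<cdot>\<^sub>v \<phi> = 0\<^sub>v (2^n)"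
  proof (rule eq_vecI)
    fix i assume i: "i < dim_vec (0\<^sub>v (2^n) :: complex vec)"
    have "(e * s) * \<phi> $ i = (- (s * e)) * \<phi> $ i"
      using arg_cong[OF trans[OF l[symmetric] r], of "\<lambda>v. v $ i"] i phi by simp
    then show "((2 * e * s) \<cdot>\<^sub>v \<phi>) $ i = 0\<^sub>v (2^n) $ i" using i phi by (simp add: algebra_simps)
  qed (use phi in simp)
  moreover have "2 * e * s \<noteq> 0" using s e by simp
  ultimately show ?thesis using smult_vec_zeroD[OF phi] by blast
qed

lemma fail:
  assumes "ok_ops n os" "pt n u os j ({}, {}) = None" "\<psi> \<in> carrier_vec (2^n)" "\<psi> \<noteq> 0\<^sub>v (2^n)"
  shows "\<exists>w. run n w j os \<psi> \<noteq> 0\<^sub>v (2^n) \<and> odd (par w u j os) = b"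
  using assms
proof (induction os arbitrary: j \<psi> b)
  case Nil then show ?case by simp
next
  case (Cons x rest)
  show ?case
  proof (cases x)
    case (Gate l U)
    then have U: "clifford n U" and ok: "ok_ops n rest" using Cons.prems by auto
    have pn: "pt n u rest j ({}, {}) = None" using Cons.prems Gate by simp
    have "U *\<^sub>v \<psi> \<noteq> 0\<^sub>v (2^n)" by (rule unitary_mv_nz[OF U Cons.prems(3,4)])
    then obtain w where "run n w j rest (U *\<^sub>v \<psi>) \<noteq> 0\<^sub>v (2^n) \<and> odd (par w u j rest) = b"
      using Cons.IH[OF ok pn, of "U *\<^sub>v \<psi>" b] Cons.prems U by auto
    then show ?thesis using Gate by auto
  next
    case (Meas l S)
    then have Sp: "is_pauli n (snd S)" and ok: "ok_ops n rest" using Cons.prems by auto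
    obtain ob where ob: "proj n S (ev ob) *\<^sub>v \<psi> \<noteq> 0\<^sub>v (2^n)"
      using nz_split[OF hpm_carrier Cons.prems(3,4)] unfolding proj_prj by blast
    define \<phi> where "\<phi> = proj n S (ev ob) *\<^sub>v \<psi>"
    have phi: "\<phi> \<in> carrier_vec (2^n)" "\<phi> \<noteq> 0\<^sub>v (2^n)" unfolding \<phi>_def using ob Cons.prems by auto
    define b' where "b' = (b \<noteq> (ob \<and> j \<in> u))"
    have rest_goal: "\<exists>w. run n w (Suc j) rest \<phi> \<noteq> 0\<^sub>v (2^n) \<and> odd (par w u (Suc j) rest) = b'"
    proof (cases "pt n u rest (Suc j) ({}, {})")
      case None
      then show ?thesis using Cons.IH[OF ok None phi] by blast
    next
      case (Some P')
      then have nc: "\<not> pcomm (snd S) P'" using Cons.prems Meas by (auto split: if_splits)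
      obtain c where IH: "is_pauli n P'" "ha n u rest (Suc j) = c \<cdot>\<^sub>m pauli_mat n P'"
        and AA: "ha n u rest (Suc j) * ha n u rest (Suc j) = 1\<^sub>m (2^n)"
        using ha_pt[OF ok Some] by blast
      let ?A = "ha n u rest (Suc j)" and ?H = "herm_pauli_mat n S"
      have Ac: "?A \<in> carrier_mat (2^n) (2^n)" using ok by simp
      have anti: "?H * ?A = (-1) \<cdot>\<^sub>m (?A * ?H)"
        unfolding hpm_def2 IH(2) by (rule smult_pm_anticommute[OF Sp IH(1) nc])
      have Hphi: "?H *\<^sub>v \<phi> = ev ob \<cdot>\<^sub>v \<phi>"
        unfolding \<phi>_def using Cons.prems proj_eig[OF Sp ev_sq] by (simp flip: sq_mv_assoc add: sq_smult_mv)
      define \<phi>x where "\<phi>x = prj ?A (ev b') *\<^sub>v \<phi>"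
      define \<phi>y where "\<phi>y = prj ?A (ev (\<not> b')) *\<^sub>v \<phi>"
      have evn: "- ev b' = ev (\<not> b')" by (simp add: ev_def)
      have sum: "\<phi> = \<phi>x + \<phi>y" unfolding \<phi>x_def \<phi>y_def evn[symmetric] by (rule split_vec[OF Ac phi(1)])
      have cx: "\<phi>x \<in> carrier_vec (2^n)" and cy: "\<phi>y \<in> carrier_vec (2^n)"
        unfolding \<phi>x_def \<phi>y_def using Ac phi by simp_all
      have ex: "?A *\<^sub>v \<phi>x = ev b' \<cdot>\<^sub>v \<phi>x"
        unfolding \<phi>x_def using Ac phi prj_eig[OF Ac AA ev_sq] by (simp flip: sq_mv_assoc add: sq_smult_mv)
      have ey: "?A *\<^sub>v \<phi>y = ev (\<not> b') \<cdot>\<^sub>v \<phi>y"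
        unfolding \<phi>y_def using Ac phi prj_eig[OF Ac AA ev_sq] by (simp flip: sq_mv_assoc add: sq_smult_mv)
      have nzx: "\<phi>x \<noteq> 0\<^sub>v (2^n)"
      proof
        assume z: "\<phi>x = 0\<^sub>v (2^n)"
        then have "\<phi> = \<phi>y" using sum cy by simp
        then have "?A *\<^sub>v \<phi> = ev (\<not> b') \<cdot>\<^sub>v \<phi>" using ey by simp
        then have "\<phi> = 0\<^sub>v (2^n)" using anti_eig_zero[OF hpm_carrier Ac anti phi(1) Hphi] by (simp add: ev_def)
        then show False using phi by simp
      qed
      obtain w where w: "run n w (Suc j) rest \<phi>x \<noteq> 0\<^sub>v (2^n)" using reach[OF ok cx nzx] by blast
      have pw: "odd (par w u (Suc j) rest) = b'"
      proof (rule ccontr)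
        assume "odd (par w u (Suc j) rest) \<noteq> b'"
        then have "run n w (Suc j) rest \<phi>x = 0\<^sub>v (2^n)" by (rule eigen_parity[OF ok Some cx ex])
        then show False using w by simp
      qed
      have "run n w (Suc j) rest \<phi>y = 0\<^sub>v (2^n)"
        by (rule eigen_parity[OF ok Some cy ey]) (use pw in simp)
      then have "run n w (Suc j) rest \<phi> = run n w (Suc j) rest \<phi>x"
        unfolding sum using run_add[OF ok cx cy] run_carrier[OF ok cx] by simp
      then have "run n w (Suc j) rest \<phi> \<noteq> 0\<^sub>v (2^n)" using w by simp
      then show ?thesis using pw by blast
    qed
    then obtain w where w: "run n w (Suc j) rest \<phi> \<noteq> 0\<^sub>v (2^n)" "odd (par w u (Suc j) rest) = b'" by blast
    define w' where "w' = (if ob then insert j w else w - {j})"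
    have "run n w' (Suc j) rest \<phi> = run n w (Suc j) rest \<phi>"
      unfolding w'_def by (rule run_local) auto
    then have r: "run n w' j (x # rest) \<psi> \<noteq> 0\<^sub>v (2^n)"
      using w unfolding Meas run_Meas_ev w'_def \<phi>_def by (simp add: setj_j)
    have "par w' u (Suc j) rest = par w u (Suc j) rest"
      unfolding w'_def by (rule par_local) auto
    then have "odd (par w' u j (x # rest)) = b"
      using w(2) unfolding Meas par_Meas b'_def w'_def by (cases ob) auto
    then show ?thesis using r by blast
  qed
qed


lemma mv_unit: fixes M :: "complex mat" assumes M: "M \<in> carrier_mat (2^n) (2^n)" and i: "i < 2^n" and k: "k < 2^n"
  shows "(M *\<^sub>v unit_vec (2^n) k) $ i = M $$ (i, k)"
proof -
  have "(M *\<^sub>v unit_vec (2^n) k) $ i = row M i \<bullet> unit_vec (2^n) k" using M i by simp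
  also have "\<dots> = row M i $ k" by (rule scalar_prod_right_unit[OF k])
  also have "\<dots> = M $$ (i, k)" using M i k by simp
  finally show ?thesis .
qed

lemma exists_eig_neg:
  assumes A: "A \<in> carrier_mat (2^n) (2^n)" and AA: "A * A = 1\<^sub>m (2^n)" and ne: "A \<noteq> 1\<^sub>m (2^n)"
  shows "\<exists>\<psi>. \<psi> \<in> carrier_vec (2^n) \<and> \<psi> \<noteq> 0\<^sub>v (2^n) \<and> A *\<^sub>v \<psi> = ev True \<cdot>\<^sub>v \<psi>"
proof (rule ccontr)
  assume no: "\<not> ?thesis"
  have z: "prj A (-1) *\<^sub>v unit_vec (2^n) k = 0\<^sub>v (2^n)" if k: "k < 2^n" for k
  proof (rule ccontr)
    assume nz: "prj A (-1) *\<^sub>v unit_vec (2^n) k \<noteq> 0\<^sub>v (2^n)"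
    have "A *\<^sub>v (prj A (-1) *\<^sub>v unit_vec (2^n) k) = ev True \<cdot>\<^sub>v (prj A (-1) *\<^sub>v unit_vec (2^n) k)"
      using prj_eig[OF A AA, of "-1"] A by (simp flip: sq_mv_assoc add: sq_smult_mv ev_def)
    moreover have "prj A (-1) *\<^sub>v unit_vec (2^n) k \<in> carrier_vec (2^n)" using A by simp
    ultimately show False using no nz by blast
  qed
  have "A = 1\<^sub>m (2^n)"
  proof (rule eq_matI)
    fix i k assume ik: "i < dim_row (1\<^sub>m (2^n) :: complex mat)" "k < dim_col (1\<^sub>m (2^n) :: complex mat)"
    then have i: "i < 2^n" and k: "k < 2^n" by simp_all
    have "(prj A (-1) *\<^sub>v unit_vec (2^n) k) $ i = prj A (-1) $$ (i, k)"
      by (rule mv_unit) (use A i k in simp_all)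
    then have "prj A (-1) $$ (i, k) = 0" using z[OF k] i by simp
    then show "A $$ (i, k) = 1\<^sub>m (2^n) $$ (i, k)" using i k A by (auto simp: prj_def split: if_splits)
  qed (use A in auto)
  then show False using ne by simp
qed

lemma detector_pt:
  assumes ok: "ok_ops n os"
    and dual: "\<And>w \<psi>. w \<subseteq> {..<nm os} \<Longrightarrow> \<psi> \<in> carrier_vec (2^n) \<Longrightarrow> \<psi> \<noteq> 0\<^sub>v (2^n) \<Longrightarrow>
                 run n w 0 os \<psi> \<noteq> 0\<^sub>v (2^n) \<Longrightarrow> even (card (u \<inter> w))"
  shows "pt n u os 0 ({}, {}) = Some ({}, {})"
proof -
  have oddbad: False if w: "run n w 0 os \<psi> \<noteq> 0\<^sub>v (2^n)" "odd (par w u 0 os)" and psi: "\<psi> \<in> carrier_vec (2^n)" for w \<psi>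
  proof -
    define w0 where "w0 = w \<inter> {..<nm os}"
    have "run n w0 0 os \<psi> = run n w 0 os \<psi>" unfolding w0_def by (rule run_local) auto
    then have r: "run n w0 0 os \<psi> \<noteq> 0\<^sub>v (2^n)" using w by simp
    have "\<psi> \<noteq> 0\<^sub>v (2^n)" using w run_zero[OF ok] by auto
    then have "even (card (u \<inter> w0))" using dual[of w0 \<psi>] r psi unfolding w0_def by auto
    moreover have "u \<inter> w0 = w \<inter> u \<inter> {0..<0 + nm os}" unfolding w0_def by auto
    ultimately show False using w(2) unfolding par_def by simp
  qed
  have e0: "unit_vec (2^n) 0 \<in> carrier_vec (2^n)" "unit_vec (2^n) 0 \<noteq> (0\<^sub>v (2^n) :: complex vec)" by simp_all
  show ?thesis
  proof (cases "pt n u os 0 ({}, {})")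
    case None
    obtain w where "run n w 0 os (unit_vec (2^n) 0) \<noteq> 0\<^sub>v (2^n) \<and> odd (par w u 0 os) = True"
      using fail[OF ok None e0] by blast
    then show ?thesis using oddbad[OF _ _ e0(1)] by blast
  next
    case (Some P)
    obtain c where hp: "is_pauli n P" "ha n u os 0 = c \<cdot>\<^sub>m pauli_mat n P" and AA: "ha n u os 0 * ha n u os 0 = 1\<^sub>m (2^n)"
      using ha_pt[OF ok Some] by blast
    have h1: "ha n u os 0 = 1\<^sub>m (2^n)"
    proof (rule ccontr)
      assume "ha n u os 0 \<noteq> 1\<^sub>m (2^n)"
      then obtain \<psi> where psi: "\<psi> \<in> carrier_vec (2^n)" "\<psi> \<noteq> 0\<^sub>v (2^n)" "ha n u os 0 *\<^sub>v \<psi> = ev True \<cdot>\<^sub>v \<psi>"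
        using exists_eig_neg[OF ha_carrier[OF ok] AA] by blast
      obtain w where w: "run n w 0 os \<psi> \<noteq> 0\<^sub>v (2^n)" using reach[OF ok psi(1,2)] by blast
      have "odd (par w u 0 os)"
      proof (rule ccontr)
        assume "\<not> odd (par w u 0 os)"
        then have "run n w 0 os \<psi> = 0\<^sub>v (2^n)" by (intro eigen_parity[OF ok Some psi(1) psi(3)]) simp
        then show False using w by simp
      qed
      then show False using oddbad[OF w _ psi(1)] by blast
    qed
    have "1 \<cdot>\<^sub>m pauli_mat n ({}, {}) = c \<cdot>\<^sub>m pauli_mat n P" using h1 hp(2) by (simp add: pm_zero)
    then have "({}, {}) = P" by (rule conjunct1[OF pm_unique[OF is_pauli_zero hp(1)]]) simp
    then show ?thesis using Some by simp
  qed
qed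

lemma pt_detector:
  assumes ok: "ok_ops n os" and pt: "pt n v os 0 ({}, {}) = Some ({}, {})"
    and z: "\<psi>0 \<in> carrier_vec (2^n)" "run n {} 0 os \<psi>0 \<noteq> 0\<^sub>v (2^n)"
    and w: "\<psi> \<in> carrier_vec (2^n)" "run n w 0 os \<psi> \<noteq> 0\<^sub>v (2^n)"
  shows "even (par w v 0 os)"
proof -
  obtain c where hp: "ha n v os 0 = c \<cdot>\<^sub>m pauli_mat n ({}, {})" and AA: "ha n v os 0 * ha n v os 0 = 1\<^sub>m (2^n)"
    using ha_pt[OF ok pt] by blast
  have h: "ha n v os 0 = c \<cdot>\<^sub>m 1\<^sub>m (2^n)" using hp by (simp add: pm_zero)
  have "(c * c) \<cdot>\<^sub>m 1\<^sub>m (2^n) = 1\<^sub>m (2^n)" using AA unfolding h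
    by (simp add: sq_smult_l sq_smult_r)
  then have "((c * c) \<cdot>\<^sub>m 1\<^sub>m (2^n)) $$ (0, 0) = (1\<^sub>m (2^n) :: complex mat) $$ (0, 0)" by simp
  then have cc: "c * c = 1" by simp
  then obtain bc where bc: "c = ev bc" unfolding ev_def
    by (metis (full_types) square_eq_1_iff power2_eq_square)
  have eig: "ha n v os 0 *\<^sub>v \<phi> = ev bc \<cdot>\<^sub>v \<phi>" if "\<phi> \<in> carrier_vec (2^n)" for \<phi>
    unfolding h bc using that by (simp add: sq_smult_mv)
  have "\<not> bc"
  proof
    assume "bc"
    then have "run n {} 0 os \<psi>0 = 0\<^sub>v (2^n)" by (intro eigen_parity[OF ok pt z(1) eig[OF z(1)]]) (simp add: par_def)
    then show False using z by simp
  qed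
  show ?thesis
  proof (rule ccontr)
    assume "\<not> even (par w v 0 os)"
    then have "run n w 0 os \<psi> = 0\<^sub>v (2^n)" using \<open>\<not> bc\<close> by (intro eigen_parity[OF ok pt w(1) eig[OF w(1)]]) simp
    then show False using w by simp
  qed
qed

end

lemma even_card_symdiff:
  assumes "finite A" "finite B"
  shows "even (card (A - B \<union> (B - A))) \<longleftrightarrow> (even (card A) \<longleftrightarrow> even (card B))"
proof -
  have d: "(A - B) \<inter> (B - A) = {}" by blast
  have 1: "card (A - B \<union> (B - A)) = card (A - B) + card (B - A)"
    using assms d by (simp add: card_Un_disjoint)
  have 2: "card A = card (A - B) + card (A \<inter> B)"
    using card_Int_Diff[OF assms(1), of B] by linarith
  have 3: "card B = card (B - A) + card (A \<inter> B)"
    using card_Int_Diff[OF assms(2), of A] by (simp add: Int_commute)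
  show ?thesis unfolding 1 using 2 3 by presburger
qed

lemma pcomm_pmul:
  assumes "is_pauli n S" "is_pauli n A" "is_pauli n B"
  shows "pcomm S (pmul A B) \<longleftrightarrow> (pcomm S A \<longleftrightarrow> pcomm S B)"
proof -
  have fin: "finite (fst S)" "finite (snd S)" "finite (fst A)" "finite (snd A)" "finite (fst B)" "finite (snd B)"
    using finite_is_pauli assms by blast+
  have e1: "snd S \<inter> fst (pmul A B) = (snd S \<inter> fst A) - (snd S \<inter> fst B) \<union> ((snd S \<inter> fst B) - (snd S \<inter> fst A))"
    by (auto simp: pmul_def)
  have e2: "snd (pmul A B) \<inter> fst S = (snd A \<inter> fst S) - (snd B \<inter> fst S) \<union> ((snd B \<inter> fst S) - (snd A \<inter> fst S))"
    by (auto simp: pmul_def)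
  have p1: "even (card (snd S \<inter> fst (pmul A B))) \<longleftrightarrow> (even (card (snd S \<inter> fst A)) \<longleftrightarrow> even (card (snd S \<inter> fst B)))"
    unfolding e1 by (rule even_card_symdiff) (use fin in auto)
  have p2: "even (card (snd (pmul A B) \<inter> fst S)) \<longleftrightarrow> (even (card (snd A \<inter> fst S)) \<longleftrightarrow> even (card (snd B \<inter> fst S)))"
    unfolding e2 by (rule even_card_symdiff) (use fin in auto)
  show ?thesis unfolding pcomm_def using p1 p2 by auto
qed

lemma pcomm_disjoint: "psupp P \<inter> psupp Q = {} \<Longrightarrow> pcomm P Q"
proof -
  assume d: "psupp P \<inter> psupp Q = {}"
  then have "snd P \<inter> fst Q = {}" "snd Q \<inter> fst P = {}" by (auto simp: psupp_def)
  then show "pcomm P Q" by (simp add: pcomm_def)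
qed

lemma pcomm_zero[simp]: "pcomm P ({}, {})" "pcomm ({}, {}) P"
  by (simp_all add: pcomm_def)

lemma psupp_pmul: "psupp (pmul A B) \<subseteq> psupp A \<union> psupp B"
  by (auto simp: psupp_def pmul_def)

lemma psupp_zero[simp]: "psupp ({}, {}) = {}"
  by (simp add: psupp_def)

definition lu :: "nat \<Rightarrow> nat \<Rightarrow> operation list \<Rightarrow> complex mat" where
  "lu n l os = foldr (\<lambda>w M. case w of Gate l' U \<Rightarrow> (if l' = l then M * U else M) | Meas _ _ \<Rightarrow> M) os (1\<^sub>m (2 ^ n))"

lemma lu_simps[simp]: "lu n l [] = 1\<^sub>m (2^n)" "lu n l (Gate l' U # os) = (if l' = l then lu n l os * U else lu n l os)"
  "lu n l (Meas l' S # os) = lu n l os"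
  by (simp_all add: lu_def)

lemma level_unitary_lu: "level_unitary C l = lu (nqubits C) l (ops C)"
  by (simp add: level_unitary_def lu_def)

lemma lu_clifford: "ok_ops n os \<Longrightarrow> clifford n (lu n l os)"
proof (induction os)
  case Nil then show ?case by (simp add: clifford_one)
next
  case (Cons x os) then show ?case by (cases x) (auto intro: clifford_mult)
qed

lemma lu_filter: "lu n l os = lu n l (filter (\<lambda>w. op_level w = l) os)"
proof (induction os)
  case Nil then show ?case by simp
next
  case (Cons x os) then show ?case by (cases x) auto
qed

fun mprod :: "nat set \<Rightarrow> operation list \<Rightarrow> nat \<Rightarrow> pauli" where
  "mprod u [] j = ({}, {})"
| "mprod u (Gate l U # r) j = mprod u r j"
| "mprod u (Meas l S # r) j = pmul (if j \<in> u then snd S else ({}, {})) (mprod u r (Suc j))"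

definition mchk :: "operation list \<Rightarrow> pauli \<Rightarrow> bool" where
  "mchk os Y \<longleftrightarrow> (\<forall>w\<in>set os. is_meas w \<longrightarrow> pcomm (snd (meas_pauli w)) Y)"

definition disj :: "nat \<Rightarrow> operation list \<Rightarrow> bool" where
  "disj n os \<longleftrightarrow> sorted_wrt (\<lambda>a b. op_supp n a \<inter> op_supp n b = {}) os"

lemma mprod_pauli: "ok_ops n os \<Longrightarrow> is_pauli n (mprod u os j)"
proof (induction os arbitrary: j)
  case Nil then show ?case by simp
next
  case (Cons x os) then show ?case by (cases x) auto
qed

lemma mprod_supp: "psupp (mprod u os j) \<subseteq> (\<Union>w\<in>{w\<in>set os. is_meas w}. psupp (snd (meas_pauli w)))"
proof (induction os arbitrary: j)
  case Nil then show ?case by simp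
next
  case (Cons x os)
  then show ?case
  proof (cases x)
    case (Gate l U) then show ?thesis using Cons by auto
  next
    case (Meas l S)
    have "psupp (mprod u (x # os) j) \<subseteq> psupp (if j \<in> u then snd S else ({}, {})) \<union> psupp (mprod u os (Suc j))"
      using Meas psupp_pmul by simp
    show ?thesis
    proof
      fix q assume q: "q \<in> psupp (mprod u (x # os) j)"
      show "q \<in> (\<Union>w\<in>{w\<in>set (x # os). is_meas w}. psupp (snd (meas_pauli w)))"
      proof (cases "q \<in> psupp (mprod u os (Suc j))")
        case True then show ?thesis using Cons[of "Suc j"] by auto
      next
        case False
        then have "q \<in> psupp (snd S)" using q \<open>psupp (mprod u (x # os) j) \<subseteq> _\<close> by (auto split: if_splits)
        then show ?thesis using Meas by force
      qed
    qed
  qed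
qed

lemma pt_append: "pt n u (xs @ ys) j P0 = Option.bind (pt n u ys (j + nm xs) P0) (\<lambda>P. pt n u xs j P)"
proof (induction xs arbitrary: j)
  case Nil then show ?case by (cases "pt n u ys j P0") simp_all
next
  case (Cons x xs)
  show ?case
  proof (cases x)
    case (Gate l U) then show ?thesis using Cons by (cases "pt n u ys (j + nm xs) P0") simp_all
  next
    case (Meas l S) then show ?thesis using Cons[of "Suc j"] by (cases "pt n u ys (Suc j + nm xs) P0") simp_all
  qed
qed

lemma conj_one: assumes "is_pauli n P" shows "conj_mod_phase n (1\<^sub>m (2^n)) P = P"
proof (rule conj_eqI[OF clifford_one])
  show "is_pauli n P" by fact
  show "adj (1\<^sub>m (2^n)) * pauli_mat n P * 1\<^sub>m (2^n) = 1 \<cdot>\<^sub>m pauli_mat n P" by simp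
qed

lemma ok_ops_Cons: "ok_ops n (x # r) \<longleftrightarrow> op_ok n x \<and> ok_ops n r"
  by (simp add: ok_ops_def)

lemma pt_block:
  assumes "ok_ops n blk" "\<forall>w\<in>set blk. op_level w = l" "disj n blk" "is_pauli n X"
  shows "pt n u blk j X = (if mchk blk (conj_mod_phase n (lu n l blk) X)
           then Some (pmul (mprod u blk j) (conj_mod_phase n (lu n l blk) X)) else None)"
  using assms
proof (induction blk arbitrary: j)
  case Nil then show ?case by (simp add: mchk_def conj_one)
next
  case (Cons x r)
  have ok: "ok_ops n r" and lv: "\<forall>w\<in>set r. op_level w = l" and dj: "disj n r"
    and djx: "\<forall>w\<in>set r. op_supp n x \<inter> op_supp n w = {}"
    using Cons.prems by (auto simp: disj_def ok_ops_Cons)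
  have luc: "clifford n (lu n l r)" using lu_clifford[OF ok] .
  define Y where "Y = conj_mod_phase n (lu n l r) X"
  have Yp: "is_pauli n Y" unfolding Y_def using luc Cons.prems(4) by simp
  have IH: "pt n u r j' X = (if mchk r Y then Some (pmul (mprod u r j') Y) else None)" for j'
    unfolding Y_def by (rule Cons.IH[OF ok lv dj Cons.prems(4)])
  show ?case
  proof (cases x)
    case (Gate l' U)
    then have U: "clifford n U" and l': "l' = l" using Cons.prems by auto
    have lux: "lu n l (x # r) = lu n l r * U" using Gate l' by simp
    have cx: "conj_mod_phase n (lu n l (x # r)) X = conj_mod_phase n U Y"
      unfolding lux Y_def by (rule conj_mult[OF luc U Cons.prems(4)])
    have msd: "psupp (snd (meas_pauli w)) \<inter> mat_supp n U = {}" if "w \<in> set r" "is_meas w" for w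
    proof (cases w)
      case (Meas l2 S2)
      then have "mat_supp n U \<inter> psupp (snd S2) = {}" using djx that Gate by force
      then show ?thesis using Meas by auto
    qed (use that in simp)
    have mchk_eq: "mchk r (conj_mod_phase n U Y) \<longleftrightarrow> mchk r Y"
    proof -
      have "pcomm (snd (meas_pauli w)) (conj_mod_phase n U Y) \<longleftrightarrow> pcomm (snd (meas_pauli w)) Y"
        if w: "w \<in> set r" "is_meas w" for w
      proof -
        have wp: "is_pauli n (snd (meas_pauli w))" using ok w by (cases w) (auto simp: ok_ops_def)
        have "conj_mod_phase n U (snd (meas_pauli w)) = snd (meas_pauli w)"
          by (rule conj_disjoint[OF U wp msd[OF w]])
        then show ?thesis using conj_pcomm[OF U wp Yp] by simp
      qed
      then show ?thesis unfolding mchk_def by auto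
    qed
    have mp: "conj_mod_phase n U (mprod u r j) = mprod u r j"
    proof (rule conj_disjoint[OF U mprod_pauli[OF ok]])
      show "psupp (mprod u r j) \<inter> mat_supp n U = {}" using mprod_supp[of u r j] msd by blast
    qed
    have "pt n u (x # r) j X = map_option (conj_mod_phase n U) (pt n u r j X)" using Gate by simp
    also have "\<dots> = (if mchk r Y then Some (pmul (mprod u r j) (conj_mod_phase n U Y)) else None)"
      unfolding IH using conj_pmul[OF U mprod_pauli[OF ok] Yp] mp by simp
    also have "\<dots> = (if mchk (x # r) (conj_mod_phase n (lu n l (x # r)) X)
           then Some (pmul (mprod u (x # r) j) (conj_mod_phase n (lu n l (x # r)) X)) else None)"
      unfolding cx using mchk_eq Gate by (simp add: mchk_def)
    finally show ?thesis .
  next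
    case (Meas l' S)
    then have Sp: "is_pauli n (snd S)" using Cons.prems by auto
    have lux: "lu n l (x # r) = lu n l r" using Meas by simp
    have sd: "pcomm (snd S) (mprod u r (Suc j))"
    proof (rule pcomm_disjoint)
      have "psupp (snd S) \<inter> psupp (snd (meas_pauli w)) = {}" if "w \<in> set r" "is_meas w" for w
      proof (cases w)
        case (Meas l2 S2)
        then have "psupp (snd S) \<inter> psupp (snd S2) = {}" using djx that \<open>x = Meas l' S\<close> by force
        then show ?thesis using Meas by auto
      qed (use that in simp)
      then show "psupp (snd S) \<inter> psupp (mprod u r (Suc j)) = {}" using mprod_supp[of u r "Suc j"] by blast
    qed
    have pc: "pcomm (snd S) (pmul (mprod u r (Suc j)) Y) \<longleftrightarrow> pcomm (snd S) Y"
      using pcomm_pmul[OF Sp mprod_pauli[OF ok] Yp] sd by simp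
    show ?thesis
      unfolding lux Y_def[symmetric] using Meas IH[of "Suc j"] pc
      by (auto simp: mchk_def pmul_assoc)
  qed
qed

fun mprodL :: "nat set \<Rightarrow> operation list \<Rightarrow> nat \<Rightarrow> nat \<Rightarrow> pauli" where
  "mprodL u [] j k = ({}, {})"
| "mprodL u (Gate l U # r) j k = mprodL u r j k"
| "mprodL u (Meas l S # r) j k = pmul (if j \<in> u \<and> l - 1 = k then snd S else ({}, {})) (mprodL u r (Suc j) k)"

lemma meas_pauli_Meas[simp]: "meas_pauli (Meas l S) = S" by simp

lemma mprodL_index:
  "foldr pmul (map (\<lambda>i. if i \<in> u \<and> op_level (filter is_meas os ! (i - j)) - 1 = k
        then snd (meas_pauli (filter is_meas os ! (i - j))) else ({}, {})) [j..<j + nm os]) ({}, {})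
   = mprodL u os j k"
proof (induction os arbitrary: j)
  case Nil then show ?case by simp
next
  case (Cons x os)
  show ?case
  proof (cases x)
    case (Gate l U) then show ?thesis using Cons unfolding Gate by (simp add: nm_def cong: if_cong)
  next
    case (Meas l S)
    define f where "f = (\<lambda>i. if i \<in> u \<and> op_level (filter is_meas (x # os) ! (i - j)) - 1 = k
        then snd (meas_pauli (filter is_meas (x # os) ! (i - j))) else ({}, {}))"
    define g where "g = (\<lambda>i. if i \<in> u \<and> op_level (filter is_meas os ! (i - Suc j)) - 1 = k
        then snd (meas_pauli (filter is_meas os ! (i - Suc j))) else ({}, {}))"
    have ups: "[j..<j + nm (x # os)] = j # [Suc j..<Suc j + nm os]" using Meas by (simp add: upt_rec)
    have m: "map f [Suc j..<Suc j + nm os] = map g [Suc j..<Suc j + nm os]"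
    proof (rule map_cong[OF refl])
      fix i assume "i \<in> set [Suc j..<Suc j + nm os]"
      then have "i - j = Suc (i - Suc j)" by auto
      then show "f i = g i" unfolding f_def g_def using Meas by simp
    qed
    have fj: "f j = (if j \<in> u \<and> l - 1 = k then snd S else ({}, {}))" unfolding f_def using Meas by simp
    have "foldr pmul (map f [j..<j + nm (x # os)]) ({}, {}) = pmul (f j) (foldr pmul (map g [Suc j..<Suc j + nm os]) ({}, {}))"
      unfolding ups m[symmetric] by simp
    also have "\<dots> = mprodL u (x # os) j k" unfolding fj g_def Cons[of "Suc j"] using Meas by simp
    finally show ?thesis unfolding f_def .
  qed
qed

lemma F_of_mprodL: "F_of C u k = mprodL u (ops C) 0 k"
  using mprodL_index[of u "ops C" 0 k]
  by (simp add: F_of_def meas_level_def meas_S_def meas_ops_def nmeas_def nm_def cong: if_cong)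

lemma mprodL_append: "mprodL u (xs @ ys) j k = pmul (mprodL u xs j k) (mprodL u ys (j + nm xs) k)"
proof (induction xs arbitrary: j)
  case Nil then show ?case by simp
next
  case (Cons x xs) then show ?case by (cases x) (simp_all add: pmul_assoc)
qed

lemma mprodL_zero: "\<forall>w\<in>set xs. is_meas w \<longrightarrow> op_level w - 1 \<noteq> k \<Longrightarrow> mprodL u xs j k = ({}, {})"
proof (induction xs arbitrary: j)
  case Nil then show ?case by simp
next
  case (Cons x xs) then show ?case by (cases x) simp_all
qed

lemma mprodL_mprod: "\<forall>w\<in>set xs. op_level w = Suc k \<Longrightarrow> mprodL u xs j k = mprod u xs j"
proof (induction xs arbitrary: j)
  case Nil then show ?case by simp
next
  case (Cons x xs) then show ?case by (cases x) simp_all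
qed

lemma mprodL_pauli: "ok_ops n xs \<Longrightarrow> is_pauli n (mprodL u xs j k)"
proof (induction xs arbitrary: j)
  case Nil then show ?case by simp
next
  case (Cons x xs) then show ?case by (cases x) auto
qed

lemma sorted_split_le:
  "sorted (map f xs) \<Longrightarrow> filter (\<lambda>x. f x \<le> k) xs @ filter (\<lambda>x. k < (f x :: nat)) xs = xs"
proof (induction xs)
  case Nil then show ?case by simp
next
  case (Cons x xs)
  show ?case
  proof (cases "f x \<le> k")
    case True then show ?thesis using Cons by auto
  next
    case False
    then have "\<forall>y\<in>set xs. k < f y" using Cons.prems by auto
    then have "filter (\<lambda>x. f x \<le> k) xs = []" "filter (\<lambda>x. k < f x) xs = xs" by (auto simp: filter_empty_conv filter_id_conv)
    then show ?thesis using False by simp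
  qed
qed

lemma sorted_split_suc:
  "sorted (map f xs) \<Longrightarrow> filter (\<lambda>x. k < (f x :: nat)) xs = filter (\<lambda>x. f x = Suc k) xs @ filter (\<lambda>x. Suc k < f x) xs"
proof (induction xs)
  case Nil then show ?case by simp
next
  case (Cons x xs)
  show ?case
  proof (cases "Suc k < f x")
    case True
    then have "\<forall>y\<in>set xs. Suc k < f y" using Cons.prems by fastforce
    then have "filter (\<lambda>x. f x = Suc k) xs = []" "filter (\<lambda>x. Suc k < f x) xs = xs" "filter (\<lambda>x. k < f x) xs = xs"
      by (auto simp: filter_empty_conv filter_id_conv)
    then show ?thesis using True by simp
  next
    case False then show ?thesis using Cons by auto
  qed
qed

lemma sorted_split_le_suc:
  "sorted (map f xs) \<Longrightarrow> filter (\<lambda>x. (f x :: nat) \<le> Suc k) xs = filter (\<lambda>x. f x \<le> k) xs @ filter (\<lambda>x. f x = Suc k) xs"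
proof (induction xs)
  case Nil then show ?case by simp
next
  case (Cons x xs)
  show ?case
  proof (cases "f x \<le> k")
    case True then show ?thesis using Cons by auto
  next
    case False
    then have "\<forall>y\<in>set xs. k < f y" using Cons.prems by fastforce
    then have "filter (\<lambda>x. f x \<le> k) xs = []" by (auto simp: filter_empty_conv)
    moreover have "filter (\<lambda>x. f x \<le> Suc k) xs = filter (\<lambda>x. f x = Suc k) xs" by (rule filter_cong) (use \<open>\<forall>y\<in>set xs. k < f y\<close> in auto)
    ultimately show ?thesis using False Cons by auto
  qed
qed

lemma le_foldr_max: "x \<in> set xs \<Longrightarrow> (x::nat) \<le> foldr max xs 0"
  by (induction xs) auto

lemma level_le_depth: "w \<in> set (ops C) \<Longrightarrow> op_level w \<le> depth C"
  unfolding depth_def by (rule le_foldr_max) simp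

lemma bc_top: "back_cumulant C F (depth C) = F (depth C)"
  by (simp add: back_cumulant_def)

lemma bc_rec: "k < depth C \<Longrightarrow> back_cumulant C F k =
   pmul (F k) (conj_mod_phase (nqubits C) (level_unitary C (Suc k)) (back_cumulant C F (Suc k)))"
proof -
  assume k: "k < depth C"
  have e: "depth C - k = Suc (depth C - Suc k)" using k by simp
  have "bc C F (depth C - k) = pmul (F (depth C - Suc (depth C - Suc k)))
      (conj_mod_phase (nqubits C) (level_unitary C (depth C - (depth C - Suc k))) (bc C F (depth C - Suc k)))"
    unfolding e by simp
  moreover have "depth C - Suc (depth C - Suc k) = k" "depth C - (depth C - Suc k) = Suc k" using k by auto
  ultimately show ?thesis using k by (simp add: back_cumulant_def)
qed

lemma bc_out: "depth C < k \<Longrightarrow> back_cumulant C F k = ({}, {})"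
  by (simp add: back_cumulant_def)


lemma cc_ok: "clifford_circuit C \<Longrightarrow> ok_ops (nqubits C) (ops C)"
  by (simp add: clifford_circuit_def ok_ops_def)

lemma cc_level_ge1: "clifford_circuit C \<Longrightarrow> w \<in> set (ops C) \<Longrightarrow> 1 \<le> op_level w"
  by (simp add: clifford_circuit_def)

lemma cc_sorted: "clifford_circuit C \<Longrightarrow> sorted (map op_level (ops C))"
  by (simp add: clifford_circuit_def)

lemma cc_disj_blk:
  assumes C: "clifford_circuit C"
  shows "disj (nqubits C) (filter (\<lambda>w. op_level w = l) (ops C))"
proof -
  let ?R = "\<lambda>a b. op_level a = l \<longrightarrow> op_level b = l \<longrightarrow> op_supp (nqubits C) a \<inter> op_supp (nqubits C) b = {}"
  have "sorted_wrt ?R (ops C)"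
    unfolding sorted_wrt_iff_nth_less
  proof (intro allI impI)
    fix i j assume ij: "i < j" "j < length (ops C)" "op_level (ops C ! i) = l" "op_level (ops C ! j) = l"
    then show "op_supp (nqubits C) (ops C ! i) \<inter> op_supp (nqubits C) (ops C ! j) = {}"
      using C unfolding clifford_circuit_def by auto
  qed
  then have "sorted_wrt ?R (filter (\<lambda>w. op_level w = l) (ops C))" by (rule sorted_wrt_filter)
  then show ?thesis unfolding disj_def
    by (rule sorted_wrt_mono_rel[rotated]) auto
qed

abbreviation slot :: "circuit \<Rightarrow> nat set \<Rightarrow> nat \<Rightarrow> pauli" where
  "slot C u k \<equiv> back_cumulant C (F_of C u) k"

definition chkL :: "circuit \<Rightarrow> nat set \<Rightarrow> nat \<Rightarrow> bool" where
  "chkL C u l \<longleftrightarrow> (\<forall>w\<in>set (ops C). is_meas w \<and> op_level w = l \<longrightarrow>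
      pcomm (snd (meas_pauli w)) (conj_mod_phase (nqubits C) (level_unitary C l) (slot C u l)))"

lemma lu_level_clifford: "clifford_circuit C \<Longrightarrow> clifford (nqubits C) (level_unitary C l)"
  unfolding level_unitary_lu by (rule lu_clifford[OF cc_ok])

lemma F_of_pauli: "clifford_circuit C \<Longrightarrow> is_pauli (nqubits C) (F_of C u k)"
  unfolding F_of_mprodL by (rule mprodL_pauli[OF cc_ok])

lemma bc_pauli:
  assumes C: "clifford_circuit C" and F: "\<And>k. is_pauli (nqubits C) (F k)"
  shows "is_pauli (nqubits C) (bc C F i)"
proof (induction i)
  case 0 then show ?case using F by simp
next
  case (Suc i) then show ?case using F lu_level_clifford[OF C] by simp
qed

lemma slot_pauli: "clifford_circuit C \<Longrightarrow> is_pauli (nqubits C) (slot C u k)"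
  unfolding back_cumulant_def using bc_pauli[of C "F_of C u"] F_of_pauli by auto

lemma F_of_top: "clifford_circuit C \<Longrightarrow> depth C \<le> k \<Longrightarrow> F_of C u k = ({}, {})"
  unfolding F_of_mprodL
proof (rule mprodL_zero)
  assume C: "clifford_circuit C" and k: "depth C \<le> k"
  have "\<forall>w\<in>set (ops C). op_level w \<le> depth C \<and> 1 \<le> op_level w"
    using level_le_depth[of _ C] cc_level_ge1[OF C] by blast
  then show "\<forall>w\<in>set (ops C). is_meas w \<longrightarrow> op_level w - 1 \<noteq> k" using k by fastforce
qed

lemma F_of_block:
  assumes C: "clifford_circuit C"
  shows "F_of C u k = mprod u (filter (\<lambda>w. op_level w = Suc k) (ops C)) (nm (filter (\<lambda>w. op_level w \<le> k) (ops C)))"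
proof -
  let ?os = "ops C"
  have s: "sorted (map op_level ?os)" by (rule cc_sorted[OF C])
  have e1: "?os = filter (\<lambda>w. op_level w \<le> k) ?os @ filter (\<lambda>w. op_level w = Suc k) ?os @ filter (\<lambda>w. Suc k < op_level w) ?os"
    using sorted_split_le[OF s, of k] sorted_split_suc[OF s, of k] by simp
  have z1: "mprodL u (filter (\<lambda>w. op_level w \<le> k) ?os) 0 k = ({}, {})"
    by (rule mprodL_zero) (use cc_level_ge1[OF C] in fastforce)
  have z2: "mprodL u (filter (\<lambda>w. Suc k < op_level w) ?os) j k = ({}, {})" for j
    by (rule mprodL_zero) auto
  have m: "mprodL u (filter (\<lambda>w. op_level w = Suc k) ?os) j k = mprod u (filter (\<lambda>w. op_level w = Suc k) ?os) j" for j
    by (rule mprodL_mprod) auto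
  show ?thesis unfolding F_of_mprodL
    by (subst e1) (simp add: mprodL_append z1 z2 m)
qed

lemma bridge:
  assumes C: "clifford_circuit C" and k: "k \<le> depth C"
  shows "pt (nqubits C) u (filter (\<lambda>w. k < op_level w) (ops C)) (nm (filter (\<lambda>w. op_level w \<le> k) (ops C))) ({}, {})
       = (if (\<forall>l. k < l \<and> l \<le> depth C \<longrightarrow> chkL C u l) then Some (slot C u k) else None)"
  using k
proof (induction "depth C - k" arbitrary: k)
  case 0
  then have k: "k = depth C" by simp
  have "\<forall>w\<in>set (ops C). op_level w \<le> depth C" using level_le_depth[of _ C] by blast
  then have "filter (\<lambda>w. k < op_level w) (ops C) = []"
    using k by (auto simp: filter_empty_conv)
  moreover have "slot C u k = ({}, {})" using k bc_top[of C] F_of_top[OF C] by simp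
  ultimately show ?case using k by simp
next
  case (Suc d)
  let ?n = "nqubits C" and ?os = "ops C"
  have k: "k < depth C" and d: "d = depth C - Suc k" using Suc by auto
  have s: "sorted (map op_level ?os)" by (rule cc_sorted[OF C])
  define blk where "blk = filter (\<lambda>w. op_level w = Suc k) ?os"
  have e1: "filter (\<lambda>w. k < op_level w) ?os = blk @ filter (\<lambda>w. Suc k < op_level w) ?os"
    unfolding blk_def by (rule sorted_split_suc[OF s])
  have e2: "nm (filter (\<lambda>w. op_level w \<le> k) ?os) + nm blk = nm (filter (\<lambda>w. op_level w \<le> Suc k) ?os)"
    unfolding blk_def sorted_split_le_suc[OF s, of k] by simp
  have IH: "pt ?n u (filter (\<lambda>w. Suc k < op_level w) ?os) (nm (filter (\<lambda>w. op_level w \<le> Suc k) ?os)) ({}, {})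
       = (if (\<forall>l. Suc k < l \<and> l \<le> depth C \<longrightarrow> chkL C u l) then Some (slot C u (Suc k)) else None)"
    using Suc.hyps(1)[OF d] k by simp
  have okb: "ok_ops ?n blk" using cc_ok[OF C] unfolding blk_def ok_ops_def by auto
  have lvb: "\<forall>w\<in>set blk. op_level w = Suc k" unfolding blk_def by simp
  have djb: "disj ?n blk" unfolding blk_def by (rule cc_disj_blk[OF C])
  have luq: "lu ?n (Suc k) blk = level_unitary C (Suc k)"
    unfolding blk_def level_unitary_lu by (rule lu_filter[symmetric])
  have mchkq: "mchk blk Y \<longleftrightarrow> (\<forall>w\<in>set ?os. is_meas w \<and> op_level w = Suc k \<longrightarrow> pcomm (snd (meas_pauli w)) Y)" for Y
    unfolding mchk_def blk_def by auto
  have slotk: "slot C u k = pmul (F_of C u k) (conj_mod_phase ?n (level_unitary C (Suc k)) (slot C u (Suc k)))"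
    by (rule bc_rec[OF k])
  have Fk: "F_of C u k = mprod u blk (nm (filter (\<lambda>w. op_level w \<le> k) ?os))"
    unfolding blk_def by (rule F_of_block[OF C])
  have "pt ?n u (filter (\<lambda>w. k < op_level w) ?os) (nm (filter (\<lambda>w. op_level w \<le> k) ?os)) ({}, {})
     = Option.bind (pt ?n u (filter (\<lambda>w. Suc k < op_level w) ?os) (nm (filter (\<lambda>w. op_level w \<le> Suc k) ?os)) ({}, {}))
         (\<lambda>P. pt ?n u blk (nm (filter (\<lambda>w. op_level w \<le> k) ?os)) P)"
    unfolding e1 pt_append e2 ..
  also have "\<dots> = (if (\<forall>l. k < l \<and> l \<le> depth C \<longrightarrow> chkL C u l) then Some (slot C u k) else None)"
  proof (cases "\<forall>l. Suc k < l \<and> l \<le> depth C \<longrightarrow> chkL C u l")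
    case False
    then have nk: "\<not> (\<forall>l. k < l \<and> l \<le> depth C \<longrightarrow> chkL C u l)" by (meson Suc_lessD)
    show ?thesis unfolding IH if_not_P[OF False] if_not_P[OF nk] by simp
  next
    case True
    have all: "(\<forall>l. k < l \<and> l \<le> depth C \<longrightarrow> chkL C u l) \<longleftrightarrow> chkL C u (Suc k)"
    proof
      assume h: "\<forall>l. k < l \<and> l \<le> depth C \<longrightarrow> chkL C u l"
      show "chkL C u (Suc k)" using h k by (simp add: Suc_leI)
    next
      assume h: "chkL C u (Suc k)"
      show "\<forall>l. k < l \<and> l \<le> depth C \<longrightarrow> chkL C u l"
      proof (intro allI impI)
        fix l assume l: "k < l \<and> l \<le> depth C"
        show "chkL C u l"
        proof (cases "l = Suc k")
          case True then show ?thesis using h by simp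
        next
          case False then have "Suc k < l" using l by simp
          then show ?thesis using \<open>\<forall>l. Suc k < l \<and> l \<le> depth C \<longrightarrow> chkL C u l\<close> l by blast
        qed
      qed
    qed
    have "Option.bind (if (\<forall>l. Suc k < l \<and> l \<le> depth C \<longrightarrow> chkL C u l) then Some (slot C u (Suc k)) else None)
         (\<lambda>P. pt ?n u blk (nm (filter (\<lambda>w. op_level w \<le> k) ?os)) P)
        = pt ?n u blk (nm (filter (\<lambda>w. op_level w \<le> k) ?os)) (slot C u (Suc k))"
      using True by simp
    also have "\<dots> = (if mchk blk (conj_mod_phase ?n (lu ?n (Suc k) blk) (slot C u (Suc k)))
           then Some (pmul (mprod u blk (nm (filter (\<lambda>w. op_level w \<le> k) ?os))) (conj_mod_phase ?n (lu ?n (Suc k) blk) (slot C u (Suc k)))) else None)"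
      by (rule pt_block[OF okb lvb djb slot_pauli[OF C]])
    also have "\<dots> = (if chkL C u (Suc k) then Some (slot C u k) else None)"
      unfolding luq mchkq chkL_def[symmetric] Fk[symmetric] slotk[symmetric] ..
    also have "\<dots> = (if (\<forall>l. k < l \<and> l \<le> depth C \<longrightarrow> chkL C u l) then Some (slot C u k) else None)"
      unfolding all ..
    finally show ?thesis unfolding IH .
  qed
  finally show ?case .
qed

lemma bridge0:
  assumes C: "clifford_circuit C"
  shows "pt (nqubits C) u (ops C) 0 ({}, {})
       = (if (\<forall>l. 0 < l \<and> l \<le> depth C \<longrightarrow> chkL C u l) then Some (slot C u 0) else None)"
proof -
  have g: "\<forall>w\<in>set (ops C). 1 \<le> op_level w" using cc_level_ge1[OF C] by blast
  have "filter (\<lambda>w. 0 < op_level w) (ops C) = ops C" using g by (auto simp: filter_id_conv)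
  moreover have "filter (\<lambda>w. op_level w \<le> 0) (ops C) = []" using g by (auto simp: filter_empty_conv)
  ultimately show ?thesis using bridge[OF C, of 0 u] by simp
qed

lemma outcome_nm: "nmeas C = nm (ops C)"
  by (simp add: nmeas_def meas_ops_def nm_def)

lemma dual_chk:
  assumes C: "clifford_circuit C" and u: "u \<in> dual_code (nmeas C) (outcome_code C)"
  shows "(\<forall>l. 0 < l \<and> l \<le> depth C \<longrightarrow> chkL C u l) \<and> slot C u 0 = ({}, {})"
proof -
  have "pt (nqubits C) u (ops C) 0 ({}, {}) = Some ({}, {})"
  proof (rule detector_pt[OF cc_ok[OF C]])
    fix w \<psi> assume "w \<subseteq> {..<nm (ops C)}" "\<psi> \<in> carrier_vec (2 ^ nqubits C)" "\<psi> \<noteq> 0\<^sub>v (2 ^ nqubits C)"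
      "run (nqubits C) w 0 (ops C) \<psi> \<noteq> 0\<^sub>v (2 ^ nqubits C)"
    then have "w \<in> outcome_code C" unfolding outcome_code_def outcome_nm by blast
    then show "even (card (u \<inter> w))" using u unfolding dual_code_def by blast
  qed
  then show ?thesis unfolding bridge0[OF C] by (auto split: if_splits)
qed

lemma chk_dual:
  assumes C: "clifford_circuit C" and lin: "linear_code (nmeas C) (outcome_code C)"
    and v: "v \<subseteq> {..<nmeas C}" and chk: "\<forall>l. 0 < l \<and> l \<le> depth C \<longrightarrow> chkL C v l"
    and s0: "slot C v 0 = ({}, {})"
  shows "v \<in> dual_code (nmeas C) (outcome_code C)"
proof -
  have pt: "pt (nqubits C) v (ops C) 0 ({}, {}) = Some ({}, {})" unfolding bridge0[OF C] using chk s0 by simp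
  have "{} \<in> outcome_code C" using lin by (simp add: linear_code_def)
  then obtain \<psi>0 where z: "\<psi>0 \<in> carrier_vec (2 ^ nqubits C)" "run (nqubits C) {} 0 (ops C) \<psi>0 \<noteq> 0\<^sub>v (2 ^ nqubits C)"
    unfolding outcome_code_def by blast
  have "even (card (v \<inter> w))" if w: "w \<in> outcome_code C" for w
  proof -
    obtain \<psi> where p: "\<psi> \<in> carrier_vec (2 ^ nqubits C)" "run (nqubits C) w 0 (ops C) \<psi> \<noteq> 0\<^sub>v (2 ^ nqubits C)"
      using w unfolding outcome_code_def by blast
    have e: "even (par w v 0 (ops C))" by (rule pt_detector[OF cc_ok[OF C] pt z p])
    have "w \<subseteq> {..<nmeas C}" using w unfolding outcome_code_def by blast
    then have "w \<inter> v \<inter> {0..<0 + nm (ops C)} = v \<inter> w" using v unfolding outcome_nm by auto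
    then show ?thesis using e unfolding par_def by simp
  qed
  then show ?thesis using v unfolding dual_code_def by blast
qed

lemma dual_symdiff:
  assumes "u \<in> dual_code m Oc" "v \<in> dual_code m Oc"
  shows "symdiff u v \<in> dual_code m Oc"
proof -
  have fu: "finite u" "finite v" using assms finite_subset unfolding dual_code_def by blast+
  have "even (card (symdiff u v \<inter> w))" if w: "w \<in> Oc" for w
  proof -
    have e: "symdiff u v \<inter> w = (u \<inter> w) - (v \<inter> w) \<union> ((v \<inter> w) - (u \<inter> w))" by (auto simp: symdiff_def)
    have "even (card (symdiff u v \<inter> w)) \<longleftrightarrow> (even (card (u \<inter> w)) \<longleftrightarrow> even (card (v \<inter> w)))"
      unfolding e by (rule even_card_symdiff) (use fu in auto)
    then show ?thesis using assms w unfolding dual_code_def by blast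
  qed
  moreover have "symdiff u v \<subseteq> {..<m}" using assms unfolding dual_code_def symdiff_def by blast
  ultimately show ?thesis unfolding dual_code_def by blast
qed

lemma dual_empty: "{} \<in> dual_code m Oc"
  by (simp add: dual_code_def)

lemma pmul_shuffle: "pmul (pmul a b) (pmul c d) = pmul (pmul a c) (pmul b d)"
  by (auto simp: pmul_def)

lemma foldr_pmul_map2:
  "foldr pmul (map (\<lambda>j. pmul (a j) (b j)) xs) ({}, {}) = pmul (foldr pmul (map a xs) ({}, {})) (foldr pmul (map b xs) ({}, {}))"
proof (induction xs)
  case Nil then show ?case by simp
next
  case (Cons x xs)
  then show ?case by (simp add: pmul_shuffle)
qed

lemma F_of_symdiff: "F_of C (symdiff u v) k = pmul (F_of C u k) (F_of C v k)"
proof -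
  have "(if j \<in> symdiff u v \<and> meas_level C j - 1 = k then snd (meas_S C j) else ({}, {})) =
        pmul (if j \<in> u \<and> meas_level C j - 1 = k then snd (meas_S C j) else ({}, {}))
             (if j \<in> v \<and> meas_level C j - 1 = k then snd (meas_S C j) else ({}, {}))" for j
    by (auto simp: symdiff_def)
  then show ?thesis unfolding F_of_def foldr_pmul_map2[symmetric] by (simp only:)
qed

lemma F_of_empty: "F_of C {} k = ({}, {})"
proof -
  have "foldr pmul (map (\<lambda>j. ({}, {})) xs) ({}, {}) = ({}, {})" for xs :: "nat list"
    by (induction xs) auto
  then show ?thesis unfolding F_of_def by simp
qed

lemma bc_fmul:
  assumes C: "clifford_circuit C" and F: "\<And>k. is_pauli (nqubits C) (F k)" and G: "\<And>k. is_pauli (nqubits C) (G k)"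
  shows "bc C (fmul F G) i = pmul (bc C F i) (bc C G i)"
proof (induction i)
  case 0 then show ?case by (simp add: fmul_def)
next
  case (Suc i)
  have U: "clifford (nqubits C) (level_unitary C (depth C - i))" by (rule lu_level_clifford[OF C])
  show ?case using Suc conj_pmul[OF U bc_pauli[OF C F] bc_pauli[OF C G]]
    by (simp add: fmul_def pmul_shuffle)
qed

lemma slot_symdiff:
  assumes C: "clifford_circuit C"
  shows "back_cumulant C (F_of C (symdiff u v)) = fmul (back_cumulant C (F_of C u)) (back_cumulant C (F_of C v))"
proof
  fix k
  have e: "F_of C (symdiff u v) = fmul (F_of C u) (F_of C v)" by (rule ext) (simp add: F_of_symdiff fmul_def)
  show "back_cumulant C (F_of C (symdiff u v)) k = fmul (back_cumulant C (F_of C u)) (back_cumulant C (F_of C v)) k"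
    unfolding e back_cumulant_def fmul_def using bc_fmul[OF C F_of_pauli[OF C] F_of_pauli[OF C]]
    by (simp add: fmul_def)
qed

lemma bc_zero:
  assumes C: "clifford_circuit C"
  shows "bc C (\<lambda>k. ({}, {})) i = ({}, {})"
  by (induction i) (simp_all add: conj_zero[OF lu_level_clifford[OF C]])

lemma slot_empty:
  assumes C: "clifford_circuit C"
  shows "back_cumulant C (F_of C {}) = fone"
proof -
  have "F_of C {} = (\<lambda>k. ({}, {}))" by (rule ext) (simp add: F_of_empty)
  then show ?thesis by (intro ext) (simp add: back_cumulant_def fone_def bc_zero[OF C])
qed


lemma conj_lu_supp:
  assumes "ok_ops n blk" "disj n blk" "is_pauli n X" "q \<in> psupp (conj_mod_phase n (lu n l blk) X)"
  shows "q \<in> psupp X \<or> (\<exists>U. Gate l U \<in> set blk \<and> q \<in> mat_supp n U \<and> mat_supp n U \<inter> psupp X \<noteq> {})"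
  using assms
proof (induction blk arbitrary: q)
  case Nil then show ?case by (simp add: conj_one)
next
  case (Cons x r)
  have ok: "ok_ops n r" and dj: "disj n r" and djx: "\<forall>w\<in>set r. op_supp n x \<inter> op_supp n w = {}"
    using Cons.prems by (auto simp: disj_def ok_ops_Cons)
  have luc: "clifford n (lu n l r)" using lu_clifford[OF ok] .
  define Y where "Y = conj_mod_phase n (lu n l r) X"
  have Yp: "is_pauli n Y" unfolding Y_def using luc Cons.prems(3) by simp
  have IH: "p \<in> psupp Y \<Longrightarrow> p \<in> psupp X \<or> (\<exists>U. Gate l U \<in> set r \<and> p \<in> mat_supp n U \<and> mat_supp n U \<inter> psupp X \<noteq> {})" for p
    unfolding Y_def by (rule Cons.IH[OF ok dj Cons.prems(3)])
  show ?case
  proof (cases x)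
    case (Meas l' S)
    then have "q \<in> psupp Y" using Cons.prems(4) unfolding Y_def by simp
    then show ?thesis using IH by auto
  next
    case (Gate l' U)
    show ?thesis
    proof (cases "l' = l")
      case False
      then have "q \<in> psupp Y" using Cons.prems(4) Gate unfolding Y_def by simp
      then show ?thesis using IH by auto
    next
      case True
      have U: "clifford n U" using Cons.prems(1) Gate by simp
      have cq: "q \<in> psupp (conj_mod_phase n U Y)"
        using Cons.prems(4) Gate True conj_mult[OF luc U Cons.prems(3)] unfolding Y_def by simp
      show ?thesis
      proof (cases "mat_supp n U \<inter> psupp Y = {}")
        case True
        then have "conj_mod_phase n U Y = Y" using conj_disjoint[OF U Yp] by blast
        then have "q \<in> psupp Y" using cq by simp
        then show ?thesis using IH by auto
      next
        case False
        then obtain p where p: "p \<in> mat_supp n U" "p \<in> psupp Y" by blast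
        have "p \<in> psupp X"
        proof -
          have "\<not> (p \<in> mat_supp n U' \<and> Gate l U' \<in> set r)" for U'
          proof
            assume "p \<in> mat_supp n U' \<and> Gate l U' \<in> set r"
            then have "op_supp n x \<inter> op_supp n (Gate l U') \<noteq> {}" using p Gate by auto
            then show False using djx \<open>p \<in> mat_supp n U' \<and> Gate l U' \<in> set r\<close> by blast
          qed
          then show ?thesis using IH[OF p(2)] by blast
        qed
        then have ne: "mat_supp n U \<inter> psupp X \<noteq> {}" using p by blast
        have "q \<in> psupp Y \<or> q \<in> mat_supp n U" using conj_supp[OF U Yp] cq by blast
        then show ?thesis
        proof
          assume "q \<in> psupp Y" then show ?thesis using IH by auto
        next
          assume "q \<in> mat_supp n U" then show ?thesis using ne Gate True by auto
        qed
      qed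
    qed
  qed
qed

lemma level_unitary_supp:
  assumes C: "clifford_circuit C" and X: "is_pauli (nqubits C) X"
    and q: "q \<in> psupp (conj_mod_phase (nqubits C) (level_unitary C l) X)"
  shows "q \<in> psupp X \<or> (\<exists>U. Gate l U \<in> set (ops C) \<and> q \<in> mat_supp (nqubits C) U \<and> mat_supp (nqubits C) U \<inter> psupp X \<noteq> {})"
proof -
  let ?blk = "filter (\<lambda>w. op_level w = l) (ops C)"
  have ok: "ok_ops (nqubits C) ?blk" using cc_ok[OF C] unfolding ok_ops_def by auto
  have "q \<in> psupp (conj_mod_phase (nqubits C) (lu (nqubits C) l ?blk) X)"
    using q unfolding level_unitary_lu lu_filter[of _ _ "ops C"] .
  from conj_lu_supp[OF ok cc_disj_blk[OF C] X this] show ?thesis by auto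
qed

lemma meas_op_in:
  assumes "j < nmeas C"
  shows "meas_ops C ! j \<in> set (ops C) \<and> is_meas (meas_ops C ! j)"
proof -
  have "meas_ops C ! j \<in> set (meas_ops C)" using assms by (simp add: nmeas_def)
  then show ?thesis by (simp add: meas_ops_def)
qed

lemma meas_op_form:
  assumes "j < nmeas C"
  shows "meas_ops C ! j = Meas (meas_level C j) (meas_S C j)"
proof -
  have "is_meas (meas_ops C ! j)" using meas_op_in[OF assms] by simp
  then show ?thesis by (cases "meas_ops C ! j") (simp_all add: meas_level_def meas_S_def)
qed

lemma meas_level_range:
  assumes C: "clifford_circuit C" and j: "j < nmeas C"
  shows "1 \<le> meas_level C j \<and> meas_level C j \<le> depth C"
proof -
  have m: "meas_ops C ! j \<in> set (ops C)" using meas_op_in[OF j] by simp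
  show ?thesis using cc_level_ge1[OF C m] level_le_depth[OF m] by (simp add: meas_level_def)
qed

lemma mS_pauli:
  assumes C: "clifford_circuit C" and j: "j < nmeas C"
  shows "is_pauli (nqubits C) (snd (meas_S C j))"
proof -
  have m: "meas_ops C ! j \<in> set (ops C)" using meas_op_in[OF j] by simp
  then have "op_ok (nqubits C) (meas_ops C ! j)" using cc_ok[OF C] by (simp add: ok_ops_def)
  then show ?thesis unfolding meas_op_form[OF j] by simp
qed

lemma psupp_foldr: "psupp (foldr pmul xs ({}, {})) \<subseteq> (\<Union>x\<in>set xs. psupp x)"
proof (induction xs)
  case Nil then show ?case by simp
next
  case (Cons x xs) then show ?case using psupp_pmul[of x "foldr pmul xs ({}, {})"] by auto
qed

lemma F_of_supp:
  assumes C: "clifford_circuit C" and q: "q \<in> psupp (F_of C u k)"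
  shows "\<exists>j\<in>u. j < nmeas C \<and> meas_level C j = Suc k \<and> q \<in> psupp (snd (meas_S C j))"
proof -
  obtain j where j: "j \<in> set [0..<nmeas C]"
    and qj: "q \<in> psupp (if j \<in> u \<and> meas_level C j - 1 = k then snd (meas_S C j) else ({}, {}))"
    using psupp_foldr q unfolding F_of_def by fastforce
  then have jm: "j < nmeas C" by simp
  have "j \<in> u \<and> meas_level C j - 1 = k" using qj by (auto split: if_splits)
  moreover have "1 \<le> meas_level C j" using meas_level_range[OF C jm] by simp
  ultimately show ?thesis using qj jm by (intro bexI[of _ j]) auto
qed

lemma F_of_zero:
  assumes "\<And>j. j \<in> u \<Longrightarrow> j < nmeas C \<Longrightarrow> meas_level C j - 1 \<noteq> k"
  shows "F_of C u k = ({}, {})"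
proof -
  have "foldr pmul (map (\<lambda>j. if j \<in> u \<and> meas_level C j - 1 = k then snd (meas_S C j) else ({}, {})) xs) ({}, {}) = ({}, {})"
    if "set xs \<subseteq> {..<nmeas C}" for xs
    using that assms by (induction xs) auto
  moreover have "set [0..<nmeas C] \<subseteq> {..<nmeas C}" by auto
  ultimately show ?thesis unfolding F_of_def by blast
qed

lemma gd_refl: "0 \<le> r \<Longrightarrow> grid_dist_le D p p r"
  by (simp add: grid_dist_le_def)

lemma gd_sym: "grid_dist_le D p q r \<Longrightarrow> grid_dist_le D q p r"
  by (simp add: grid_dist_le_def abs_minus_commute)

lemma gd_trans: "grid_dist_le D p q r1 \<Longrightarrow> grid_dist_le D q s r2 \<Longrightarrow> grid_dist_le D p s (r1 + r2)"
  unfolding grid_dist_le_def by (smt (verit))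

lemma gd_mono: "grid_dist_le D p q r \<Longrightarrow> r \<le> r' \<Longrightarrow> grid_dist_le D p q r'"
  unfolding grid_dist_le_def by force

lemma psupp_empty_zero: "psupp P = {} \<Longrightarrow> P = ({}, {})"
  by (auto simp: psupp_def prod_eq_iff)

lemma pmul_eq_zero: "pmul P Q = ({}, {}) \<Longrightarrow> P = Q"
  by (auto simp: pmul_def prod_eq_iff)

lemma slot_ge_depth:
  assumes C: "clifford_circuit C" and k: "depth C \<le> k"
  shows "slot C u k = ({}, {})"
proof (cases "k = depth C")
  case True then show ?thesis using bc_top[of C] F_of_top[OF C] by simp
next
  case False then show ?thesis using k bc_out by simp
qed

lemma lightcone:
  assumes C: "clifford_circuit C"
    and loc: "\<forall>w\<in>set (ops C). \<forall>q\<in>op_supp (nqubits C) w. \<forall>q'\<in>op_supp (nqubits C) w.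
              grid_dist_le D (pos q) (pos q') (int c)"
    and q: "q \<in> psupp (slot C u k)"
  shows "\<exists>j\<in>u. j < nmeas C \<and> k < meas_level C j \<and>
           (\<exists>s\<in>psupp (snd (meas_S C j)). grid_dist_le D (pos q) (pos s) (int (c * (meas_level C j - Suc k))))"
  using q
proof (induction "depth C - k" arbitrary: k q)
  case 0
  then have "depth C \<le> k" by simp
  then show ?case using "0.prems" slot_ge_depth[OF C] by simp
next
  case (Suc d)
  then have k: "k < depth C" and d: "d = depth C - Suc k" by auto
  let ?n = "nqubits C"
  have sk: "slot C u k = pmul (F_of C u k) (conj_mod_phase ?n (level_unitary C (Suc k)) (slot C u (Suc k)))"
    by (rule bc_rec[OF k])
  have "q \<in> psupp (F_of C u k) \<or> q \<in> psupp (conj_mod_phase ?n (level_unitary C (Suc k)) (slot C u (Suc k)))"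
    using Suc.prems psupp_pmul unfolding sk by blast
  then show ?case
  proof
    assume "q \<in> psupp (F_of C u k)"
    then obtain j where j: "j \<in> u" "j < nmeas C" "meas_level C j = Suc k" "q \<in> psupp (snd (meas_S C j))"
      using F_of_supp[OF C] by blast
    then show ?thesis by (intro bexI[of _ j]) (auto intro!: bexI[of _ q] gd_refl)
  next
    assume "q \<in> psupp (conj_mod_phase ?n (level_unitary C (Suc k)) (slot C u (Suc k)))"
    then have "q \<in> psupp (slot C u (Suc k)) \<or> (\<exists>U. Gate (Suc k) U \<in> set (ops C) \<and> q \<in> mat_supp ?n U \<and> mat_supp ?n U \<inter> psupp (slot C u (Suc k)) \<noteq> {})"
      using level_unitary_supp[OF C slot_pauli[OF C]] by blast
    then show ?thesis
    proof
      assume "q \<in> psupp (slot C u (Suc k))"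
      then obtain j s where j: "j \<in> u" "j < nmeas C" "Suc k < meas_level C j" "s \<in> psupp (snd (meas_S C j))"
        "grid_dist_le D (pos q) (pos s) (int (c * (meas_level C j - Suc (Suc k))))"
        using Suc.hyps(1)[OF d] by blast
      have "c * (meas_level C j - Suc (Suc k)) \<le> c * (meas_level C j - Suc k)" by (intro mult_le_mono2) simp
      then have "int (c * (meas_level C j - Suc (Suc k))) \<le> int (c * (meas_level C j - Suc k))" by linarith
      then show ?thesis using j by (intro bexI[of _ j]) (auto intro!: bexI[of _ s] elim: gd_mono)
    next
      assume "\<exists>U. Gate (Suc k) U \<in> set (ops C) \<and> q \<in> mat_supp ?n U \<and> mat_supp ?n U \<inter> psupp (slot C u (Suc k)) \<noteq> {}"
      then obtain U p where U: "Gate (Suc k) U \<in> set (ops C)" "q \<in> mat_supp ?n U" "p \<in> mat_supp ?n U" "p \<in> psupp (slot C u (Suc k))"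
        by blast
      obtain j s where j: "j \<in> u" "j < nmeas C" "Suc k < meas_level C j" "s \<in> psupp (snd (meas_S C j))"
        "grid_dist_le D (pos p) (pos s) (int (c * (meas_level C j - Suc (Suc k))))"
        using Suc.hyps(1)[OF d U(4)] by blast
      have qp: "grid_dist_le D (pos q) (pos p) (int c)" using loc U(1,2,3) by fastforce
      have "grid_dist_le D (pos q) (pos s) (int c + int (c * (meas_level C j - Suc (Suc k))))"
        by (rule gd_trans[OF qp j(5)])
      moreover have "int c + int (c * (meas_level C j - Suc (Suc k))) = int (c * (meas_level C j - Suc k))"
      proof -
        have "meas_level C j - Suc k = Suc (meas_level C j - Suc (Suc k))" using j(3) by simp
        then show ?thesis by simp
      qed
      ultimately show ?thesis using j by (intro bexI[of _ j]) (auto intro!: bexI[of _ s])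
    qed
  qed
qed

lemma down_zero:
  assumes C: "clifford_circuit C" and z: "slot C x K = ({}, {})"
    and lv: "\<And>j. j \<in> x \<Longrightarrow> j < nmeas C \<Longrightarrow> K < meas_level C j"
  shows "slot C x (K - i) = ({}, {})"
proof (induction i)
  case 0 then show ?case using z by simp
next
  case (Suc i)
  show ?case
  proof (cases "K - i = 0")
    case True then show ?thesis using Suc by simp
  next
    case False
    define k where "k = K - Suc i"
    have kk: "Suc k = K - i" using False unfolding k_def by simp
    show ?thesis
    proof (cases "k < depth C")
      case True
      have Fk: "F_of C x k = ({}, {})"
        by (rule F_of_zero) (use lv kk in fastforce)
      show ?thesis unfolding k_def[symmetric] bc_rec[OF True] Fk kk Suc
        using conj_zero[OF lu_level_clifford[OF C]] by simp
    next
      case False then show ?thesis unfolding k_def[symmetric] using slot_ge_depth[OF C] by simp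
    qed
  qed
qed

lemma up_zero:
  assumes C: "clifford_circuit C" and z: "slot C x 0 = ({}, {})"
    and lv: "\<And>j. j \<in> x \<Longrightarrow> j < nmeas C \<Longrightarrow> K < meas_level C j"
    and k: "k \<le> K"
  shows "slot C x k = ({}, {})"
  using k
proof (induction k)
  case 0 then show ?case using z by simp
next
  case (Suc k)
  then have kK: "k < K" and IH: "slot C x k = ({}, {})" by auto
  show ?case
  proof (cases "k < depth C")
    case True
    have Fk: "F_of C x k = ({}, {})"
      by (rule F_of_zero) (use lv kK in fastforce)
    have U: "clifford (nqubits C) (level_unitary C (Suc k))" by (rule lu_level_clifford[OF C])
    have "conj_mod_phase (nqubits C) (level_unitary C (Suc k)) (slot C x (Suc k)) = ({}, {})"
      using IH unfolding bc_rec[OF True] Fk by simp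
    then have "conj_mod_phase (nqubits C) (level_unitary C (Suc k)) (slot C x (Suc k)) =
               conj_mod_phase (nqubits C) (level_unitary C (Suc k)) ({}, {})" using conj_zero[OF U] by simp
    then show ?thesis using conj_inj[OF U slot_pauli[OF C] is_pauli_zero] by blast
  next
    case False then show ?thesis using slot_ge_depth[OF C] by simp
  qed
qed


lemma vec_depth_bounds:
  assumes fin: "finite u" and j: "j \<in> u" and dep: "vec_depth C u \<le> c"
  shows "Min (meas_level C ` u) \<le> meas_level C j \<and> meas_level C j + 1 \<le> Min (meas_level C ` u) + c"
proof -
  have ne: "u \<noteq> {}" using j by auto
  have "Min (meas_level C ` u) \<le> meas_level C j" "meas_level C j \<le> Max (meas_level C ` u)"
    using fin j by auto
  moreover have "Max (meas_level C ` u) - Min (meas_level C ` u) + 1 \<le> c"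
    using dep ne unfolding vec_depth_def by simp
  ultimately show ?thesis by linarith
qed

lemma op_supp_meas: "is_meas w \<Longrightarrow> op_supp n w = psupp (snd (meas_pauli w))"
  by (cases w) auto

lemma mS_local:
  assumes loc: "\<And>w q q'. w \<in> set (ops C) \<Longrightarrow> q \<in> op_supp (nqubits C) w \<Longrightarrow> q' \<in> op_supp (nqubits C) w \<Longrightarrow>
              grid_dist_le D (pos q) (pos q') (int c)"
    and j: "j < nmeas C" and s: "s \<in> psupp (snd (meas_S C j))" "s' \<in> psupp (snd (meas_S C j))"
  shows "grid_dist_le D (pos s) (pos s') (int c)"
proof -
  have "meas_ops C ! j \<in> set (ops C)" using meas_op_in[OF j] by simp
  moreover have "op_supp (nqubits C) (meas_ops C ! j) = psupp (snd (meas_S C j))"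
    unfolding meas_op_form[OF j] by simp
  ultimately show ?thesis using loc s by metis
qed

lemma cluster_dual:
  assumes C: "clifford_circuit C" and lin: "linear_code (nmeas C) (outcome_code C)"
    and loc: "\<And>w q q'. w \<in> set (ops C) \<Longrightarrow> q \<in> op_supp (nqubits C) w \<Longrightarrow> q' \<in> op_supp (nqubits C) w \<Longrightarrow>
              grid_dist_le D (pos q) (pos q') (int c)"
    and u: "u \<in> dual_code (nmeas C) (outcome_code C)" and vu: "v \<subseteq> u" and dep: "vec_depth C u \<le> c"
    and sep: "\<And>j j' s s'. j \<in> v \<Longrightarrow> j' \<in> u - v \<Longrightarrow> s \<in> psupp (snd (meas_S C j)) \<Longrightarrow> s' \<in> psupp (snd (meas_S C j')) \<Longrightarrow>
               \<not> grid_dist_le D (pos s) (pos s') (int (2 * c * c + 3 * c))"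
  shows "v \<in> dual_code (nmeas C) (outcome_code C)"
proof (cases "v = {}")
  case True then show ?thesis using dual_empty by simp
next
  case False
  let ?n = "nqubits C" and ?m = "nmeas C" and ?R0 = "int (2 * c * c + 3 * c)"
  have locH: "\<forall>w\<in>set (ops C). \<forall>q\<in>op_supp (nqubits C) w. \<forall>q'\<in>op_supp (nqubits C) w.
              grid_dist_le D (pos q) (pos q') (int c)" using loc by blast
  have um: "u \<subseteq> {..<?m}" using u unfolding dual_code_def by blast
  then have fin: "finite u" using finite_subset by blast
  define K where "K = Min (meas_level C ` u) - 1"
  have lvK: "K < meas_level C j \<and> meas_level C j \<le> K + c" if j: "j \<in> u" for j
  proof -
    have "1 \<le> meas_level C j'" if "j' \<in> u" for j' using meas_level_range[OF C] um that by blast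
    moreover have "Min (meas_level C ` u) \<in> meas_level C ` u" using fin j by (intro Min_in) auto
    ultimately have "1 \<le> Min (meas_level C ` u)" by (metis imageE)
    then show ?thesis using vec_depth_bounds[OF fin j dep] unfolding K_def by linarith
  qed
  have cu: "\<forall>l. 0 < l \<and> l \<le> depth C \<longrightarrow> chkL C u l" and su0: "slot C u 0 = ({}, {})"
    using dual_chk[OF C u] by auto
  define w where "w = u - v"
  have symd: "symdiff v w = u" unfolding w_def symdiff_def using vu by auto
  have split: "slot C u k = pmul (slot C v k) (slot C w k)" for k
    using slot_symdiff[OF C, of v w] unfolding symd by (simp add: fmul_def)
  have sepq: False if j: "j \<in> v" "j' \<in> w" "s \<in> psupp (snd (meas_S C j))" "s' \<in> psupp (snd (meas_S C j'))"
    and d: "grid_dist_le D (pos q) (pos s) a" "grid_dist_le D (pos q) (pos s') b" and ab: "a + b \<le> ?R0" for j j' s s' q a b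
  proof -
    have "grid_dist_le D (pos s) (pos s') (a + b)" by (rule gd_trans[OF gd_sym[OF d(1)] d(2)])
    then have "grid_dist_le D (pos s) (pos s') ?R0" using ab gd_mono by blast
    then show False using sep[OF j(1) _ j(3) j(4)] j(2) unfolding w_def by blast
  qed
  have bnd: "\<exists>j\<in>x. \<exists>s\<in>psupp (snd (meas_S C j)). grid_dist_le D (pos q) (pos s) (int (c * c))"
    if x: "x \<subseteq> u" and k: "K \<le> k" and q: "q \<in> psupp (slot C x k)" for x k q
  proof -
    obtain j s where j: "j \<in> x" "j < ?m" "k < meas_level C j" "s \<in> psupp (snd (meas_S C j))"
      "grid_dist_le D (pos q) (pos s) (int (c * (meas_level C j - Suc k)))"
      using lightcone[where pos = pos and D = D and c = c, OF C locH q] by blast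
    have "meas_level C j \<le> K + c" using lvK x j(1) by blast
    then have "meas_level C j - Suc k \<le> c" using k by linarith
    then have "c * (meas_level C j - Suc k) \<le> c * c" by (rule mult_le_mono2)
    then have "int (c * (meas_level C j - Suc k)) \<le> int (c * c)" by linarith
    then show ?thesis using j gd_mono by blast
  qed
  have bndY: "\<exists>j\<in>x. \<exists>s\<in>psupp (snd (meas_S C j)). grid_dist_le D (pos q) (pos s) (int (c * c) + int c)"
    if x: "x \<subseteq> u" and l: "K < l" and q: "q \<in> psupp (conj_mod_phase ?n (level_unitary C l) (slot C x l))" for x l q
  proof -
    have "q \<in> psupp (slot C x l) \<or> (\<exists>U. Gate l U \<in> set (ops C) \<and> q \<in> mat_supp ?n U \<and> mat_supp ?n U \<inter> psupp (slot C x l) \<noteq> {})"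
      using level_unitary_supp[OF C slot_pauli[OF C] q] .
    then show ?thesis
    proof
      assume "q \<in> psupp (slot C x l)"
      then obtain j s where "j \<in> x" "s \<in> psupp (snd (meas_S C j))" "grid_dist_le D (pos q) (pos s) (int (c * c))"
        using bnd[OF x] l by (meson less_imp_le)
      then show ?thesis using gd_mono[of D "pos q" "pos s" "int (c * c)" "int (c * c) + int c"] by auto
    next
      assume "\<exists>U. Gate l U \<in> set (ops C) \<and> q \<in> mat_supp ?n U \<and> mat_supp ?n U \<inter> psupp (slot C x l) \<noteq> {}"
      then obtain U p where U: "Gate l U \<in> set (ops C)" "q \<in> mat_supp ?n U" "p \<in> mat_supp ?n U" "p \<in> psupp (slot C x l)"
        by blast
      obtain j s where js: "j \<in> x" "s \<in> psupp (snd (meas_S C j))" "grid_dist_le D (pos p) (pos s) (int (c * c))"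
        using bnd[OF x _ U(4)] l by (meson less_imp_le)
      have "grid_dist_le D (pos q) (pos p) (int c)" using loc[OF U(1)] U(2,3) by simp
      then have "grid_dist_le D (pos q) (pos s) (int c + int (c * c))" by (rule gd_trans[OF _ js(3)])
      then show ?thesis using js by (auto simp: add.commute)
    qed
  qed
  have uK: "slot C u K = ({}, {})"
    by (rule up_zero[OF C su0 _ order_refl]) (use lvK in blast)
  have vK: "slot C v K = ({}, {})"
  proof -
    have eq: "slot C v K = slot C w K" using uK split[of K] pmul_eq_zero by simp
    have "psupp (slot C v K) = {}"
    proof (rule ccontr)
      assume "psupp (slot C v K) \<noteq> {}"
      then obtain q where q: "q \<in> psupp (slot C v K)" by blast
      obtain j s where js: "j \<in> v" "s \<in> psupp (snd (meas_S C j))" "grid_dist_le D (pos q) (pos s) (int (c * c))"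
        using bnd[OF vu order_refl q] by blast
      obtain j' s' where js': "j' \<in> w" "s' \<in> psupp (snd (meas_S C j'))" "grid_dist_le D (pos q) (pos s') (int (c * c))"
        using bnd[of w K q] q eq unfolding w_def by auto
      show False by (rule sepq[OF js(1) js'(1) js(2) js'(2) js(3) js'(3)]) simp
    qed
    then show ?thesis by (rule psupp_empty_zero)
  qed
  have vlow: "slot C v k = ({}, {})" if "k \<le> K" for k
  proof -
    have "slot C v (K - (K - k)) = ({}, {})"
      by (rule down_zero[OF C vK]) (use lvK vu in blast)
    then show ?thesis using that by simp
  qed
  have cv: "\<forall>l. 0 < l \<and> l \<le> depth C \<longrightarrow> chkL C v l"
  proof (intro allI impI)
    fix l assume l: "0 < l \<and> l \<le> depth C"
    show "chkL C v l" unfolding chkL_def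
    proof (intro ballI impI)
      fix w0 assume w0: "w0 \<in> set (ops C)" "is_meas w0 \<and> op_level w0 = l"
      let ?M = "snd (meas_pauli w0)"
      let ?U = "level_unitary C l"
      have U: "clifford ?n ?U" by (rule lu_level_clifford[OF C])
      show "pcomm ?M (conj_mod_phase ?n ?U (slot C v l))"
      proof (cases "l \<le> K")
        case True then show ?thesis using vlow conj_zero[OF U] by simp
      next
        case False
        then have lK: "K < l" by simp
        have Mp: "is_pauli ?n ?M" using cc_ok[OF C] w0 by (cases w0) (auto simp: ok_ops_def)
        let ?Yv = "conj_mod_phase ?n ?U (slot C v l)" and ?Yw = "conj_mod_phase ?n ?U (slot C w l)"
        have Yp: "is_pauli ?n ?Yv" "is_pauli ?n ?Yw" using U slot_pauli[OF C] by simp_all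
        have "conj_mod_phase ?n ?U (slot C u l) = pmul ?Yv ?Yw"
          unfolding split by (rule conj_pmul[OF U slot_pauli[OF C] slot_pauli[OF C]])
        then have pc: "pcomm ?M (pmul ?Yv ?Yw)" using cu l w0 unfolding chkL_def by auto
        then have iff: "pcomm ?M ?Yv \<longleftrightarrow> pcomm ?M ?Yw" using pcomm_pmul[OF Mp Yp] by simp
        show ?thesis
        proof (cases "psupp ?M \<inter> psupp ?Yw = {}")
          case True then show ?thesis using iff pcomm_disjoint by blast
        next
          case False
          show ?thesis
          proof (cases "psupp ?M \<inter> psupp ?Yv = {}")
            case True then show ?thesis using pcomm_disjoint by blast
          next
            case False2: False
            obtain a where a: "a \<in> psupp ?M" "a \<in> psupp ?Yv" using False2 by blast
            obtain b where b: "b \<in> psupp ?M" "b \<in> psupp ?Yw" using False by blast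
            have ab: "grid_dist_le D (pos b) (pos a) (int c)"
              using loc[OF w0(1)] a(1) b(1) op_supp_meas[of w0] w0(2) by metis
            obtain j s where js: "j \<in> v" "s \<in> psupp (snd (meas_S C j))" "grid_dist_le D (pos a) (pos s) (int (c * c) + int c)"
              using bndY[OF vu lK a(2)] by blast
            obtain j' s' where js': "j' \<in> w" "s' \<in> psupp (snd (meas_S C j'))" "grid_dist_le D (pos b) (pos s') (int (c * c) + int c)"
              using bndY[of w l b] lK b(2) unfolding w_def by auto
            have bs: "grid_dist_le D (pos b) (pos s) (int c + (int (c * c) + int c))" by (rule gd_trans[OF ab js(3)])
            have False by (rule sepq[OF js(1) js'(1) js(2) js'(2) bs js'(3)]) (simp add: algebra_simps)
            then show ?thesis ..
          qed
        qed
      qed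
    qed
  qed
  have v0: "slot C v 0 = ({}, {})" using vlow by simp
  have "v \<subseteq> {..<?m}" using vu um by blast
  then show ?thesis by (rule chk_dual[OF C lin _ cv v0])
qed

fun clus :: "(nat \<Rightarrow> nat \<Rightarrow> bool) \<Rightarrow> nat set \<Rightarrow> nat \<Rightarrow> nat \<Rightarrow> nat set" where
  "clus near u x 0 = {x}"
| "clus near u x (Suc i) = clus near u x i \<union> {j \<in> u. \<exists>j'\<in>clus near u x i. near j' j}"

lemma clus_sub: "x \<in> u \<Longrightarrow> clus near u x i \<subseteq> u"
  by (induction i) auto

lemma clus_x: "x \<in> clus near u x i"
  by (induction i) auto

lemma clus_mono: "clus near u x i \<subseteq> clus near u x (Suc i)"
  by simp

lemma clus_stable:
  assumes fin: "finite u" and x: "x \<in> u"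
  shows "\<exists>N\<le>card u. clus near u x (Suc N) = clus near u x N"
proof (rule ccontr)
  assume no: "\<not> ?thesis"
  have "i \<le> card u \<Longrightarrow> i + 1 \<le> card (clus near u x i)" for i
  proof (induction i)
    case 0 then show ?case by simp
  next
    case (Suc i)
    have ne: "clus near u x (Suc i) \<noteq> clus near u x i" using no Suc.prems by simp
    then have "clus near u x i \<subset> clus near u x (Suc i)" using clus_mono by blast
    moreover have "finite (clus near u x (Suc i))" using clus_sub[OF x] fin finite_subset by blast
    ultimately have "card (clus near u x i) < card (clus near u x (Suc i))" by (rule psubset_card_mono[rotated])
    then show ?case using Suc by simp
  qed
  from this[of "card u"] have "card u + 1 \<le> card (clus near u x (card u))" by simp
  moreover have "card (clus near u x (card u)) \<le> card u" using clus_sub[OF x] fin by (rule card_mono[rotated])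
  ultimately show False by simp
qed

lemma clus_sep:
  assumes st: "clus near u x (Suc N) = clus near u x N" and j: "j \<in> clus near u x N" and j': "j' \<in> u - clus near u x N"
  shows "\<not> near j j'"
  using st j j' by auto

lemma clus_empty_near:
  assumes "\<And>j. \<not> near x j"
  shows "clus near u x i = {x}"
  using assms by (induction i) auto


lemma clus_diam:
  assumes locS: "\<And>j s s'. j \<in> u \<Longrightarrow> s \<in> Sf j \<Longrightarrow> s' \<in> Sf j \<Longrightarrow> grid_dist_le D (pos s) (pos s') (int c)"
    and x: "x \<in> u" and R0: "0 \<le> R0"
  shows "j \<in> clus (\<lambda>j j'. \<exists>s\<in>Sf j. \<exists>s'\<in>Sf j'. grid_dist_le D (pos s) (pos s') R0) u x i \<Longrightarrow> s \<in> Sf j \<Longrightarrow> s0 \<in> Sf x \<Longrightarrow>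
         grid_dist_le D (pos s) (pos s0) (int i * (R0 + 2 * int c) + int c)"
proof (induction i arbitrary: j s)
  case 0 then show ?case using locS[OF x] by simp
next
  case (Suc i)
  let ?near = "\<lambda>j j'. \<exists>s\<in>Sf j. \<exists>s'\<in>Sf j'. grid_dist_le D (pos s) (pos s') R0"
  have "j \<in> clus ?near u x i \<or> (j \<in> u \<and> (\<exists>j'\<in>clus ?near u x i. ?near j' j))" using Suc.prems(1) by simp
  then show ?case
  proof
    assume "j \<in> clus ?near u x i"
    then have "grid_dist_le D (pos s) (pos s0) (int i * (R0 + 2 * int c) + int c)" using Suc by blast
    then show ?thesis by (rule gd_mono) (use R0 in \<open>simp add: algebra_simps\<close>)
  next
    assume "j \<in> u \<and> (\<exists>j'\<in>clus ?near u x i. ?near j' j)"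
    then obtain j' a b where jj: "j \<in> u" "j' \<in> clus ?near u x i" "a \<in> Sf j'" "b \<in> Sf j" "grid_dist_le D (pos a) (pos b) R0"
      by blast
    have d1: "grid_dist_le D (pos s) (pos b) (int c)" using locS[OF jj(1) Suc.prems(2) jj(4)] .
    have d2: "grid_dist_le D (pos b) (pos a) R0" using gd_sym[OF jj(5)] .
    have d3: "grid_dist_le D (pos a) (pos s0) (int i * (R0 + 2 * int c) + int c)" using Suc.IH[OF jj(2) jj(3) Suc.prems(3)] .
    have "grid_dist_le D (pos s) (pos s0) (int c + (R0 + (int i * (R0 + 2 * int c) + int c)))"
      by (rule gd_trans[OF d1 gd_trans[OF d2 d3]])
    then show ?thesis by (rule gd_mono) (simp add: algebra_simps)
  qed
qed

lemma vec_depth_mono: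
  assumes "v \<subseteq> u" "finite u"
  shows "vec_depth C v \<le> vec_depth C u"
proof (cases "v = {}")
  case True then show ?thesis by (simp add: vec_depth_def)
next
  case False
  then have "u \<noteq> {}" using assms by auto
  have "Max (meas_level C ` v) \<le> Max (meas_level C ` u)" using assms False by (intro Max_mono) auto
  moreover have "Min (meas_level C ` u) \<le> Min (meas_level C ` v)" using assms False by (intro Min_antimono) auto
  ultimately show ?thesis using False \<open>u \<noteq> {}\<close> unfolding vec_depth_def by simp
qed

lemma z2span_symdiff:
  assumes a: "a \<in> z2span L" and b: "b \<in> z2span L"
  shows "symdiff a b \<in> z2span L"
  using b
proof induction
  case zero then show ?case using a by (simp add: symdiff_def)
next
  case (add u l)
  have "symdiff a (symdiff u l) = symdiff (symdiff a u) l" by (auto simp: symdiff_def)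
  then show ?case using add z2span.add by metis
qed

lemma z2span_mono:
  assumes "B \<subseteq> z2span L"
  shows "z2span B \<subseteq> z2span L"
proof
  fix u assume "u \<in> z2span B"
  then show "u \<in> z2span L"
  proof induction
    case zero then show ?case by (rule z2span.zero)
  next
    case (add u b) then show ?case using assms z2span_symdiff by blast
  qed
qed

lemma z2span_elem: "b \<in> B \<Longrightarrow> b \<in> z2span B"
  using z2span.add[OF z2span.zero] by (simp add: symdiff_def)


definition R0 :: "nat \<Rightarrow> nat" where "R0 c = 2 * c * c + 3 * c"
definition Rv :: "nat \<Rightarrow> nat" where "Rv c = c * (R0 c + 2 * c) + c"

definition Lset :: "circuit \<Rightarrow> nat \<Rightarrow> (nat \<Rightarrow> nat \<Rightarrow> int) \<Rightarrow> nat \<Rightarrow> nat set set" where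
  "Lset C D pos c = {v. v \<in> dual_code (nmeas C) (outcome_code C) \<and> vec_depth C v \<le> c \<and>
     (\<exists>p\<in>grid D. \<forall>j\<in>v. \<forall>s\<in>psupp (snd (meas_S C j)). grid_dist_le D (pos s) p (int (Rv c)))}"

lemma decomp:
  assumes C: "clifford_circuit C" and lin: "linear_code (nmeas C) (outcome_code C)"
    and loc: "\<And>w q q'. w \<in> set (ops C) \<Longrightarrow> q \<in> op_supp (nqubits C) w \<Longrightarrow> q' \<in> op_supp (nqubits C) w \<Longrightarrow>
              grid_dist_le D (pos q) (pos q') (int c)"
    and place: "pos ` {..<nqubits C} \<subseteq> grid D"
  shows "u \<in> dual_code (nmeas C) (outcome_code C) \<Longrightarrow> card u \<le> c \<Longrightarrow> vec_depth C u \<le> c \<Longrightarrow> u \<in> z2span (Lset C D pos c)"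
proof (induction "card u" arbitrary: u rule: less_induct)
  case less
  let ?m = "nmeas C" and ?Oc = "outcome_code C" and ?L = "Lset C D pos c"
  let ?Sf = "\<lambda>j. psupp (snd (meas_S C j))"
  have um: "u \<subseteq> {..<?m}" using less.prems(1) unfolding dual_code_def by blast
  then have fin: "finite u" using finite_subset by blast
  show ?case
  proof (cases "u = {}")
    case True then show ?thesis by (simp add: z2span.zero)
  next
    case False
    then obtain x where x: "x \<in> u" by blast
    define near where "near = (\<lambda>j j'. \<exists>s\<in>?Sf j. \<exists>s'\<in>?Sf j'. grid_dist_le D (pos s) (pos s') (int (R0 c)))"
    obtain N where N: "N \<le> card u" "clus near u x (Suc N) = clus near u x N"
      using clus_stable[OF fin x] by blast
    define v where "v = clus near u x N"
    have vu: "v \<subseteq> u" unfolding v_def by (rule clus_sub[OF x])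
    have xv: "x \<in> v" unfolding v_def by (rule clus_x)
    have sep: "\<not> grid_dist_le D (pos s) (pos s') (int (2 * c * c + 3 * c))"
      if "j \<in> v" "j' \<in> u - v" "s \<in> ?Sf j" "s' \<in> ?Sf j'" for j j' s s'
    proof -
      have "\<not> near j j'" using clus_sep[OF N(2)] that unfolding v_def by blast
      then show ?thesis using that unfolding near_def R0_def by blast
    qed
    have vd: "v \<in> dual_code ?m ?Oc"
      by (rule cluster_dual[OF C lin _ less.prems(1) vu less.prems(3) sep]) (rule loc; assumption)
    have locS: "grid_dist_le D (pos s) (pos s') (int c)" if "j \<in> u" "s \<in> ?Sf j" "s' \<in> ?Sf j" for j s s'
    proof -
      have jm: "j < nmeas C" using um that(1) by blast
      show ?thesis by (rule mS_local[OF _ jm that(2) that(3)]) (rule loc; assumption)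
    qed
    have vL: "v \<in> ?L"
    proof -
      have dv: "vec_depth C v \<le> c" using vec_depth_mono[OF vu fin, of C] less.prems(3) by simp
      have "\<exists>p\<in>grid D. \<forall>j\<in>v. \<forall>s\<in>?Sf j. grid_dist_le D (pos s) p (int (Rv c))"
      proof (cases "?Sf x = {}")
        case True
        then have "v = {x}" unfolding v_def near_def by (intro clus_empty_near) blast
        moreover have "(\<lambda>i. 0) \<in> grid D" by (simp add: grid_def)
        ultimately show ?thesis using True by blast
      next
        case False
        then obtain s0 where s0: "s0 \<in> ?Sf x" by blast
        have "is_pauli (nqubits C) (snd (meas_S C x))" using mS_pauli[OF C] um x by blast
        then have "s0 < nqubits C" using s0 by (auto simp: is_pauli_def psupp_def)
        then have pg: "pos s0 \<in> grid D" using place by blast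
        have "grid_dist_le D (pos s) (pos s0) (int (Rv c))" if "j \<in> v" "s \<in> ?Sf j" for j s
        proof -
          have "grid_dist_le D (pos s) (pos s0) (int N * (int (R0 c) + 2 * int c) + int c)"
            using clus_diam[of u "?Sf" D pos c x "int (R0 c)", OF locS x _ _ that(2) s0] that(1)
            unfolding v_def near_def by simp
          moreover have "int N * (int (R0 c) + 2 * int c) + int c \<le> int (Rv c)"
          proof -
            have "N \<le> c" using N(1) less.prems(2) by simp
            then have "N * (R0 c + 2 * c) \<le> c * (R0 c + 2 * c)" by (rule mult_le_mono1)
            moreover have "int N * (int (R0 c) + 2 * int c) = int (N * (R0 c + 2 * c))" by simp
            moreover have "int (Rv c) = int (c * (R0 c + 2 * c)) + int c" unfolding Rv_def by simp
            ultimately show ?thesis by linarith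
          qed
          ultimately show ?thesis by (rule gd_mono)
        qed
        then show ?thesis using pg by blast
      qed
      then show ?thesis unfolding Lset_def using vd dv by blast
    qed
    have sd: "symdiff u v = u - v" using vu by (auto simp: symdiff_def)
    have rd: "u - v \<in> dual_code ?m ?Oc" using dual_symdiff[OF less.prems(1) vd] unfolding sd .
    have cl: "card (u - v) < card u" using xv x fin by (intro psubset_card_mono) auto
    have "u - v \<in> z2span ?L"
    proof (rule less.hyps[OF cl rd])
      show "card (u - v) \<le> c" using cl less.prems(2) by simp
      show "vec_depth C (u - v) \<le> c" using vec_depth_mono[of "u - v" u C] fin less.prems(3) by auto
    qed
    then have "symdiff (u - v) v \<in> z2span ?L" using vL by (rule z2span.add)
    moreover have "symdiff (u - v) v = u" using vu by (auto simp: symdiff_def)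
    ultimately show ?thesis by simp
  qed
qed

definition cp :: "nat \<Rightarrow> nat" where "cp c = c * c + Rv c + c"

definition embf :: "nat \<Rightarrow> (nat \<Rightarrow> nat \<Rightarrow> int) \<Rightarrow> nat \<times> nat \<Rightarrow> (nat \<Rightarrow> int)" where
  "embf D pos x = (\<lambda>i. if i < D then pos (snd x) i else if i = D then int (fst x) else 0)"

lemma fsupp_fone: "fsupp C fone = {}"
  by (simp add: fsupp_def fone_def)

lemma local_gen:
  assumes C: "clifford_circuit C" and lin: "linear_code (nmeas C) (outcome_code C)"
    and loc: "\<forall>w\<in>set (ops C). \<forall>q\<in>op_supp (nqubits C) w. \<forall>q'\<in>op_supp (nqubits C) w.
              grid_dist_le D (pos q) (pos q') (int c)"
    and v: "v \<in> Lset C D pos c"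
  shows "\<exists>p\<in>grid (D + 1). \<forall>x\<in>fsupp C (back_cumulant C (F_of C v)). grid_dist_le (D + 1) (embf D pos x) p (int (cp c))"
proof (cases "v = {}")
  case True
  have "(\<lambda>i. 0) \<in> grid (D + 1)" by (simp add: grid_def)
  then show ?thesis using True slot_empty[OF C] fsupp_fone by auto
next
  case False
  obtain p where p: "p \<in> grid D" "\<forall>j\<in>v. \<forall>s\<in>psupp (snd (meas_S C j)). grid_dist_le D (pos s) p (int (Rv c))"
    and vd: "v \<in> dual_code (nmeas C) (outcome_code C)" and dep: "vec_depth C v \<le> c"
    using v unfolding Lset_def by blast
  have um: "v \<subseteq> {..<nmeas C}" using vd unfolding dual_code_def by blast
  then have fin: "finite v" using finite_subset by blast
  define K where "K = Min (meas_level C ` v) - 1"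
  have lvK: "K < meas_level C j \<and> meas_level C j \<le> K + c" if j: "j \<in> v" for j
  proof -
    have "1 \<le> meas_level C j'" if "j' \<in> v" for j' using meas_level_range[OF C] um that by blast
    moreover have "Min (meas_level C ` v) \<in> meas_level C ` v" using fin j by (intro Min_in) auto
    ultimately have "1 \<le> Min (meas_level C ` v)" by (metis imageE)
    then show ?thesis using vec_depth_bounds[OF fin j dep] unfolding K_def by linarith
  qed
  have s0: "slot C v 0 = ({}, {})" using dual_chk[OF C vd] by simp
  define P where "P = (\<lambda>i. if i < D then p i else if i = D then int K else 0)"
  have Pg: "P \<in> grid (D + 1)" unfolding P_def grid_def by simp
  have "grid_dist_le (D + 1) (embf D pos x) P (int (cp c))" if x: "x \<in> fsupp C (back_cumulant C (F_of C v))" for x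
  proof -
    obtain k q where kq: "x = (k, q)" "k \<le> depth C" "q \<in> psupp (slot C v k)"
      using x unfolding fsupp_def by blast
    have kK: "K < k"
    proof (rule ccontr)
      assume "\<not> K < k"
      then have "slot C v k = ({}, {})" by (intro up_zero[OF C s0]) (use lvK in auto)
      then show False using kq by simp
    qed
    obtain j s where js: "j \<in> v" "j < nmeas C" "k < meas_level C j" "s \<in> psupp (snd (meas_S C j))"
      "grid_dist_le D (pos q) (pos s) (int (c * (meas_level C j - Suc k)))"
      using lightcone[where pos = pos and D = D and c = c, OF C loc kq(3)] by blast
    have lj: "meas_level C j \<le> K + c" using lvK js(1) by blast
    then have "meas_level C j - Suc k \<le> c" using kK by linarith
    then have "c * (meas_level C j - Suc k) \<le> c * c" by (rule mult_le_mono2)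
    then have "int (c * (meas_level C j - Suc k)) \<le> int (c * c)" by linarith
    then have d1: "grid_dist_le D (pos q) (pos s) (int (c * c))" using js(5) gd_mono by blast
    have "grid_dist_le D (pos q) p (int (c * c) + int (Rv c))" by (rule gd_trans[OF d1]) (use p js in blast)
    then have sp: "\<bar>pos q i - p i\<bar> \<le> int (cp c)" if "i < D" for i
      using that unfolding grid_dist_le_def cp_def by fastforce
    have tk: "\<bar>int k - int K\<bar> \<le> int (cp c)"
    proof -
      have "k - K \<le> c" using kK js(3) lj by linarith
      then show ?thesis using kK unfolding cp_def by linarith
    qed
    show ?thesis unfolding grid_dist_le_def embf_def P_def kq(1) using sp tk by auto
  qed
  then show ?thesis using Pg by blast
qed

lemma main_one:
  assumes C: "clifford_circuit C" and lin: "linear_code (nmeas C) (outcome_code C)"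
    and place: "inj_on pos {..<nqubits C} \<and> pos ` {..<nqubits C} \<subseteq> grid D"
    and bounded: "\<exists>B. z2span B = dual_code (nmeas C) (outcome_code C) \<and> (\<forall>u\<in>B. card u \<le> c \<and> vec_depth C u \<le> c)"
    and loc: "\<And>w q q'. w \<in> set (ops C) \<Longrightarrow> q \<in> op_supp (nqubits C) w \<Longrightarrow> q' \<in> op_supp (nqubits C) w \<Longrightarrow>
              grid_dist_le D (pos q) (pos q') (int c)"
  shows "\<exists>emb :: nat \<times> nat \<Rightarrow> (nat \<Rightarrow> int).
           inj_on emb (spacetime_qubits C) \<and>
           emb ` spacetime_qubits C \<subseteq> grid (D + 1) \<and>
           (\<exists>G. G \<subseteq> spacetime_stabilizers C \<and> fspan G = spacetime_stabilizers C \<and>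
              (\<forall>g\<in>G. \<exists>p \<in> grid (D + 1). \<forall>x \<in> fsupp C g. grid_dist_le (D + 1) (emb x) p (int (cp c))))"
proof -
  let ?dual = "dual_code (nmeas C) (outcome_code C)"
  let ?L = "Lset C D pos c"
  let ?bc = "\<lambda>u. back_cumulant C (F_of C u)"
  define G where "G = ?bc ` ?L"
  have locH: "\<forall>w\<in>set (ops C). \<forall>q\<in>op_supp (nqubits C) w. \<forall>q'\<in>op_supp (nqubits C) w.
              grid_dist_le D (pos q) (pos q') (int c)" using loc by blast
  have Ld: "?L \<subseteq> ?dual" unfolding Lset_def by blast
  have inj: "inj_on (embf D pos) (spacetime_qubits C)"
  proof (rule inj_onI)
    fix x y assume x: "x \<in> spacetime_qubits C" and y: "y \<in> spacetime_qubits C" and e: "embf D pos x = embf D pos y"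
    obtain k q where xk: "x = (k, q)" "q < nqubits C" using x unfolding spacetime_qubits_def by auto
    obtain k' q' where yk: "y = (k', q')" "q' < nqubits C" using y unfolding spacetime_qubits_def by auto
    have "int k = int k'" using fun_cong[OF e, of D] unfolding xk yk embf_def by simp
    then have kk: "k = k'" by simp
    have g: "pos q \<in> grid D" "pos q' \<in> grid D" using place xk yk by auto
    have "pos q i = pos q' i" for i
    proof (cases "i < D")
      case True then show ?thesis using fun_cong[OF e, of i] unfolding xk yk embf_def by simp
    next
      case False then show ?thesis using g unfolding grid_def by simp
    qed
    then have "pos q = pos q'" by (rule ext)
    then have "q = q'" using place xk yk by (auto dest: inj_onD)
    then show "x = y" using xk yk kk by simp
  qed
  have gr: "embf D pos ` spacetime_qubits C \<subseteq> grid (D + 1)" unfolding embf_def grid_def by auto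
  have Gs: "G \<subseteq> spacetime_stabilizers C" unfolding G_def spacetime_stabilizers_def using Ld by blast
  have sub1: "fspan G \<subseteq> spacetime_stabilizers C"
  proof
    fix F assume "F \<in> fspan G"
    then show "F \<in> spacetime_stabilizers C"
    proof induction
      case one
      have "fone = ?bc {}" using slot_empty[OF C] by simp
      then show ?case unfolding spacetime_stabilizers_def using dual_empty by blast
    next
      case (mul F g)
      obtain u where u: "F = ?bc u" "u \<in> ?dual" using mul.IH unfolding spacetime_stabilizers_def by blast
      obtain v where v: "g = ?bc v" "v \<in> ?L" using mul.hyps(2) unfolding G_def by blast
      have "fmul F g = ?bc (symdiff u v)" unfolding u v slot_symdiff[OF C] ..
      moreover have "symdiff u v \<in> ?dual" using dual_symdiff u(2) Ld v(2) by blast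
      ultimately show ?case unfolding spacetime_stabilizers_def by blast
    qed
  qed
  obtain B where B: "z2span B = ?dual" "\<forall>u\<in>B. card u \<le> c \<and> vec_depth C u \<le> c" using bounded by blast
  have BL: "B \<subseteq> z2span ?L"
  proof
    fix b assume b: "b \<in> B"
    have "b \<in> ?dual" using z2span_elem[OF b] B(1) by simp
    then show "b \<in> z2span ?L" using decomp[OF C lin _ _] B(2) b loc place by blast
  qed
  have spanG: "?bc u \<in> fspan G" if "u \<in> z2span ?L" for u
    using that
  proof induction
    case zero then show ?case using slot_empty[OF C] fspan.one by simp
  next
    case (add u b)
    have "?bc (symdiff u b) = fmul (?bc u) (?bc b)" by (rule slot_symdiff[OF C])
    moreover have "?bc b \<in> G" unfolding G_def using add.hyps(2) by blast
    ultimately show ?case using fspan.mul[OF add.IH] by simp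
  qed
  have sub2: "spacetime_stabilizers C \<subseteq> fspan G"
  proof
    fix F assume "F \<in> spacetime_stabilizers C"
    then obtain u where u: "F = ?bc u" "u \<in> ?dual" unfolding spacetime_stabilizers_def by blast
    have "u \<in> z2span ?L" using u(2) B(1) z2span_mono[OF BL] by blast
    then show "F \<in> fspan G" using spanG u(1) by simp
  qed
  have locG: "\<forall>g\<in>G. \<exists>p \<in> grid (D + 1). \<forall>x \<in> fsupp C g. grid_dist_le (D + 1) (embf D pos x) p (int (cp c))"
    unfolding G_def using local_gen[OF C lin locH] by blast
  show ?thesis using inj gr Gs sub1 sub2 locG by (intro exI[of _ "embf D pos"] exI[of _ G]) blast
qed

theorem mainTheorem11:
  fixes C :: "nat \<Rightarrow> circuit"
    and pos :: "nat \<Rightarrow> nat \<Rightarrow> (nat \<Rightarrow> int)"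
    and D :: nat
    and c :: nat
  assumes circ: "\<And>t. clifford_circuit (C t)"
    and lin: "\<And>t. linear_code (nmeas (C t)) (outcome_code (C t))"
    and place: "\<And>t. inj_on (pos t) {..<nqubits (C t)} \<and> pos t ` {..<nqubits (C t)} \<subseteq> grid D"
    and bounded: "\<And>t. \<exists>B. z2span B = dual_code (nmeas (C t)) (outcome_code (C t)) \<and>
                     (\<forall>u\<in>B. card u \<le> c \<and> vec_depth (C t) u \<le> c)"
    and local_ops: "\<And>t w q q'. w \<in> set (ops (C t)) \<Longrightarrow> q \<in> op_supp (nqubits (C t)) w \<Longrightarrow>
                     q' \<in> op_supp (nqubits (C t)) w \<Longrightarrow> grid_dist_le D (pos t q) (pos t q') (int c)"
  shows "\<exists>c'::nat. \<forall>t. \<exists>emb :: nat \<times> nat \<Rightarrow> (nat \<Rightarrow> int).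
           inj_on emb (spacetime_qubits (C t)) \<and>
           emb ` spacetime_qubits (C t) \<subseteq> grid (D + 1) \<and>
           (\<exists>G. G \<subseteq> spacetime_stabilizers (C t) \<and> fspan G = spacetime_stabilizers (C t) \<and>
              (\<forall>g\<in>G. \<exists>p \<in> grid (D + 1). \<forall>x \<in> fsupp (C t) g. grid_dist_le (D + 1) (emb x) p (int c')))"
proof (intro exI[of _ "cp c"] allI)
  fix t
  show "\<exists>emb :: nat \<times> nat \<Rightarrow> (nat \<Rightarrow> int).
           inj_on emb (spacetime_qubits (C t)) \<and>
           emb ` spacetime_qubits (C t) \<subseteq> grid (D + 1) \<and>
           (\<exists>G. G \<subseteq> spacetime_stabilizers (C t) \<and> fspan G = spacetime_stabilizers (C t) \<and>
              (\<forall>g\<in>G. \<exists>p \<in> grid (D + 1). \<forall>x \<in> fsupp (C t) g. grid_dist_le (D + 1) (emb x) p (int (cp c))))"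
    by (rule main_one[OF circ lin place bounded]) (rule local_ops; assumption)
qed

end
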